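(* Over $\mathrm{IKP}$, the following are equivalent: (i) $\mathrm{PlUb}$ together with the axiom of Exponentiation; (ii) every set has a powerset.
   Context: $\mathrm{IKP}$ is intuitionistic Kripke–Platek set theory (with strong infinity). Exponentiation asserts that for all sets $a,b$ the set $b^a$ of all functions from $a$ to $b$ exists. An ordinal is a transitive set of transitive sets. For sets $\alpha,\gamma$, $\mathrm{relpl}_\alpha(\gamma)$ denotes $\forall \delta \in \gamma\ \forall \varepsilon \in \alpha\,(\varepsilon \subseteq \delta \rightarrow \varepsilon \in \gamma)$. $\mathrm{PlOrd}$ is the class of ordinals $\alpha$ such that for all $\beta \in \alpha$ and all $\gamma \subseteq \beta$ with $\mathrm{relpl}_\alpha(\gamma)$, we have $\gamma \in \alpha$ and $\forall \delta \in \alpha\,(\beta \in \delta \rightarrow \gamma \in \delta)$. $\mathrm{PlUb}$ is the axiom $\forall \alpha \in \mathrm{PlOrd}\ \exists \beta \in \mathrm{PlOrd}\ \alpha \in \beta$. *)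

theory Defs
  imports Main
begin

section \<open>Deep embedding of first-order intuitionistic logic in the language {\<in>, =}\<close>

datatype fm =
    Mem nat nat          (* x \<in> y *)
  | Eq nat nat
  | Bot
  | Conj fm fm
  | Disj fm fm
  | Imp fm fm
  | All nat fm
  | Ex nat fm

fun fv :: "fm \<Rightarrow> nat set" where
  "fv (Mem x y) = {x, y}"
| "fv (Eq x y) = {x, y}"
| "fv Bot = {}"
| "fv (Conj p q) = fv p \<union> fv q"
| "fv (Disj p q) = fv p \<union> fv q"
| "fv (Imp p q) = fv p \<union> fv q"
| "fv (All x p) = fv p - {x}"
| "fv (Ex x p) = fv p - {x}"

text \<open>Replace the free occurrences of variable x by variable y (no renaming).\<close>
fun subst :: "fm \<Rightarrow> nat \<Rightarrow> nat \<Rightarrow> fm" where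
  "subst (Mem u v) x y = Mem (if u = x then y else u) (if v = x then y else v)"
| "subst (Eq u v) x y = Eq (if u = x then y else u) (if v = x then y else v)"
| "subst Bot x y = Bot"
| "subst (Conj p q) x y = Conj (subst p x y) (subst q x y)"
| "subst (Disj p q) x y = Disj (subst p x y) (subst q x y)"
| "subst (Imp p q) x y = Imp (subst p x y) (subst q x y)"
| "subst (All z p) x y = (if z = x then All z p else All z (subst p x y))"
| "subst (Ex z p) x y = (if z = x then Ex z p else Ex z (subst p x y))"

text \<open>y is free for x in the formula (substituting y for x causes no capture).\<close>
fun free_for :: "nat \<Rightarrow> nat \<Rightarrow> fm \<Rightarrow> bool" where
  "free_for y x (Mem u v) = True"
| "free_for y x (Eq u v) = True"
| "free_for y x Bot = True"
| "free_for y x (Conj p q) = (free_for y x p \<and> free_for y x q)"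
| "free_for y x (Disj p q) = (free_for y x p \<and> free_for y x q)"
| "free_for y x (Imp p q) = (free_for y x p \<and> free_for y x q)"
| "free_for y x (All z p) = (x \<notin> fv (All z p) \<or> (z \<noteq> y \<and> free_for y x p))"
| "free_for y x (Ex z p) = (x \<notin> fv (Ex z p) \<or> (z \<noteq> y \<and> free_for y x p))"

inductive deriv :: "fm set \<Rightarrow> fm \<Rightarrow> bool" where
  Assm: "\<phi> \<in> \<Gamma> \<Longrightarrow> deriv \<Gamma> \<phi>"
| BotE: "deriv \<Gamma> Bot \<Longrightarrow> deriv \<Gamma> \<phi>"
| ConjI: "deriv \<Gamma> \<phi> \<Longrightarrow> deriv \<Gamma> \<psi> \<Longrightarrow> deriv \<Gamma> (Conj \<phi> \<psi>)"
| ConjE1: "deriv \<Gamma> (Conj \<phi> \<psi>) \<Longrightarrow> deriv \<Gamma> \<phi>"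
| ConjE2: "deriv \<Gamma> (Conj \<phi> \<psi>) \<Longrightarrow> deriv \<Gamma> \<psi>"
| DisjI1: "deriv \<Gamma> \<phi> \<Longrightarrow> deriv \<Gamma> (Disj \<phi> \<psi>)"
| DisjI2: "deriv \<Gamma> \<psi> \<Longrightarrow> deriv \<Gamma> (Disj \<phi> \<psi>)"
| DisjE: "deriv \<Gamma> (Disj \<phi> \<psi>) \<Longrightarrow> deriv (insert \<phi> \<Gamma>) \<chi> \<Longrightarrow> deriv (insert \<psi> \<Gamma>) \<chi>
          \<Longrightarrow> deriv \<Gamma> \<chi>"
| ImpI: "deriv (insert \<phi> \<Gamma>) \<psi> \<Longrightarrow> deriv \<Gamma> (Imp \<phi> \<psi>)"
| ImpE: "deriv \<Gamma> (Imp \<phi> \<psi>) \<Longrightarrow> deriv \<Gamma> \<phi> \<Longrightarrow> deriv \<Gamma> \<psi>"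
| AllI: "deriv \<Gamma> \<phi> \<Longrightarrow> (\<forall>\<gamma>\<in>\<Gamma>. x \<notin> fv \<gamma>) \<Longrightarrow> deriv \<Gamma> (All x \<phi>)"
| AllE: "deriv \<Gamma> (All x \<phi>) \<Longrightarrow> free_for y x \<phi> \<Longrightarrow> deriv \<Gamma> (subst \<phi> x y)"
| ExI: "deriv \<Gamma> (subst \<phi> x y) \<Longrightarrow> free_for y x \<phi> \<Longrightarrow> deriv \<Gamma> (Ex x \<phi>)"
| ExE: "deriv \<Gamma> (Ex x \<phi>) \<Longrightarrow> deriv (insert \<phi> \<Gamma>) \<psi> \<Longrightarrow> (\<forall>\<gamma>\<in>\<Gamma>. x \<notin> fv \<gamma>)
        \<Longrightarrow> x \<notin> fv \<psi> \<Longrightarrow> deriv \<Gamma> \<psi>"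
| Refl: "deriv \<Gamma> (Eq x x)"
| Leibniz: "deriv \<Gamma> (Eq x y) \<Longrightarrow> deriv \<Gamma> (subst \<phi> z x) \<Longrightarrow> free_for x z \<phi>
           \<Longrightarrow> free_for y z \<phi> \<Longrightarrow> deriv \<Gamma> (subst \<phi> z y)"

definition Iff :: "fm \<Rightarrow> fm \<Rightarrow> fm" where
  "Iff p q = Conj (Imp p q) (Imp q p)"

definition BAll :: "nat \<Rightarrow> nat \<Rightarrow> fm \<Rightarrow> fm" where
  "BAll x a p = All x (Imp (Mem x a) p)"

definition BEx :: "nat \<Rightarrow> nat \<Rightarrow> fm \<Rightarrow> fm" where
  "BEx x a p = Ex x (Conj (Mem x a) p)"

text \<open>A variable name different from all names in the list (used for internal bound variables).\<close>
definition fr :: "nat list \<Rightarrow> nat" where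
  "fr xs = Suc (fold max xs 0)"

definition close :: "fm \<Rightarrow> fm" where
  "close p = foldr All (sorted_list_of_set (fv p)) p"

inductive delta0 :: "fm \<Rightarrow> bool" where
  "delta0 (Mem x y)"
| "delta0 (Eq x y)"
| "delta0 Bot"
| "delta0 p \<Longrightarrow> delta0 q \<Longrightarrow> delta0 (Conj p q)"
| "delta0 p \<Longrightarrow> delta0 q \<Longrightarrow> delta0 (Disj p q)"
| "delta0 p \<Longrightarrow> delta0 q \<Longrightarrow> delta0 (Imp p q)"
| "x \<noteq> a \<Longrightarrow> delta0 p \<Longrightarrow> delta0 (All x (Imp (Mem x a) p))"
| "x \<noteq> a \<Longrightarrow> delta0 p \<Longrightarrow> delta0 (Ex x (Conj (Mem x a) p))"

definition subset_fm :: "nat \<Rightarrow> nat \<Rightarrow> fm" where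
  "subset_fm x a = (let z = fr [x, a] in BAll z x (Mem z a))"

definition is_sing :: "nat \<Rightarrow> nat \<Rightarrow> fm" where
  "is_sing z x = (let w = fr [z, x] in Conj (BAll w z (Eq w x)) (Mem x z))"

definition is_upair :: "nat \<Rightarrow> nat \<Rightarrow> nat \<Rightarrow> fm" where
  "is_upair z x y = (let w = fr [z, x, y] in
     Conj (BAll w z (Disj (Eq w x) (Eq w y))) (Conj (Mem x z) (Mem y z)))"

definition is_pair :: "nat \<Rightarrow> nat \<Rightarrow> nat \<Rightarrow> fm" where    (* p = <x,y> = {{x},{x,y}} *)
  "is_pair p x y = (let z = fr [p, x, y] in
     Conj (BAll z p (Disj (is_sing z x) (is_upair z x y)))
          (Conj (BEx z p (is_sing z x)) (BEx z p (is_upair z x y))))"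

definition is_fun :: "nat \<Rightarrow> nat \<Rightarrow> nat \<Rightarrow> fm" where
  "is_fun f a b = (let x = fr [f, a, b]; y = Suc x; y' = Suc y; p = Suc y'; p' = Suc p in
     Conj (BAll p f (BEx x a (BEx y b (is_pair p x y))))
    (Conj (BAll x a (BEx y b (BEx p f (is_pair p x y))))
          (BAll x a (BAll y b (BAll y' b (BAll p f (BAll p' f
             (Imp (Conj (is_pair p x y) (is_pair p' x y')) (Eq y y')))))))))"

definition is_trans :: "nat \<Rightarrow> fm" where
  "is_trans x = (let y = fr [x]; z = Suc y in BAll y x (BAll z y (Mem z x)))"

definition is_ord :: "nat \<Rightarrow> fm" where
  "is_ord x = (let y = fr [x] in Conj (is_trans x) (BAll y x (is_trans y)))"

definition relpl :: "nat \<Rightarrow> nat \<Rightarrow> fm" where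
  "relpl \<alpha> \<gamma> = (let \<delta> = fr [\<alpha>, \<gamma>]; \<epsilon> = Suc \<delta> in
     BAll \<delta> \<gamma> (BAll \<epsilon> \<alpha> (Imp (subset_fm \<epsilon> \<delta>) (Mem \<epsilon> \<gamma>))))"

definition is_plord :: "nat \<Rightarrow> fm" where
  "is_plord \<alpha> = (let \<beta> = fr [\<alpha>]; \<gamma> = Suc \<beta>; \<delta> = Suc \<gamma> in
     Conj (is_ord \<alpha>)
       (BAll \<beta> \<alpha> (All \<gamma> (Imp (subset_fm \<gamma> \<beta>) (Imp (relpl \<alpha> \<gamma>)
          (Conj (Mem \<gamma> \<alpha>) (BAll \<delta> \<alpha> (Imp (Mem \<beta> \<delta>) (Mem \<gamma> \<delta>)))))))))"

definition PlUb :: fm where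
  "PlUb = All 0 (Imp (is_plord 0) (Ex 1 (Conj (is_plord 1) (Mem 0 1))))"

definition Exponentiation :: fm where
  "Exponentiation = All 0 (All 1 (Ex 2 (All 3 (Iff (Mem 3 2) (is_fun 3 0 1)))))"

definition Powerset :: fm where
  "Powerset = All 0 (Ex 1 (All 2 (Iff (Mem 2 1) (subset_fm 2 0))))"

definition Ext_ax :: fm where
  "Ext_ax = All 0 (All 1 (Imp (All 2 (Iff (Mem 2 0) (Mem 2 1))) (Eq 0 1)))"

definition Pair_ax :: fm where
  "Pair_ax = All 0 (All 1 (Ex 2 (Conj (Mem 0 2) (Mem 1 2))))"

definition Union_ax :: fm where
  "Union_ax = All 0 (Ex 1 (BAll 2 0 (BAll 3 2 (Mem 3 1))))"

text \<open>Ind(a): \<emptyset> \<in> a \<and> \<forall>x\<in>a. x \<union> {x} \<in> a\<close>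
definition is_ind :: "nat \<Rightarrow> fm" where
  "is_ind a = (let x = fr [a]; y = Suc x; z = Suc y in
     Conj (BEx y a (BAll z y Bot))
          (BAll x a (BEx y a (All z (Iff (Mem z y) (Disj (Mem z x) (Eq z x)))))))"

definition SInf_ax :: fm where
  "SInf_ax = Ex 0 (Conj (is_ind 0) (All 1 (Imp (is_ind 1) (subset_fm 0 1))))"

definition Sep_ax :: "fm set" where
  "Sep_ax = {close (All a (Ex b (All x (Iff (Mem x b) (Conj (Mem x a) \<phi>)))))
             | a b x \<phi>. delta0 \<phi> \<and> distinct [a, b, x] \<and> b \<notin> fv \<phi>}"

definition Coll_ax :: "fm set" where
  "Coll_ax = {close (Imp (BAll x a (Ex y \<phi>)) (Ex b (BAll x a (BEx y b \<phi>))))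
             | a b x y \<phi>. delta0 \<phi> \<and> distinct [a, b, x, y] \<and> b \<notin> fv \<phi>}"

definition SetInd_ax :: "fm set" where
  "SetInd_ax = {close (Imp (All a (Imp (BAll x a (subst \<phi> a x)) \<phi>)) (All a \<phi>))
             | a x \<phi>. a \<noteq> x \<and> x \<notin> fv \<phi> \<and> free_for x a \<phi>}"

definition IKP :: "fm set" where
  "IKP = {Ext_ax, Pair_ax, Union_ax, SInf_ax} \<union> Sep_ax \<union> Coll_ax \<union> SetInd_ax"

end

theory Submission
  imports Defs
begin

fun bnd :: "fm \<Rightarrow> nat set" where
  "bnd (Mem x y) = {}"
| "bnd (Eq x y) = {}"
| "bnd Bot = {}"
| "bnd (Conj p q) = bnd p \<union> bnd q"
| "bnd (Disj p q) = bnd p \<union> bnd q"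
| "bnd (Imp p q) = bnd p \<union> bnd q"
| "bnd (All x p) = insert x (bnd p)"
| "bnd (Ex x p) = insert x (bnd p)"

fun clean :: "fm \<Rightarrow> bool" where
  "clean (Mem x y) = True"
| "clean (Eq x y) = True"
| "clean Bot = True"
| "clean (Conj p q) = (clean p \<and> clean q)"
| "clean (Disj p q) = (clean p \<and> clean q)"
| "clean (Imp p q) = (clean p \<and> clean q)"
| "clean (All x p) = (x \<notin> bnd p \<and> clean p)"
| "clean (Ex x p) = (x \<notin> bnd p \<and> clean p)"

fun ren :: "(nat \<Rightarrow> nat) \<Rightarrow> (nat \<Rightarrow> nat) \<Rightarrow> fm \<Rightarrow> fm" where
  "ren g r (Mem x y) = Mem (r x) (r y)"
| "ren g r (Eq x y) = Eq (r x) (r y)"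
| "ren g r Bot = Bot"
| "ren g r (Conj p q) = Conj (ren g r p) (ren g r q)"
| "ren g r (Disj p q) = Disj (ren g r p) (ren g r q)"
| "ren g r (Imp p q) = Imp (ren g r p) (ren g r q)"
| "ren g r (All x p) = All (g x) (ren g (r(x := g x)) p)"
| "ren g r (Ex x p) = Ex (g x) (ren g (r(x := g x)) p)"

definition fvs :: "fm set \<Rightarrow> nat set" where
  "fvs \<Gamma> = \<Union> (fv ` \<Gamma>)"

lemma fvs_insert[simp]: "fvs (insert p \<Gamma>) = fv p \<union> fvs \<Gamma>"
  by (auto simp: fvs_def)

lemma fvs_Un[simp]: "fvs (A \<union> B) = fvs A \<union> fvs B"
  by (auto simp: fvs_def)

lemma finite_fv[simp]: "finite (fv p)"
  by (induction p) auto

lemma finite_bnd[simp]: "finite (bnd p)"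
  by (induction p) auto

lemma subst_same[simp]: "subst p x x = p"
  by (induction p) auto

lemma subst_nofv: "x \<notin> fv p \<Longrightarrow> subst p x y = p"
  by (induction p) auto

lemma free_for_same[simp]: "free_for x x p"
  by (induction p) auto

lemma free_for_nobnd: "y \<notin> bnd p \<Longrightarrow> free_for y x p"
  by (induction p) auto

lemma free_for_nofv: "x \<notin> fv p \<Longrightarrow> free_for y x p"
  by (induction p) auto

lemma fv_subst_sub: "fv (subst p x y) \<subseteq> (fv p - {x}) \<union> {y}"
  by (induction p) auto

lemma fv_foldr_All: "fv (foldr All xs p) = fv p - set xs"
  by (induction xs) auto

lemma fv_close[simp]: "fv (close p) = {}"
  by (simp add: close_def fv_foldr_All)

lemma deriv_unfoldr: "deriv \<Gamma> (foldr All xs p) \<Longrightarrow> deriv \<Gamma> p"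
proof (induction xs)
  case Nil then show ?case by simp
next
  case (Cons x xs)
  then have "deriv \<Gamma> (All x (foldr All xs p))" by simp
  then have "deriv \<Gamma> (subst (foldr All xs p) x x)"
    by (rule deriv.AllE) simp
  then show ?case using Cons by simp
qed

lemma deriv_unclose: "deriv \<Gamma> (close p) \<Longrightarrow> deriv \<Gamma> p"
  unfolding close_def by (rule deriv_unfoldr)

lemma fvs_IKP[simp]: "fvs IKP = {}"
  unfolding fvs_def IKP_def Sep_ax_def Coll_ax_def SetInd_ax_def
  by (auto simp: Ext_ax_def Pair_ax_def Union_ax_def SInf_ax_def Iff_def BAll_def BEx_def
      subset_fm_def is_ind_def Let_def fr_def)

section \<open>Renaming of bound variables\<close>

lemma id_upd_same[simp]: "id(x := x) = id"
  by auto

lemma ren_id_gen: "(\<forall>v. g v = v) \<Longrightarrow> (\<forall>v. r v = v) \<Longrightarrow> ren g r p = p"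
  by (induction p arbitrary: r) auto

lemma ren_id[simp]: "ren id id p = p"
  by (rule ren_id_gen) auto

lemma bnd_ren[simp]: "bnd (ren g r p) = g ` bnd p"
  by (induction p arbitrary: r) auto

lemma fv_ren_sub: "fv (ren g r p) \<subseteq> r ` fv p"
proof (induction p arbitrary: r)
  case (All x p)
  show ?case
  proof
    fix y assume "y \<in> fv (ren g r (All x p))"
    then have y: "y \<in> fv (ren g (r(x := g x)) p)" "y \<noteq> g x" by auto
    then obtain v where "v \<in> fv p" "y = (r(x := g x)) v" using All[of "r(x := g x)"] by blast
    then show "y \<in> r ` fv (All x p)" using y by (cases "v = x") auto
  qed
next
  case (Ex x p)
  show ?case
  proof
    fix y assume "y \<in> fv (ren g r (Ex x p))"
    then have y: "y \<in> fv (ren g (r(x := g x)) p)" "y \<noteq> g x" by auto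
    then obtain v where "v \<in> fv p" "y = (r(x := g x)) v" using Ex[of "r(x := g x)"] by blast
    then show "y \<in> r ` fv (Ex x p)" using y by (cases "v = x") auto
  qed
next
  case (Conj p q) then show ?case using Conj.IH[of r] by fastforce
next
  case (Disj p q) then show ?case using Disj.IH[of r] by fastforce
next
  case (Imp p q) then show ?case using Imp.IH[of r] by fastforce
qed auto

lemma ren_cong: "(\<forall>v\<in>fv p. r v = r' v) \<Longrightarrow> ren g r p = ren g r' p"
proof (induction p arbitrary: r r')
  case (All x p)
  have "ren g (r(x := g x)) p = ren g (r'(x := g x)) p"
    by (rule All.IH) (use All.prems in auto)
  then show ?case by simp
next
  case (Ex x p)
  have "ren g (r(x := g x)) p = ren g (r'(x := g x)) p"
    by (rule Ex.IH) (use Ex.prems in auto)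
  then show ?case by simp
qed auto

lemma ren_subst:
  assumes "a \<notin> g ` bnd p"
    and "\<forall>v\<in>fv p. r v = a \<longrightarrow> r' v = b"
    and "\<forall>v\<in>fv p. r v \<noteq> a \<longrightarrow> r' v = r v"
  shows "subst (ren g r p) a b = ren g r' p"
  using assms
proof (induction p arbitrary: r r')
  case (All x p)
  have "subst (ren g (r(x := g x)) p) a b = ren g (r'(x := g x)) p"
    by (rule All.IH) (use All.prems in auto)
  then show ?case using All.prems by auto
next
  case (Ex x p)
  have "subst (ren g (r(x := g x)) p) a b = ren g (r'(x := g x)) p"
    by (rule Ex.IH) (use Ex.prems in auto)
  then show ?case using Ex.prems by auto
next
  case (Conj p q)
  have "subst (ren g r p) a b = ren g r' p" by (rule Conj.IH(1)) (use Conj.prems in auto)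
  moreover have "subst (ren g r q) a b = ren g r' q" by (rule Conj.IH(2)) (use Conj.prems in auto)
  ultimately show ?case by simp
next
  case (Disj p q)
  have "subst (ren g r p) a b = ren g r' p" by (rule Disj.IH(1)) (use Disj.prems in auto)
  moreover have "subst (ren g r q) a b = ren g r' q" by (rule Disj.IH(2)) (use Disj.prems in auto)
  ultimately show ?case by simp
next
  case (Imp p q)
  have "subst (ren g r p) a b = ren g r' p" by (rule Imp.IH(1)) (use Imp.prems in auto)
  moreover have "subst (ren g r q) a b = ren g r' q" by (rule Imp.IH(2)) (use Imp.prems in auto)
  ultimately show ?case by simp
qed auto

definition acond :: "fm set \<Rightarrow> (nat \<Rightarrow> nat) \<Rightarrow> (nat \<Rightarrow> nat) \<Rightarrow> (nat \<Rightarrow> nat) \<Rightarrow> (nat \<Rightarrow> nat) \<Rightarrow> fm \<Rightarrow> bool" where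
  "acond \<Gamma> g f r1 r2 p \<longleftrightarrow> clean p \<and> inj_on g (bnd p) \<and> inj_on f (bnd p) \<and> g ` bnd p \<inter> f ` bnd p = {}
     \<and> (\<forall>v\<in>fv p. r1 v = r2 v) \<and> (g ` bnd p \<union> f ` bnd p) \<inter> (fvs \<Gamma> \<union> r1 ` fv p) = {}"

lemma acond_sym: "acond \<Gamma> g f r1 r2 p \<Longrightarrow> acond \<Gamma> f g r2 r1 p"
  unfolding acond_def
proof (elim conjE, intro conjI)
  assume "\<forall>v\<in>fv p. r1 v = r2 v"
  then have "r2 ` fv p = r1 ` fv p" by (auto simp: image_def)
  moreover assume "(g ` bnd p \<union> f ` bnd p) \<inter> (fvs \<Gamma> \<union> r1 ` fv p) = {}"
  ultimately show "(f ` bnd p \<union> g ` bnd p) \<inter> (fvs \<Gamma> \<union> r2 ` fv p) = {}" by auto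
qed auto

lemma acond_sub:
  assumes "acond \<Gamma> g f r1 r2 P" "clean p" "bnd p \<subseteq> bnd P" "fv p \<subseteq> fv P"
    and "fvs \<Gamma>' \<subseteq> fvs \<Gamma> \<union> r1 ` fv P"
  shows "acond \<Gamma>' g f r1 r2 p"
proof -
  have a: "g ` bnd p \<union> f ` bnd p \<subseteq> g ` bnd P \<union> f ` bnd P" using assms(3) by auto
  have b: "fvs \<Gamma>' \<union> r1 ` fv p \<subseteq> fvs \<Gamma> \<union> r1 ` fv P" using assms(4,5) by auto
  have c: "(g ` bnd P \<union> f ` bnd P) \<inter> (fvs \<Gamma> \<union> r1 ` fv P) = {}" using assms(1) unfolding acond_def by blast
  have d: "g ` bnd p \<inter> f ` bnd p = {}" using assms(1,3) unfolding acond_def by blast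
  have e: "inj_on g (bnd P)" "inj_on f (bnd P)" "\<forall>v\<in>fv P. r1 v = r2 v"
    using assms(1) unfolding acond_def by blast+
  show ?thesis unfolding acond_def
  proof (intro conjI)
    show "clean p" by fact
    show "inj_on g (bnd p)" using e(1) assms(3) by (rule inj_on_subset)
    show "inj_on f (bnd p)" using e(2) assms(3) by (rule inj_on_subset)
    show "g ` bnd p \<inter> f ` bnd p = {}" by fact
    show "\<forall>v\<in>fv p. r1 v = r2 v" using e(3) assms(4) by blast
    have "(g ` bnd p \<union> f ` bnd p) \<inter> (fvs \<Gamma>' \<union> r1 ` fv p) \<subseteq>
      (g ` bnd P \<union> f ` bnd P) \<inter> (fvs \<Gamma> \<union> r1 ` fv P)" using a b by (rule Int_mono)
    then show "(g ` bnd p \<union> f ` bnd p) \<inter> (fvs \<Gamma>' \<union> r1 ` fv p) = {}" using c by blast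
  qed
qed

lemma acond_fvS:
  assumes "acond \<Gamma> g f r1 r2 p"
  shows "fv (ren g r1 p) \<subseteq> r1 ` fv p" "fv (ren f r2 p) \<subseteq> r1 ` fv p"
proof -
  show "fv (ren g r1 p) \<subseteq> r1 ` fv p" by (rule fv_ren_sub)
  have "r2 ` fv p = r1 ` fv p" using assms unfolding acond_def by (auto simp: image_def)
  then show "fv (ren f r2 p) \<subseteq> r1 ` fv p" using fv_ren_sub[of f r2 p] by simp
qed

lemma disj_helper: "B \<subseteq> B' \<Longrightarrow> B' \<inter> F = {} \<Longrightarrow> a \<notin> B \<Longrightarrow> X \<subseteq> F \<union> {a} \<Longrightarrow> B \<inter> X = {}"
  by blast

lemma alpha_imp:
  "acond \<Gamma> g f r1 r2 p \<Longrightarrow> deriv \<Gamma> (Imp (ren g r1 p) (ren f r2 p))"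
proof (induction p arbitrary: \<Gamma> g f r1 r2)
  case (Mem x y)
  then have "r1 x = r2 x" "r1 y = r2 y" by (auto simp: acond_def)
  then show ?case by (auto intro!: deriv.ImpI intro: deriv.Assm)
next
  case (Eq x y)
  then have "r1 x = r2 x" "r1 y = r2 y" by (auto simp: acond_def)
  then show ?case by (auto intro!: deriv.ImpI intro: deriv.Assm)
next
  case Bot
  then show ?case by (auto intro!: deriv.ImpI intro: deriv.Assm)
next
  case (Conj p q)
  let ?S = "ren g r1 (Conj p q)"
  let ?G1 = "insert ?S \<Gamma>"
  have fS: "fv ?S \<subseteq> r1 ` fv (Conj p q)" by (rule acond_fvS(1)[OF Conj.prems])
  have cp: "acond ?G1 g f r1 r2 p"
    by (rule acond_sub[OF Conj.prems]) (use Conj.prems fS in \<open>auto simp: acond_def\<close>)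
  have cq: "acond ?G1 g f r1 r2 q"
    by (rule acond_sub[OF Conj.prems]) (use Conj.prems fS in \<open>auto simp: acond_def\<close>)
  have S: "deriv ?G1 ?S" by (rule deriv.Assm) simp
  have "deriv ?G1 (ren g r1 p)" using deriv.ConjE1[of ?G1 "ren g r1 p" "ren g r1 q"] S by simp
  then have 1: "deriv ?G1 (ren f r2 p)" by (rule deriv.ImpE[OF Conj.IH(1)[OF cp]])
  have "deriv ?G1 (ren g r1 q)" using deriv.ConjE2[of ?G1 "ren g r1 p" "ren g r1 q"] S by simp
  then have 2: "deriv ?G1 (ren f r2 q)" by (rule deriv.ImpE[OF Conj.IH(2)[OF cq]])
  show ?case using deriv.ConjI[OF 1 2] by (auto intro: deriv.ImpI)
next
  case (Disj p q)
  let ?S = "ren g r1 (Disj p q)"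
  let ?G1 = "insert ?S \<Gamma>"
  have fS: "fv ?S \<subseteq> r1 ` fv (Disj p q)" by (rule acond_fvS(1)[OF Disj.prems])
  have S: "deriv ?G1 ?S" by (rule deriv.Assm) simp
  let ?G2 = "insert (ren g r1 p) ?G1"
  let ?G3 = "insert (ren g r1 q) ?G1"
  have fp: "fv (ren g r1 p) \<subseteq> r1 ` fv (Disj p q)" using fv_ren_sub[of g r1 p] by auto
  have fq: "fv (ren g r1 q) \<subseteq> r1 ` fv (Disj p q)" using fv_ren_sub[of g r1 q] by auto
  have cp: "acond ?G2 g f r1 r2 p"
    by (rule acond_sub[OF Disj.prems]) (use Disj.prems fS fp in \<open>auto simp: acond_def\<close>)
  have cq: "acond ?G3 g f r1 r2 q"
    by (rule acond_sub[OF Disj.prems]) (use Disj.prems fS fq in \<open>auto simp: acond_def\<close>)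
  have 1: "deriv ?G2 (ren f r2 (Disj p q))"
    using deriv.ImpE[OF Disj.IH(1)[OF cp] deriv.Assm] by (auto intro: deriv.DisjI1)
  have 2: "deriv ?G3 (ren f r2 (Disj p q))"
    using deriv.ImpE[OF Disj.IH(2)[OF cq] deriv.Assm] by (auto intro: deriv.DisjI2)
  have "deriv ?G1 (ren f r2 (Disj p q))"
    by (rule deriv.DisjE[OF _ 1 2]) (use S in simp)
  then show ?case by (rule deriv.ImpI)
next
  case (Imp p q)
  let ?S = "ren g r1 (Imp p q)"
  let ?G1 = "insert ?S \<Gamma>"
  let ?Tp = "ren f r2 p"
  let ?G2 = "insert ?Tp ?G1"
  have fS: "fv ?S \<subseteq> r1 ` fv (Imp p q)" by (rule acond_fvS(1)[OF Imp.prems])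
  have r12: "r2 ` fv p = r1 ` fv p" using Imp.prems unfolding acond_def by (auto simp: image_def)
  have fT: "fv ?Tp \<subseteq> r1 ` fv (Imp p q)" using fv_ren_sub[of f r2 p] r12 by auto
  have cp: "acond ?G2 g f r1 r2 p"
    by (rule acond_sub[OF Imp.prems]) (use Imp.prems fS fT in \<open>auto simp: acond_def\<close>)
  have cq: "acond ?G2 g f r1 r2 q"
    by (rule acond_sub[OF Imp.prems]) (use Imp.prems fS fT in \<open>auto simp: acond_def\<close>)
  have Sp: "deriv ?G2 (ren g r1 p)"
    by (rule deriv.ImpE[OF Imp.IH(1)[OF acond_sym[OF cp]]]) (rule deriv.Assm, simp)
  have Sq: "deriv ?G2 (ren g r1 q)"
    by (rule deriv.ImpE[OF _ Sp]) (rule deriv.Assm, simp)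
  have "deriv ?G2 (ren f r2 q)" by (rule deriv.ImpE[OF Imp.IH(2)[OF cq] Sq])
  then show ?case by (auto intro!: deriv.ImpI)
next
  case (All x p)
  let ?gx = "g x" and ?fx = "f x"
  let ?Sb = "ren g (r1(x := ?gx)) p"
  let ?S = "All ?gx ?Sb"
  let ?G1 = "insert ?S \<Gamma>"
  have A: "acond \<Gamma> g f r1 r2 (All x p)" by fact
  have cl: "clean p" "x \<notin> bnd p" using A unfolding acond_def clean.simps by blast+
  have ig: "inj_on g (insert x (bnd p))" using A unfolding acond_def bnd.simps by blast
  have if': "inj_on f (insert x (bnd p))" using A unfolding acond_def bnd.simps by blast
  have dj: "g ` insert x (bnd p) \<inter> f ` insert x (bnd p) = {}" using A unfolding acond_def bnd.simps by blast
  have eq: "\<forall>v\<in>fv p - {x}. r1 v = r2 v" using A unfolding acond_def fv.simps by blast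
  have fr: "(g ` insert x (bnd p) \<union> f ` insert x (bnd p)) \<inter> (fvs \<Gamma> \<union> r1 ` (fv p - {x})) = {}"
    using A unfolding acond_def bnd.simps fv.simps by blast
  have gx_nb: "?gx \<notin> g ` bnd p" using ig cl unfolding inj_on_def by blast
  have fx_nb: "?fx \<notin> f ` bnd p" using if' cl unfolding inj_on_def by blast
  have fx_ng: "?fx \<notin> g ` bnd p" using dj by blast
  have gx1: "?gx \<notin> fvs \<Gamma> \<union> r1 ` (fv p - {x})" using fr by blast
  have fx1: "?fx \<notin> fvs \<Gamma> \<union> r1 ` (fv p - {x})" using fr by blast
  have fS: "fv ?S \<subseteq> r1 ` (fv p - {x})" using acond_fvS(1)[OF A] by (simp only: ren.simps fv.simps)
  have S: "deriv ?G1 ?S" by (rule deriv.Assm) simp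
  have "deriv ?G1 (subst ?Sb ?gx ?fx)"
    by (rule deriv.AllE[OF S]) (rule free_for_nobnd, use fx_ng in simp)
  moreover have "subst ?Sb ?gx ?fx = ren g (r1(x := ?fx)) p"
  proof (rule ren_subst)
    show "?gx \<notin> g ` bnd p" by (fact gx_nb)
    show "\<forall>v\<in>fv p. (r1(x := ?gx)) v = ?gx \<longrightarrow> (r1(x := ?fx)) v = ?fx"
    proof (intro ballI impI)
      fix v assume v: "v \<in> fv p" "(r1(x := ?gx)) v = ?gx"
      show "(r1(x := ?fx)) v = ?fx"
      proof (cases "v = x")
        case False
        then have "r1 v = ?gx" using v by simp
        moreover have "r1 v \<in> r1 ` (fv p - {x})" using v False by blast
        ultimately show ?thesis using gx1 by simp
      qed simp
    qed
    show "\<forall>v\<in>fv p. (r1(x := ?gx)) v \<noteq> ?gx \<longrightarrow> (r1(x := ?fx)) v = (r1(x := ?gx)) v"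
      by simp
  qed
  ultimately have Sb': "deriv ?G1 (ren g (r1(x := ?fx)) p)" by simp
  have c: "acond ?G1 g f (r1(x := ?fx)) (r2(x := ?fx)) p"
    unfolding acond_def
  proof (intro conjI)
    show "\<forall>v\<in>fv p. (r1(x := ?fx)) v = (r2(x := ?fx)) v" using eq by auto
    have B1: "g ` bnd p \<union> f ` bnd p \<subseteq> g ` insert x (bnd p) \<union> f ` insert x (bnd p)" by auto
    have fxB: "?fx \<notin> g ` bnd p \<union> f ` bnd p" using fx_nb fx_ng by blast
    have "fvs ?G1 \<subseteq> fvs \<Gamma> \<union> r1 ` (fv p - {x})" using fS by (simp only: fvs_insert) blast
    moreover have "(r1(x := ?fx)) ` fv p \<subseteq> insert ?fx (r1 ` (fv p - {x}))" by auto
    ultimately have "fvs ?G1 \<union> (r1(x := ?fx)) ` fv p \<subseteq> fvs \<Gamma> \<union> r1 ` (fv p - {x}) \<union> {?fx}" by blast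
    then show "(g ` bnd p \<union> f ` bnd p) \<inter> (fvs ?G1 \<union> (r1(x := ?fx)) ` fv p) = {}"
      by (rule disj_helper[OF B1 fr fxB])
    show "clean p" by (fact cl)
    show "inj_on g (bnd p)" using ig by (rule inj_on_subset) blast
    show "inj_on f (bnd p)" using if' by (rule inj_on_subset) blast
    show "g ` bnd p \<inter> f ` bnd p = {}" using dj by blast
  qed
  have T: "deriv ?G1 (ren f (r2(x := ?fx)) p)" by (rule deriv.ImpE[OF All.IH[OF c] Sb'])
  have "?fx \<notin> fvs ?G1" using fx1 fS by (simp only: fvs_insert) blast
  then have "deriv ?G1 (All ?fx (ren f (r2(x := ?fx)) p))"
    using deriv.AllI[OF T] by (simp add: fvs_def)
  then show ?case by (auto intro: deriv.ImpI)
next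
  case (Ex x p)
  let ?gx = "g x" and ?fx = "f x"
  let ?Sb = "ren g (r1(x := ?gx)) p"
  let ?S = "Ex ?gx ?Sb"
  let ?Tb = "ren f (r2(x := ?fx)) p"
  let ?T = "Ex ?fx ?Tb"
  let ?G1 = "insert ?S \<Gamma>"
  let ?G2 = "insert ?Sb ?G1"
  have A: "acond \<Gamma> g f r1 r2 (Ex x p)" by fact
  have cl: "clean p" "x \<notin> bnd p" using A unfolding acond_def clean.simps by blast+
  have ig: "inj_on g (insert x (bnd p))" using A unfolding acond_def bnd.simps by blast
  have if': "inj_on f (insert x (bnd p))" using A unfolding acond_def bnd.simps by blast
  have dj: "g ` insert x (bnd p) \<inter> f ` insert x (bnd p) = {}" using A unfolding acond_def bnd.simps by blast
  have eq: "\<forall>v\<in>fv p - {x}. r1 v = r2 v" using A unfolding acond_def fv.simps by blast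
  have fr: "(g ` insert x (bnd p) \<union> f ` insert x (bnd p)) \<inter> (fvs \<Gamma> \<union> r1 ` (fv p - {x})) = {}"
    using A unfolding acond_def bnd.simps fv.simps by blast
  have gx_nb: "?gx \<notin> g ` bnd p" using ig cl unfolding inj_on_def by blast
  have fx_nb: "?fx \<notin> f ` bnd p" using if' cl unfolding inj_on_def by blast
  have gx_nf: "?gx \<notin> f ` bnd p" using dj by blast
  have gx1: "?gx \<notin> fvs \<Gamma> \<union> r1 ` (fv p - {x})" using fr by blast
  have fx1: "?fx \<notin> fvs \<Gamma> \<union> r1 ` (fv p - {x})" using fr by blast
  have fS: "fv ?S \<subseteq> r1 ` (fv p - {x})" using acond_fvS(1)[OF A] by (simp only: ren.simps fv.simps)
  have fT: "fv ?T \<subseteq> r1 ` (fv p - {x})" using acond_fvS(2)[OF A] by (simp only: ren.simps fv.simps)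
  have fSb0: "fv ?Sb \<subseteq> (r1(x := ?gx)) ` fv p" by (rule fv_ren_sub)
  have up: "(r1(x := ?gx)) ` fv p \<subseteq> insert ?gx (r1 ` (fv p - {x}))" by auto
  have fSb: "fv ?Sb \<subseteq> insert ?gx (r1 ` (fv p - {x}))" using fSb0 up by (rule subset_trans)
  have c: "acond ?G2 g f (r1(x := ?gx)) (r2(x := ?gx)) p"
    unfolding acond_def
  proof (intro conjI)
    show "\<forall>v\<in>fv p. (r1(x := ?gx)) v = (r2(x := ?gx)) v" using eq by simp
    have B1: "g ` bnd p \<union> f ` bnd p \<subseteq> g ` insert x (bnd p) \<union> f ` insert x (bnd p)" by auto
    have gxB: "?gx \<notin> g ` bnd p \<union> f ` bnd p" using gx_nb gx_nf by blast
    have "fvs ?G2 \<subseteq> fvs \<Gamma> \<union> r1 ` (fv p - {x}) \<union> {?gx}" using fS fSb by (simp only: fvs_insert) blast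
    then have "fvs ?G2 \<union> (r1(x := ?gx)) ` fv p \<subseteq> fvs \<Gamma> \<union> r1 ` (fv p - {x}) \<union> {?gx}" using up by blast
    then show "(g ` bnd p \<union> f ` bnd p) \<inter> (fvs ?G2 \<union> (r1(x := ?gx)) ` fv p) = {}"
      by (rule disj_helper[OF B1 fr gxB])
    show "clean p" by (fact cl)
    show "inj_on g (bnd p)" using ig by (rule inj_on_subset) blast
    show "inj_on f (bnd p)" using if' by (rule inj_on_subset) blast
    show "g ` bnd p \<inter> f ` bnd p = {}" using dj by blast
  qed
  have Tb': "deriv ?G2 (ren f (r2(x := ?gx)) p)"
    by (rule deriv.ImpE[OF Ex.IH[OF c]]) (rule deriv.Assm, rule insertI1)
  have "subst ?Tb ?fx ?gx = ren f (r2(x := ?gx)) p"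
  proof (rule ren_subst)
    show "?fx \<notin> f ` bnd p" by (fact fx_nb)
    show "\<forall>v\<in>fv p. (r2(x := ?fx)) v = ?fx \<longrightarrow> (r2(x := ?gx)) v = ?gx"
    proof (intro ballI impI)
      fix v assume v: "v \<in> fv p" "(r2(x := ?fx)) v = ?fx"
      show "(r2(x := ?gx)) v = ?gx"
      proof (cases "v = x")
        case False
        then have "r2 v = ?fx" using v by simp
        moreover have "r1 v = r2 v" using eq v False by blast
        moreover have "r1 v \<in> r1 ` (fv p - {x})" using v False by blast
        ultimately show ?thesis using fx1 by simp
      qed simp
    qed
    show "\<forall>v\<in>fv p. (r2(x := ?fx)) v \<noteq> ?fx \<longrightarrow> (r2(x := ?gx)) v = (r2(x := ?fx)) v"
      by simp
  qed
  with Tb' have "deriv ?G2 (subst ?Tb ?fx ?gx)" by simp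
  then have T2: "deriv ?G2 ?T"
    by (rule deriv.ExI) (rule free_for_nobnd, use gx_nf in simp)
  have S1: "deriv ?G1 ?S" by (rule deriv.Assm) (rule insertI1)
  have G1: "\<forall>\<gamma>\<in>?G1. ?gx \<notin> fv \<gamma>"
  proof -
    have "?gx \<notin> fvs ?G1" using gx1 fS by (simp only: fvs_insert) blast
    then show ?thesis unfolding fvs_def by blast
  qed
  have N: "?gx \<notin> fv ?T" using gx1 fT by blast
  have "deriv ?G1 ?T" by (rule deriv.ExE[OF S1 T2 G1 N])
  then show ?case unfolding ren.simps by (rule deriv.ImpI)
qed

lemma alpha_rule:
  assumes D: "deriv \<Gamma> p" and cl: "clean p" and inj: "inj_on f (bnd p)"
    and fr: "(bnd p \<union> f ` bnd p) \<inter> (fvs \<Gamma> \<union> fv p) = {}" and fin: "finite (fvs \<Gamma>)"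
  shows "deriv \<Gamma> (ren f id p)"
proof -
  define M where "M = fvs \<Gamma> \<union> fv p \<union> bnd p \<union> f ` bnd p"
  have finM: "finite M" using fin by (simp add: M_def)
  define K where "K = Suc (Max (insert 0 M))"
  have Kbig: "v < K" if "v \<in> M" for v
    using that finM unfolding K_def by (simp add: le_imp_less_Suc)
  define h where "h = (\<lambda>v::nat. v + K)"
  have hK: "h v \<ge> K" for v by (simp add: h_def)
  have hinj: "inj_on h A" for A by (auto simp: h_def inj_on_def)
  have h1: "h ` bnd p \<inter> M = {}"
  proof (rule ccontr)
    assume "h ` bnd p \<inter> M \<noteq> {}"
    then obtain v where "v \<in> M" "v \<in> h ` bnd p" by blast
    then show False using hK[of "inv_into (bnd p) h v"] Kbig[of v]
      by (metis f_inv_into_f not_less)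
  qed
  have c1: "acond \<Gamma> id h id id p"
    unfolding acond_def
  proof (intro conjI)
    show "id ` bnd p \<inter> h ` bnd p = {}" using h1 by (auto simp: M_def)
    show "(id ` bnd p \<union> h ` bnd p) \<inter> (fvs \<Gamma> \<union> id ` fv p) = {}" using h1 fr by (auto simp: M_def)
  qed (use cl hinj in auto)
  have s1: "deriv \<Gamma> (ren h id p)" using deriv.ImpE[OF alpha_imp[OF c1]] D by simp
  have c2: "acond \<Gamma> h f id id p"
    unfolding acond_def
  proof (intro conjI)
    show "h ` bnd p \<inter> f ` bnd p = {}" using h1 by (auto simp: M_def)
    show "(h ` bnd p \<union> f ` bnd p) \<inter> (fvs \<Gamma> \<union> id ` fv p) = {}" using h1 fr by (auto simp: M_def)
  qed (use cl hinj inj in auto)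
  show ?thesis using deriv.ImpE[OF alpha_imp[OF c2] s1] .
qed

section \<open>Proof layer with list contexts\<close>

definition pf :: "fm list \<Rightarrow> fm \<Rightarrow> bool" where
  "pf hs p \<longleftrightarrow> deriv (set hs \<union> IKP) p"

definition fvl :: "fm list \<Rightarrow> nat set" where
  "fvl hs = \<Union> (fv ` set hs)"

lemma fvl_simps[simp]: "fvl [] = {}" "fvl (h # hs) = fv h \<union> fvl hs" "fvl (hs @ ks) = fvl hs \<union> fvl ks"
  by (auto simp: fvl_def)

lemma fvs_set[simp]: "fvs (set hs) = fvl hs"
  by (simp add: fvs_def fvl_def)

lemma fvs_ctx[simp]: "fvs (set hs \<union> IKP) = fvl hs"
  by (simp only: fvs_Un fvs_IKP fvs_set) simp

lemma fin_fvl: "finite (fvl hs)"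
  by (simp add: fvl_def)

lemma ctx_snoc: "set (hs @ [a]) \<union> IKP = insert a (set hs \<union> IKP)"
  by auto

lemma ctx_fresh: "x \<notin> fvl hs \<Longrightarrow> \<forall>\<gamma>\<in>set hs \<union> IKP. x \<notin> fv \<gamma>"
  using fvs_ctx[of hs] unfolding fvs_def by blast

fun lhs :: "fm \<Rightarrow> fm" where
  "lhs (Conj p q) = p" | "lhs (Disj p q) = p" | "lhs (Imp p q) = p" | "lhs _ = Bot"
fun rhs :: "fm \<Rightarrow> fm" where
  "rhs (Conj p q) = q" | "rhs (Disj p q) = q" | "rhs (Imp p q) = q" | "rhs _ = Bot"
fun qv :: "fm \<Rightarrow> nat" where
  "qv (All x p) = x" | "qv (Ex x p) = x" | "qv _ = 0"
fun qb :: "fm \<Rightarrow> fm" where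
  "qb (All x p) = p" | "qb (Ex x p) = p" | "qb _ = Bot"
fun el :: "fm \<Rightarrow> nat" where "el (Eq a b) = a" | "el _ = 0"
fun er :: "fm \<Rightarrow> nat" where "er (Eq a b) = b" | "er _ = 0"
fun isEq :: "fm \<Rightarrow> bool" where "isEq (Eq a b) = True" | "isEq _ = False"
lemma isEq_eq: "isEq p \<Longrightarrow> p = Eq (el p) (er p)" by (cases p) auto

declare insert_Diff_if[simp] Un_insert_left[simp] Un_insert_right[simp]

fun isC :: "fm \<Rightarrow> bool" where "isC (Conj p q) = True" | "isC _ = False"
fun isD :: "fm \<Rightarrow> bool" where "isD (Disj p q) = True" | "isD _ = False"
fun isI :: "fm \<Rightarrow> bool" where "isI (Imp p q) = True" | "isI _ = False"
fun isA :: "fm \<Rightarrow> bool" where "isA (All x p) = True" | "isA _ = False"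
fun isE :: "fm \<Rightarrow> bool" where "isE (Ex x p) = True" | "isE _ = False"

lemma isC_eq: "isC p \<Longrightarrow> p = Conj (lhs p) (rhs p)" by (cases p) auto
lemma isD_eq: "isD p \<Longrightarrow> p = Disj (lhs p) (rhs p)" by (cases p) auto
lemma isI_eq: "isI p \<Longrightarrow> p = Imp (lhs p) (rhs p)" by (cases p) auto
lemma isA_eq: "isA p \<Longrightarrow> p = All (qv p) (qb p)" by (cases p) auto
lemma isE_eq: "isE p \<Longrightarrow> p = Ex (qv p) (qb p)" by (cases p) auto

lemma pf_hyp: "p \<in> set hs \<Longrightarrow> pf hs p"
  unfolding pf_def by (rule deriv.Assm) simp

lemma pf_ax: "p \<in> IKP \<Longrightarrow> pf hs p"
  unfolding pf_def by (rule deriv.Assm) simp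

lemma pf_nth: "i < length hs \<Longrightarrow> pf hs (hs ! i)"
  by (rule pf_hyp) simp

lemma pf_nth_app: "i < length hs \<Longrightarrow> pf (hs @ ks) (hs ! i)"
  by (rule pf_hyp) simp

lemma pf_cut: "pf hs a \<Longrightarrow> pf (hs @ [a]) g \<Longrightarrow> pf hs g"
  unfolding pf_def ctx_snoc by (rule deriv.ImpE[OF deriv.ImpI])

lemma imp_R: "pf (hs @ [a]) b \<Longrightarrow> pf hs (Imp a b)"
  unfolding pf_def ctx_snoc by (rule deriv.ImpI)

lemma all_R: "x \<notin> fvl hs \<Longrightarrow> pf hs p \<Longrightarrow> pf hs (All x p)"
  unfolding pf_def by (rule deriv.AllI) (auto dest: ctx_fresh)

lemma conj_R: "pf hs a \<Longrightarrow> pf hs b \<Longrightarrow> pf hs (Conj a b)"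
  unfolding pf_def by (rule deriv.ConjI)

lemma disj_R1: "pf hs a \<Longrightarrow> pf hs (Disj a b)"
  unfolding pf_def by (rule deriv.DisjI1)

lemma disj_R2: "pf hs b \<Longrightarrow> pf hs (Disj a b)"
  unfolding pf_def by (rule deriv.DisjI2)

lemma ex_R: "free_for y x p \<Longrightarrow> pf hs (subst p x y) \<Longrightarrow> pf hs (Ex x p)"
  unfolding pf_def by (rule deriv.ExI)

lemma refl_R: "pf hs (Eq x x)"
  unfolding pf_def by (rule deriv.Refl)

lemma iff_R: "pf (hs @ [a]) b \<Longrightarrow> pf (hs @ [b]) a \<Longrightarrow> pf hs (Iff a b)"
  unfolding Iff_def by (intro conj_R imp_R)

lemma ball_R: "x \<notin> fvl hs \<Longrightarrow> pf (hs @ [Mem x a]) p \<Longrightarrow> pf hs (BAll x a p)"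
  unfolding BAll_def by (intro all_R imp_R)

lemma bex_R: "free_for y x p \<Longrightarrow> x \<noteq> a \<Longrightarrow> pf hs (Mem y a) \<Longrightarrow> pf hs (subst p x y) \<Longrightarrow> pf hs (BEx x a p)"
  unfolding BEx_def by (rule ex_R[where y = y]) (auto intro: conj_R)

lemma conj_L: "i < length hs \<Longrightarrow> isC (hs ! i) \<Longrightarrow> pf (hs @ [lhs (hs ! i), rhs (hs ! i)]) g \<Longrightarrow> pf hs g"
proof -
  assume a: "i < length hs" "isC (hs ! i)" "pf (hs @ [lhs (hs ! i), rhs (hs ! i)]) g"
  have c: "pf hs (Conj (lhs (hs ! i)) (rhs (hs ! i)))" using pf_nth[OF a(1)] isC_eq[OF a(2)] by simp
  have 1: "pf hs (lhs (hs ! i))" using c unfolding pf_def by (rule deriv.ConjE1)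
  have 2: "pf hs (rhs (hs ! i))" using c unfolding pf_def by (rule deriv.ConjE2)
  have "pf hs (Conj (lhs (hs ! i)) (rhs (hs ! i)))" by (fact c)
  have "pf (hs @ [lhs (hs ! i)]) (Conj (lhs (hs ! i)) (rhs (hs ! i)))"
    using pf_nth_app[OF a(1)] isC_eq[OF a(2)] by simp
  then have 3: "pf (hs @ [lhs (hs ! i)]) (rhs (hs ! i))" unfolding pf_def by (rule deriv.ConjE2)
  have "pf (hs @ [lhs (hs ! i)]) g" by (rule pf_cut[OF 3]) (use a(3) in simp)
  then show ?thesis by (rule pf_cut[OF 1])
qed

lemma disj_L: "i < length hs \<Longrightarrow> isD (hs ! i) \<Longrightarrow> pf (hs @ [lhs (hs ! i)]) g \<Longrightarrow> pf (hs @ [rhs (hs ! i)]) g \<Longrightarrow> pf hs g"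
proof -
  assume a: "i < length hs" "isD (hs ! i)" "pf (hs @ [lhs (hs ! i)]) g" "pf (hs @ [rhs (hs ! i)]) g"
  have c: "pf hs (Disj (lhs (hs ! i)) (rhs (hs ! i)))" using pf_nth[OF a(1)] isD_eq[OF a(2)] by simp
  show ?thesis using c a(3,4) unfolding pf_def ctx_snoc by (rule deriv.DisjE)
qed

lemma imp_L: "i < length hs \<Longrightarrow> isI (hs ! i) \<Longrightarrow> pf hs (lhs (hs ! i)) \<Longrightarrow> pf (hs @ [rhs (hs ! i)]) g \<Longrightarrow> pf hs g"
proof -
  assume a: "i < length hs" "isI (hs ! i)" "pf hs (lhs (hs ! i))" "pf (hs @ [rhs (hs ! i)]) g"
  have c: "pf hs (Imp (lhs (hs ! i)) (rhs (hs ! i)))" using pf_nth[OF a(1)] isI_eq[OF a(2)] by simp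
  have "pf hs (rhs (hs ! i))" using c a(3) unfolding pf_def by (rule deriv.ImpE)
  then show ?thesis using a(4) by (rule pf_cut)
qed

lemma all_L: "i < length hs \<Longrightarrow> isA (hs ! i) \<Longrightarrow> free_for y (qv (hs ! i)) (qb (hs ! i))
   \<Longrightarrow> pf (hs @ [subst (qb (hs ! i)) (qv (hs ! i)) y]) g \<Longrightarrow> pf hs g"
proof -
  assume a: "i < length hs" "isA (hs ! i)" "free_for y (qv (hs ! i)) (qb (hs ! i))"
     "pf (hs @ [subst (qb (hs ! i)) (qv (hs ! i)) y]) g"
  have c: "pf hs (All (qv (hs ! i)) (qb (hs ! i)))" using pf_nth[OF a(1)] isA_eq[OF a(2)] by simp
  have "pf hs (subst (qb (hs ! i)) (qv (hs ! i)) y)" using c a(3) unfolding pf_def by (rule deriv.AllE)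
  then show ?thesis using a(4) by (rule pf_cut)
qed

lemma subst_back: "w \<notin> fv p \<Longrightarrow> w \<notin> bnd p \<Longrightarrow> subst (subst p x w) w x = p"
  by (induction p) (auto simp: subst_nofv)

lemma ff_back: "w \<notin> fv p \<Longrightarrow> w \<notin> bnd p \<Longrightarrow> free_for x w (subst p x w)"
proof (induction p)
  case (All z q)
  show ?case
  proof (cases "z = x")
    case True then show ?thesis using All.prems by simp
  next
    case False
    then show ?thesis using All by (auto simp: subst_nofv)
  qed
next
  case (Ex z q)
  show ?case
  proof (cases "z = x")
    case True then show ?thesis using Ex.prems by simp
  next
    case False
    then show ?thesis using Ex by (auto simp: subst_nofv)
  qed
qed auto

lemma ex_D: "pf hs (Ex x p) \<Longrightarrow> x \<notin> fvl hs \<Longrightarrow> w \<notin> fvl hs \<Longrightarrow> w \<notin> fv g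
  \<Longrightarrow> w \<notin> fv p - {x} \<Longrightarrow> w \<notin> bnd p
  \<Longrightarrow> pf (hs @ [subst p x w]) g \<Longrightarrow> pf hs g"
proof -
  assume a: "pf hs (Ex x p)" "x \<notin> fvl hs" "w \<notin> fvl hs" "w \<notin> fv g"
    "w \<notin> fv p - {x}" "w \<notin> bnd p"
    "pf (hs @ [subst p x w]) g"
  define \<Gamma> where "\<Gamma> = set hs \<union> IKP"
  have c: "deriv \<Gamma> (Ex x p)" using a(1) by (simp add: pf_def \<Gamma>_def)
  have fx: "\<forall>\<gamma>\<in>\<Gamma>. x \<notin> fv \<gamma>" using ctx_fresh[OF a(2)] by (simp add: \<Gamma>_def)
  have fw: "\<forall>\<gamma>\<in>\<Gamma>. w \<notin> fv \<gamma>" using ctx_fresh[OF a(3)] by (simp add: \<Gamma>_def)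
  show ?thesis
  proof (cases "w = x")
    case True
    then have "deriv (insert p \<Gamma>) g" using a(7) by (simp add: pf_def \<Gamma>_def ctx_snoc)
    then show ?thesis unfolding pf_def using deriv.ExE[OF c _ fx] a(4) True by (simp add: \<Gamma>_def)
  next
    case False
    have wp: "w \<notin> fv p" using a(5) False by simp
    have wb: "w \<notin> bnd p" using a(6) by simp
    have "deriv (insert p \<Gamma>) (Ex w (subst p x w))"
    proof (rule deriv.ExI[where y = x])
      show "deriv (insert p \<Gamma>) (subst (subst p x w) w x)" using subst_back[OF wp wb] by (auto intro: deriv.Assm)
      show "free_for x w (subst p x w)" by (rule ff_back[OF wp wb])
    qed
    moreover have "x \<notin> fv (Ex w (subst p x w))" using fv_subst_sub[of p x w] False by auto
    ultimately have e: "deriv \<Gamma> (Ex w (subst p x w))" by (rule deriv.ExE[OF c _ fx])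
    have "deriv (insert (subst p x w) \<Gamma>) g" using a(7) by (simp add: pf_def \<Gamma>_def ctx_snoc)
    then show ?thesis unfolding pf_def using deriv.ExE[OF e _ fw] a(4) by (simp add: \<Gamma>_def)
  qed
qed

lemma ex_L: "i < length hs \<Longrightarrow> isE (hs ! i) \<Longrightarrow> qv (hs ! i) \<notin> fvl hs \<Longrightarrow> w \<notin> fvl hs \<Longrightarrow> w \<notin> fv g
  \<Longrightarrow> w \<notin> fv (qb (hs ! i)) - {qv (hs ! i)} \<Longrightarrow> w \<notin> bnd (qb (hs ! i))
  \<Longrightarrow> pf (hs @ [subst (qb (hs ! i)) (qv (hs ! i)) w]) g \<Longrightarrow> pf hs g"
  by (rule ex_D[where x = "qv (hs ! i)" and p = "qb (hs ! i)"]) (use pf_nth isE_eq in metis)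

lemma all_D: "pf hs (All x p) \<Longrightarrow> free_for y x p \<Longrightarrow> pf hs (subst p x y)"
  unfolding pf_def by (rule deriv.AllE)

lemma imp_D: "pf hs (Imp a b) \<Longrightarrow> pf hs a \<Longrightarrow> pf hs b"
  unfolding pf_def by (rule deriv.ImpE)

lemma bot_L: "Bot \<in> set hs \<Longrightarrow> pf hs g"
  unfolding pf_def by (rule deriv.BotE) (rule deriv.Assm, simp)

lemma eq_L: "i < length hs \<Longrightarrow> j < length hs \<Longrightarrow> isEq (hs ! j) \<Longrightarrow> free_for (er (hs ! j)) (el (hs ! j)) (hs ! i)
  \<Longrightarrow> pf (hs @ [subst (hs ! i) (el (hs ! j)) (er (hs ! j))]) g \<Longrightarrow> pf hs g"
proof -
  assume a: "i < length hs" "j < length hs" "isEq (hs ! j)" "free_for (er (hs ! j)) (el (hs ! j)) (hs ! i)"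
    "pf (hs @ [subst (hs ! i) (el (hs ! j)) (er (hs ! j))]) g"
  define x where "x = el (hs ! j)"
  define y where "y = er (hs ! j)"
  have e: "pf hs (Eq x y)" using pf_nth[OF a(2)] isEq_eq[OF a(3)] by (simp add: x_def y_def)
  have p: "pf hs (subst (hs ! i) x x)" using pf_nth[OF a(1)] by simp
  have "pf hs (subst (hs ! i) x y)" using deriv.Leibniz[OF e[unfolded pf_def] p[unfolded pf_def] _ a(4)[folded x_def y_def]]
    unfolding pf_def by simp
  then show ?thesis using a(5) by (simp add: x_def y_def pf_cut)
qed

lemma leib_R: "pf hs (Eq a b) \<Longrightarrow> pf hs (subst p z a) \<Longrightarrow> free_for a z p \<Longrightarrow> free_for b z p \<Longrightarrow> pf hs (subst p z b)"
  unfolding pf_def by (rule deriv.Leibniz)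

lemma eq_sym_D: "pf hs (Eq a b) \<Longrightarrow> pf hs (Eq b a)"
proof -
  assume e: "pf hs (Eq a b)"
  define z where "z = Suc (max a b)"
  have z: "z \<noteq> a" "z \<noteq> b" by (auto simp: z_def)
  have "pf hs (subst (Eq z a) z b)" by (rule leib_R[OF e]) (use z in \<open>auto intro: refl_R\<close>)
  then show "pf hs (Eq b a)" using z by simp
qed

lemma eq_sym_L: "i < length hs \<Longrightarrow> isEq (hs ! i) \<Longrightarrow> pf (hs @ [Eq (er (hs ! i)) (el (hs ! i))]) g \<Longrightarrow> pf hs g"
proof -
  assume a: "i < length hs" "isEq (hs ! i)" "pf (hs @ [Eq (er (hs ! i)) (el (hs ! i))]) g"
  have e: "pf hs (Eq (el (hs ! i)) (er (hs ! i)))" using pf_nth[OF a(1)] isEq_eq[OF a(2)] by simp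
  show ?thesis by (rule pf_cut[OF eq_sym_D[OF e] a(3)])
qed

lemma alpha_L: "i < length hs \<Longrightarrow> clean (hs ! i) \<Longrightarrow> inj_on f (bnd (hs ! i))
  \<Longrightarrow> (bnd (hs ! i) \<union> f ` bnd (hs ! i)) \<inter> (fvl hs \<union> fv (hs ! i)) = {}
  \<Longrightarrow> pf (hs @ [ren f id (hs ! i)]) g \<Longrightarrow> pf hs g"
proof -
  assume a: "i < length hs" "clean (hs ! i)" "inj_on f (bnd (hs ! i))"
    "(bnd (hs ! i) \<union> f ` bnd (hs ! i)) \<inter> (fvl hs \<union> fv (hs ! i)) = {}" "pf (hs @ [ren f id (hs ! i)]) g"
  have "pf hs (ren f id (hs ! i))"
    using alpha_rule[of "set hs \<union> IKP" "hs ! i" f] pf_nth[OF a(1)] a(2-4) fin_fvl unfolding pf_def by simp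
  then show ?thesis using a(5) by (rule pf_cut)
qed

lemma ax_L: "p \<in> IKP \<Longrightarrow> pf (hs @ [p]) g \<Longrightarrow> pf hs g"
  by (rule pf_cut[OF pf_ax])

lemma sep_L: "delta0 p \<Longrightarrow> distinct [a, b, x] \<Longrightarrow> b \<notin> fv p
  \<Longrightarrow> pf (hs @ [All a (Ex b (All x (Iff (Mem x b) (Conj (Mem x a) p))))]) g \<Longrightarrow> pf hs g"
proof -
  assume a: "delta0 p" "distinct [a, b, x]" "b \<notin> fv p" "pf (hs @ [All a (Ex b (All x (Iff (Mem x b) (Conj (Mem x a) p))))]) g"
  have "close (All a (Ex b (All x (Iff (Mem x b) (Conj (Mem x a) p))))) \<in> IKP"
  proof -
    have "close (All a (Ex b (All x (Iff (Mem x b) (Conj (Mem x a) p))))) \<in> Sep_ax"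
      unfolding Sep_ax_def mem_Collect_eq
      by (rule exI[of _ a], rule exI[of _ b], rule exI[of _ x], rule exI[of _ p]) (use a in simp)
    then show ?thesis unfolding IKP_def by blast
  qed
  then have "pf hs (close (All a (Ex b (All x (Iff (Mem x b) (Conj (Mem x a) p))))))" by (rule pf_ax)
  then have "pf hs (All a (Ex b (All x (Iff (Mem x b) (Conj (Mem x a) p)))))"
    unfolding pf_def by (rule deriv_unclose)
  then show ?thesis using a(4) by (rule pf_cut)
qed

lemma coll_L: "delta0 p \<Longrightarrow> distinct [a, b, x, y] \<Longrightarrow> b \<notin> fv p
  \<Longrightarrow> pf (hs @ [Imp (BAll x a (Ex y p)) (Ex b (BAll x a (BEx y b p)))]) g \<Longrightarrow> pf hs g"
proof -
  assume a: "delta0 p" "distinct [a, b, x, y]" "b \<notin> fv p" "pf (hs @ [Imp (BAll x a (Ex y p)) (Ex b (BAll x a (BEx y b p)))]) g"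
  have "close (Imp (BAll x a (Ex y p)) (Ex b (BAll x a (BEx y b p)))) \<in> IKP"
  proof -
    have "close (Imp (BAll x a (Ex y p)) (Ex b (BAll x a (BEx y b p)))) \<in> Coll_ax"
      unfolding Coll_ax_def mem_Collect_eq
      by (rule exI[of _ a], rule exI[of _ b], rule exI[of _ x], rule exI[of _ y], rule exI[of _ p]) (use a in simp)
    then show ?thesis unfolding IKP_def by blast
  qed
  then have "pf hs (close (Imp (BAll x a (Ex y p)) (Ex b (BAll x a (BEx y b p)))))" by (rule pf_ax)
  then have "pf hs (Imp (BAll x a (Ex y p)) (Ex b (BAll x a (BEx y b p))))"
    unfolding pf_def by (rule deriv_unclose)
  then show ?thesis using a(4) by (rule pf_cut)
qed

lemma setind_L: "a \<noteq> x \<Longrightarrow> x \<notin> fv p \<Longrightarrow> free_for x a p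
  \<Longrightarrow> pf (hs @ [Imp (All a (Imp (BAll x a (subst p a x)) p)) (All a p)]) g \<Longrightarrow> pf hs g"
proof -
  assume a: "a \<noteq> x" "x \<notin> fv p" "free_for x a p" "pf (hs @ [Imp (All a (Imp (BAll x a (subst p a x)) p)) (All a p)]) g"
  have "close (Imp (All a (Imp (BAll x a (subst p a x)) p)) (All a p)) \<in> IKP"
  proof -
    have "close (Imp (All a (Imp (BAll x a (subst p a x)) p)) (All a p)) \<in> SetInd_ax"
      unfolding SetInd_ax_def mem_Collect_eq
      by (rule exI[of _ a], rule exI[of _ x], rule exI[of _ p]) (use a in simp)
    then show ?thesis unfolding IKP_def by blast
  qed
  then have "pf hs (close (Imp (All a (Imp (BAll x a (subst p a x)) p)) (All a p)))" by (rule pf_ax)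
  then have "pf hs (Imp (All a (Imp (BAll x a (subst p a x)) p)) (All a p))"
    unfolding pf_def by (rule deriv_unclose)
  then show ?thesis using a(4) by (rule pf_cut)
qed

lemma ext_in: "Ext_ax \<in> IKP" and pair_in: "Pair_ax \<in> IKP" and union_in: "Union_ax \<in> IKP" and sinf_in: "SInf_ax \<in> IKP"
  by (auto simp: IKP_def)

lemma deriv_weak_closed: "deriv \<Gamma> p \<Longrightarrow> fvs \<Delta> = {} \<Longrightarrow> deriv (\<Gamma> \<union> \<Delta>) p"
proof (induction rule: deriv.induct)
  case (Assm \<phi> \<Gamma>) then show ?case by (auto intro: deriv.Assm)
next
  case (BotE \<Gamma> \<phi>) then show ?case by (auto intro: deriv.BotE)
next
  case (ConjI \<Gamma> \<phi> \<psi>) then show ?case by (auto intro: deriv.ConjI)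
next
  case (ConjE1 \<Gamma> \<phi> \<psi>) then show ?case by (auto intro: deriv.ConjE1)
next
  case (ConjE2 \<Gamma> \<phi> \<psi>) then show ?case by (auto intro: deriv.ConjE2)
next
  case (DisjI1 \<Gamma> \<phi> \<psi>) then show ?case by (auto intro: deriv.DisjI1)
next
  case (DisjI2 \<Gamma> \<psi> \<phi>) then show ?case by (auto intro: deriv.DisjI2)
next
  case (DisjE \<Gamma> \<phi> \<psi> \<chi>)
  then show ?case using deriv.DisjE[of "\<Gamma> \<union> \<Delta>" \<phi> \<psi> \<chi>] by simp
next
  case (ImpI \<phi> \<Gamma> \<psi>) then show ?case using deriv.ImpI[of \<phi> "\<Gamma> \<union> \<Delta>" \<psi>] by simp
next
  case (ImpE \<Gamma> \<phi> \<psi>) then show ?case by (auto intro: deriv.ImpE)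
next
  case (AllI \<Gamma> \<phi> x)
  have "\<forall>\<gamma>\<in>\<Gamma> \<union> \<Delta>. x \<notin> fv \<gamma>" using AllI.hyps(2) AllI.prems by (auto simp: fvs_def)
  then show ?case using deriv.AllI AllI.IH AllI.prems by blast
next
  case (AllE \<Gamma> x \<phi> y) then show ?case by (auto intro: deriv.AllE)
next
  case (ExI \<Gamma> \<phi> x y) then show ?case by (auto intro: deriv.ExI)
next
  case (ExE \<Gamma> x \<phi> \<psi>)
  have "\<forall>\<gamma>\<in>\<Gamma> \<union> \<Delta>. x \<notin> fv \<gamma>" using ExE.hyps(3) ExE.prems by (auto simp: fvs_def)
  moreover have "deriv (insert \<phi> (\<Gamma> \<union> \<Delta>)) \<psi>" using ExE.IH(2) ExE.prems by simp
  ultimately show ?case using deriv.ExE ExE.IH(1) ExE.prems ExE.hyps(4) by blast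
next
  case (Refl \<Gamma> x) show ?case by (rule deriv.Refl)
next
  case (Leibniz \<Gamma> x y \<phi> z) then show ?case by (auto intro: deriv.Leibniz)
qed

lemma pf_weak: "pf hs p \<Longrightarrow> set hs \<subseteq> set ks \<Longrightarrow> fvl ks = {} \<Longrightarrow> pf ks p"
proof -
  assume a: "pf hs p" "set hs \<subseteq> set ks" "fvl ks = {}"
  have "deriv ((set hs \<union> IKP) \<union> set ks) p" using deriv_weak_closed[OF a(1)[unfolded pf_def]] a(3) by simp
  moreover have "(set hs \<union> IKP) \<union> set ks = set ks \<union> IKP" using a(2) by auto
  ultimately show ?thesis by (simp add: pf_def)
qed

section \<open>Renamed axioms and derived set-theoretic rules\<close>

definition ExtR :: fm where
  "ExtR = All 9001 (All 9002 (Imp (All 9003 (Iff (Mem 9003 9001) (Mem 9003 9002))) (Eq 9001 9002)))"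
definition PairR :: fm where
  "PairR = All 9011 (All 9012 (Ex 9013 (Conj (Mem 9011 9013) (Mem 9012 9013))))"
definition UnionR :: fm where
  "UnionR = All 9021 (Ex 9022 (BAll 9023 9021 (BAll 9024 9023 (Mem 9024 9022))))"

lemma fv_ExtR[simp]: "fv ExtR = {}" and fv_PairR[simp]: "fv PairR = {}" and fv_UnionR[simp]: "fv UnionR = {}"
  by (auto simp: ExtR_def PairR_def UnionR_def Iff_def BAll_def)

lemma pf_ExtR: "pf [] ExtR"
proof -
  have m: "Ext_ax \<in> IKP" by (simp add: IKP_def)
  have "deriv (set [] \<union> IKP) (ren (\<lambda>v. v + 9001) id Ext_ax)"
  proof (rule alpha_rule)
    show "deriv (set [] \<union> IKP) Ext_ax" using m by (auto intro: deriv.Assm)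
    have "fvs (set [] \<union> IKP) = {}" using fvs_ctx[of "[]"] by (simp only: fvl_simps)
    then show "(bnd Ext_ax \<union> (\<lambda>v. v + 9001) ` bnd Ext_ax) \<inter> (fvs (set [] \<union> IKP) \<union> fv Ext_ax) = {}"
      by (simp add: Ext_ax_def Iff_def)
    show "finite (fvs (set [] \<union> IKP))" using fin_fvl[of "[]"] by simp
  qed (auto simp: Ext_ax_def Iff_def)
  then show ?thesis by (simp add: pf_def Ext_ax_def ExtR_def Iff_def)
qed

lemma pf_PairR: "pf [] PairR"
proof -
  have m: "Pair_ax \<in> IKP" by (simp add: IKP_def)
  have "deriv (set [] \<union> IKP) (ren (\<lambda>v. v + 9011) id Pair_ax)"
  proof (rule alpha_rule)
    show "deriv (set [] \<union> IKP) Pair_ax" using m by (auto intro: deriv.Assm)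
    have "fvs (set [] \<union> IKP) = {}" using fvs_ctx[of "[]"] by (simp only: fvl_simps)
    then show "(bnd Pair_ax \<union> (\<lambda>v. v + 9011) ` bnd Pair_ax) \<inter> (fvs (set [] \<union> IKP) \<union> fv Pair_ax) = {}"
      by (simp add: Pair_ax_def )
    show "finite (fvs (set [] \<union> IKP))" using fin_fvl[of "[]"] by simp
  qed (auto simp: Pair_ax_def )
  then show ?thesis by (simp add: pf_def Pair_ax_def PairR_def )
qed

lemma pf_UnionR: "pf [] UnionR"
proof -
  have m: "Union_ax \<in> IKP" by (simp add: IKP_def)
  have "deriv (set [] \<union> IKP) (ren (\<lambda>v. v + 9021) id Union_ax)"
  proof (rule alpha_rule)
    show "deriv (set [] \<union> IKP) Union_ax" using m by (auto intro: deriv.Assm)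
    have "fvs (set [] \<union> IKP) = {}" using fvs_ctx[of "[]"] by (simp only: fvl_simps)
    then show "(bnd Union_ax \<union> (\<lambda>v. v + 9021) ` bnd Union_ax) \<inter> (fvs (set [] \<union> IKP) \<union> fv Union_ax) = {}"
      by (simp add: Union_ax_def BAll_def)
    show "finite (fvs (set [] \<union> IKP))" using fin_fvl[of "[]"] by simp
  qed (auto simp: Union_ax_def BAll_def)
  then show ?thesis by (simp add: pf_def Union_ax_def UnionR_def BAll_def)
qed

lemma pair_obtain:
  assumes "PairR \<in> set hs" "a \<notin> {9012, 9013}" "b \<noteq> 9013" "9013 \<notin> fvl hs" "w \<notin> fvl hs" "w \<notin> fv g"
    "w \<notin> {a, b}"
    "pf (hs @ [Conj (Mem a w) (Mem b w)]) g"
  shows "pf hs g"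
proof -
  have 1: "pf hs (All 9012 (Ex 9013 (Conj (Mem a 9013) (Mem 9012 9013))))"
    using deriv.AllE[OF pf_hyp[OF assms(1), unfolded pf_def PairR_def], of a] assms(2)
    by (simp add: pf_def)
  have 2: "pf hs (Ex 9013 (Conj (Mem a 9013) (Mem b 9013)))"
    using deriv.AllE[OF 1[unfolded pf_def], of b] assms(2,3) by (simp add: pf_def)
  show ?thesis
    by (rule ex_D[OF 2, where w = w]) (use assms in auto)
qed

lemma union_obtain:
  assumes "UnionR \<in> set hs" "a \<notin> {9022, 9023, 9024}" "9022 \<notin> fvl hs" "w \<notin> fvl hs" "w \<notin> fv g"
    "w \<notin> {a, 9023, 9024}"
    "pf (hs @ [BAll 9023 a (BAll 9024 9023 (Mem 9024 w))]) g"
  shows "pf hs g"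
proof -
  have 1: "pf hs (Ex 9022 (BAll 9023 a (BAll 9024 9023 (Mem 9024 9022))))"
    using deriv.AllE[OF pf_hyp[OF assms(1), unfolded pf_def UnionR_def], of a] assms(2)
    by (simp add: pf_def BAll_def)
  show ?thesis
    by (rule ex_D[OF 1, where w = w]) (use assms in \<open>auto simp: BAll_def\<close>)
qed

lemma ext_R:
  assumes "ExtR \<in> set hs" "a \<notin> {9002, 9003}" "b \<noteq> 9003" "9003 \<notin> fvl hs" "z \<notin> fvl hs" "z \<notin> {a, b}"
    "pf (hs @ [Mem z a]) (Mem z b)" "pf (hs @ [Mem z b]) (Mem z a)"
  shows "pf hs (Eq a b)"
proof -
  have 1: "pf hs (Imp (All 9003 (Iff (Mem 9003 a) (Mem 9003 b))) (Eq a b))"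
  proof -
    have "pf hs (subst (All 9002 (Imp (All 9003 (Iff (Mem 9003 9001) (Mem 9003 9002))) (Eq 9001 9002))) 9001 a)"
      by (rule all_D[OF pf_hyp[OF assms(1), unfolded ExtR_def]]) (use assms in \<open>simp add: Iff_def\<close>)
    then have "pf hs (All 9002 (Imp (All 9003 (Iff (Mem 9003 a) (Mem 9003 9002))) (Eq a 9002)))"
      using assms by (simp add: Iff_def)
    then have "pf hs (subst (Imp (All 9003 (Iff (Mem 9003 a) (Mem 9003 9002))) (Eq a 9002)) 9002 b)"
      by (rule all_D) (use assms in \<open>simp add: Iff_def\<close>)
    then show ?thesis using assms by (simp add: Iff_def)
  qed
  have 2: "pf hs (All z (Iff (Mem z a) (Mem z b)))"
    by (rule all_R, fact, rule iff_R) (fact assms(7), fact assms(8))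
  have 3: "pf hs (ren (\<lambda>v. if v = z then 9003 else v) id (All z (Iff (Mem z a) (Mem z b))))"
    unfolding pf_def
    by (rule alpha_rule[OF 2[unfolded pf_def]]) (use assms in \<open>auto simp: Iff_def fin_fvl\<close>)
  then have "pf hs (All 9003 (Iff (Mem 9003 a) (Mem 9003 b)))" using assms by (auto simp: Iff_def)
  then show ?thesis using 1 unfolding pf_def by (rule deriv.ImpE[rotated])
qed

lemma sep_inst: "delta0 p \<Longrightarrow> distinct [a, b, x] \<Longrightarrow> b \<notin> fv p
  \<Longrightarrow> pf hs (All a (Ex b (All x (Iff (Mem x b) (Conj (Mem x a) p)))))"
  by (rule sep_L[where hs = hs and a = a and b = b and x = x and p = p]) (auto intro: pf_hyp)

lemma sep_obtain:
  assumes "delta0 p" "distinct [a, b, x]" "b \<notin> fv p" "b \<notin> bnd p" "b \<notin> fvl hs" "b \<notin> fv g"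
    "pf (hs @ [All x (Iff (Mem x b) (Conj (Mem x a) p))]) g"
  shows "pf hs g"
proof -
  have "pf hs (subst (Ex b (All x (Iff (Mem x b) (Conj (Mem x a) p)))) a a)"
    by (rule all_D[OF sep_inst[OF assms(1-3)]]) simp
  then have 1: "pf hs (Ex b (All x (Iff (Mem x b) (Conj (Mem x a) p))))" by simp
  show ?thesis
    by (rule ex_D[OF 1, where w = b]) (use assms in \<open>auto simp: Iff_def\<close>)
qed

lemma coll_inst: "delta0 p \<Longrightarrow> distinct [a, b, x, y] \<Longrightarrow> b \<notin> fv p
  \<Longrightarrow> pf hs (Imp (BAll x a (Ex y p)) (Ex b (BAll x a (BEx y b p))))"
  by (rule coll_L[where hs = hs and a = a and b = b and x = x and y = y and p = p]) (auto intro: pf_hyp)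

lemma coll_obtain:
  assumes "delta0 p" "distinct [a, b, x, y]" "b \<notin> fv p" "b \<notin> bnd p" "b \<notin> fvl hs" "b \<notin> fv g"
    "pf hs (BAll x a (Ex y p))"
    "pf (hs @ [BAll x a (BEx y b p)]) g"
  shows "pf hs g"
proof -
  have 1: "pf hs (Ex b (BAll x a (BEx y b p)))"
    using coll_inst[OF assms(1-3), of hs] assms(7) unfolding pf_def by (rule deriv.ImpE)
  show ?thesis
    by (rule ex_D[OF 1, where w = b]) (use assms in \<open>auto simp: BAll_def BEx_def\<close>)
qed

lemma delta0_simps[simp]:
  "delta0 (Mem x y)" "delta0 (Eq x y)" "delta0 Bot"
  "delta0 (Conj p q) \<longleftrightarrow> delta0 p \<and> delta0 q"
  "delta0 (Disj p q) \<longleftrightarrow> delta0 p \<and> delta0 q"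
  "delta0 (Imp p q) \<longleftrightarrow> delta0 p \<and> delta0 q"
  "delta0 (All x (Imp (Mem y a) p)) \<longleftrightarrow> y = x \<and> x \<noteq> a \<and> delta0 p"
  "delta0 (Ex x (Conj (Mem y a) p)) \<longleftrightarrow> y = x \<and> x \<noteq> a \<and> delta0 p"
  by (auto intro: delta0.intros elim: delta0.cases)

fun amatch :: "fm \<Rightarrow> fm \<Rightarrow> (nat \<times> nat) list" where
  "amatch (Conj p q) (Conj p' q') = amatch p p' @ amatch q q'"
| "amatch (Disj p q) (Disj p' q') = amatch p p' @ amatch q q'"
| "amatch (Imp p q) (Imp p' q') = amatch p p' @ amatch q q'"
| "amatch (All x p) (All y q) = (x, y) # amatch p q"
| "amatch (Ex x p) (Ex y q) = (x, y) # amatch p q"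
| "amatch _ _ = []"

definition amap :: "(nat \<times> nat) list \<Rightarrow> nat \<Rightarrow> nat" where
  "amap xs v = (case map_of xs v of Some w \<Rightarrow> w | None \<Rightarrow> v)"

declare amap_def[simp]

lemma alpha_D: "pf hs p \<Longrightarrow> clean p \<Longrightarrow> inj_on f (bnd p) \<Longrightarrow> (bnd p \<union> f ` bnd p) \<inter> (fvl hs \<union> fv p) = {}
  \<Longrightarrow> pf hs (ren f id p)"
  using alpha_rule[of "set hs \<union> IKP" p f] fin_fvl unfolding pf_def by simp

lemma hyp_a: "j < length hs \<Longrightarrow> g = ren (amap (amatch (hs ! j) g)) id (hs ! j) \<Longrightarrow> clean (hs ! j)
  \<Longrightarrow> inj_on (amap (amatch (hs ! j) g)) (bnd (hs ! j))
  \<Longrightarrow> (bnd (hs ! j) \<union> amap (amatch (hs ! j) g) ` bnd (hs ! j)) \<inter> (fvl hs \<union> fv (hs ! j)) = {}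
  \<Longrightarrow> pf hs g"
  by (metis alpha_D pf_nth)

lemma imp_La: "i < length hs \<Longrightarrow> j < length hs \<Longrightarrow> isI (hs ! i)
  \<Longrightarrow> lhs (hs ! i) = ren (amap (amatch (hs ! j) (lhs (hs ! i)))) id (hs ! j) \<Longrightarrow> clean (hs ! j)
  \<Longrightarrow> inj_on (amap (amatch (hs ! j) (lhs (hs ! i)))) (bnd (hs ! j))
  \<Longrightarrow> (bnd (hs ! j) \<union> amap (amatch (hs ! j) (lhs (hs ! i))) ` bnd (hs ! j)) \<inter> (fvl hs \<union> fv (hs ! j)) = {}
  \<Longrightarrow> pf (hs @ [rhs (hs ! i)]) g \<Longrightarrow> pf hs g"
proof -
  assume a: "i < length hs" "j < length hs" "isI (hs ! i)"
    "lhs (hs ! i) = ren (amap (amatch (hs ! j) (lhs (hs ! i)))) id (hs ! j)" "clean (hs ! j)"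
    "inj_on (amap (amatch (hs ! j) (lhs (hs ! i)))) (bnd (hs ! j))"
    "(bnd (hs ! j) \<union> amap (amatch (hs ! j) (lhs (hs ! i))) ` bnd (hs ! j)) \<inter> (fvl hs \<union> fv (hs ! j)) = {}"
    "pf (hs @ [rhs (hs ! i)]) g"
  have 1: "pf hs (lhs (hs ! i))" using alpha_D[OF pf_nth[OF a(2)] a(5) a(6) a(7)] a(4) by simp
  have 2: "pf hs (Imp (lhs (hs ! i)) (rhs (hs ! i)))" using pf_nth[OF a(1)] isI_eq[OF a(3)] by simp
  show ?thesis using pf_cut[OF imp_D[OF 2 1] a(8)] .
qed

lemma alpha_La: "j < length hs \<Longrightarrow> q = ren (amap (amatch (hs ! j) q)) id (hs ! j) \<Longrightarrow> clean (hs ! j)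
  \<Longrightarrow> inj_on (amap (amatch (hs ! j) q)) (bnd (hs ! j))
  \<Longrightarrow> (bnd (hs ! j) \<union> amap (amatch (hs ! j) q) ` bnd (hs ! j)) \<inter> (fvl hs \<union> fv (hs ! j)) = {}
  \<Longrightarrow> pf (hs @ [q]) g \<Longrightarrow> pf hs g"
  by (metis hyp_a pf_cut)

section \<open>Proof layer with an explicit over-approximation of the free variables\<close>

definition pfs :: "nat set \<Rightarrow> fm list \<Rightarrow> fm \<Rightarrow> bool" where
  "pfs S hs g \<longleftrightarrow> (fvl hs \<subseteq> S \<longrightarrow> pf hs g)"

lemma pfs_start: "fvl hs = {} \<Longrightarrow> pfs {} hs g \<Longrightarrow> pf hs g"
  unfolding pfs_def by simp

lemma fv_lhs: "fv (lhs p) \<subseteq> fv p" by (cases p) auto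
lemma fv_rhs: "fv (rhs p) \<subseteq> fv p" by (cases p) auto
lemma fv_nth: "i < length hs \<Longrightarrow> fv (hs ! i) \<subseteq> fvl hs" unfolding fvl_def using nth_mem by blast

lemma fv_ren_id: "fv (ren f id p) \<subseteq> fv p"
  using fv_ren_sub[of f id p] by simp

lemma fv_subst_in: "fv (subst p x y) \<subseteq> (fv p - {x}) \<union> {y}" by (rule fv_subst_sub)

lemma hyp_s: "p \<in> set hs \<Longrightarrow> pfs S hs p"
  unfolding pfs_def by (simp add: pf_hyp)

lemma cut_s: "pfs S hs a \<Longrightarrow> pfs (fv a \<union> S) (hs @ [a]) g \<Longrightarrow> pfs S hs g"
  unfolding pfs_def by (auto intro: pf_cut)

lemma imp_Rs: "pfs (fv a \<union> S) (hs @ [a]) b \<Longrightarrow> pfs S hs (Imp a b)"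
  unfolding pfs_def by (auto intro: imp_R)

lemma all_Rs: "x \<notin> S \<Longrightarrow> pfs S hs p \<Longrightarrow> pfs S hs (All x p)"
  unfolding pfs_def by (auto intro: all_R)

lemma conj_Rs: "pfs S hs a \<Longrightarrow> pfs S hs b \<Longrightarrow> pfs S hs (Conj a b)"
  unfolding pfs_def by (auto intro: conj_R)

lemma disj_R1s: "pfs S hs a \<Longrightarrow> pfs S hs (Disj a b)"
  unfolding pfs_def by (auto intro: disj_R1)

lemma disj_R2s: "pfs S hs b \<Longrightarrow> pfs S hs (Disj a b)"
  unfolding pfs_def by (auto intro: disj_R2)

lemma ex_Rs: "free_for y x p \<Longrightarrow> pfs S hs (subst p x y) \<Longrightarrow> pfs S hs (Ex x p)"
  unfolding pfs_def by (auto intro: ex_R)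

lemma refl_Rs: "pfs S hs (Eq x x)"
  unfolding pfs_def by (auto intro: refl_R)

lemma bot_Ls: "Bot \<in> set hs \<Longrightarrow> pfs S hs g"
  unfolding pfs_def by (auto intro: bot_L)

lemma conj_Ls: "i < length hs \<Longrightarrow> isC (hs ! i) \<Longrightarrow> pfs S (hs @ [lhs (hs ! i), rhs (hs ! i)]) g \<Longrightarrow> pfs S hs g"
proof -
  assume a: "i < length hs" "isC (hs ! i)" "pfs S (hs @ [lhs (hs ! i), rhs (hs ! i)]) g"
  show ?thesis unfolding pfs_def
  proof
    assume s: "fvl hs \<subseteq> S"
    have "fvl (hs @ [lhs (hs ! i), rhs (hs ! i)]) \<subseteq> S"
      using s fv_nth[OF a(1)] fv_lhs[of "hs ! i"] fv_rhs[of "hs ! i"] by auto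
    then show "pf hs g" by (rule conj_L[OF a(1) a(2) a(3)[unfolded pfs_def, rule_format]])
  qed
qed

lemma disj_Ls: "i < length hs \<Longrightarrow> isD (hs ! i) \<Longrightarrow> pfs S (hs @ [lhs (hs ! i)]) g \<Longrightarrow> pfs S (hs @ [rhs (hs ! i)]) g \<Longrightarrow> pfs S hs g"
proof -
  assume a: "i < length hs" "isD (hs ! i)" "pfs S (hs @ [lhs (hs ! i)]) g" "pfs S (hs @ [rhs (hs ! i)]) g"
  show ?thesis unfolding pfs_def
  proof
    assume s: "fvl hs \<subseteq> S"
    have "fvl (hs @ [lhs (hs ! i)]) \<subseteq> S" "fvl (hs @ [rhs (hs ! i)]) \<subseteq> S"
      using s fv_nth[OF a(1)] fv_lhs[of "hs ! i"] fv_rhs[of "hs ! i"] by auto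
    then show "pf hs g" by (intro disj_L[OF a(1) a(2) a(3)[unfolded pfs_def, rule_format] a(4)[unfolded pfs_def, rule_format]])
  qed
qed

lemma imp_Ls: "i < length hs \<Longrightarrow> isI (hs ! i) \<Longrightarrow> pfs S hs (lhs (hs ! i)) \<Longrightarrow> pfs S (hs @ [rhs (hs ! i)]) g \<Longrightarrow> pfs S hs g"
proof -
  assume a: "i < length hs" "isI (hs ! i)" "pfs S hs (lhs (hs ! i))" "pfs S (hs @ [rhs (hs ! i)]) g"
  show ?thesis unfolding pfs_def
  proof
    assume s: "fvl hs \<subseteq> S"
    have "fvl (hs @ [rhs (hs ! i)]) \<subseteq> S"
      using s fv_nth[OF a(1)] fv_rhs[of "hs ! i"] by auto
    then show "pf hs g" by (rule imp_L[OF a(1) a(2) a(3)[unfolded pfs_def, rule_format, OF s] a(4)[unfolded pfs_def, rule_format]])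
  qed
qed

lemma all_Ls: "i < length hs \<Longrightarrow> isA (hs ! i) \<Longrightarrow> free_for y (qv (hs ! i)) (qb (hs ! i))
   \<Longrightarrow> pfs (insert y S) (hs @ [subst (qb (hs ! i)) (qv (hs ! i)) y]) g \<Longrightarrow> pfs S hs g"
proof -
  assume a: "i < length hs" "isA (hs ! i)" "free_for y (qv (hs ! i)) (qb (hs ! i))"
    "pfs (insert y S) (hs @ [subst (qb (hs ! i)) (qv (hs ! i)) y]) g"
  show ?thesis unfolding pfs_def
  proof
    assume s: "fvl hs \<subseteq> S"
    have "fv (All (qv (hs ! i)) (qb (hs ! i))) \<subseteq> S" using s fv_nth[OF a(1)] isA_eq[OF a(2)] by simp
    then have "fv (qb (hs ! i)) - {qv (hs ! i)} \<subseteq> S" by simp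
    then have "fvl (hs @ [subst (qb (hs ! i)) (qv (hs ! i)) y]) \<subseteq> insert y S"
      using s fv_subst_sub[of "qb (hs ! i)" "qv (hs ! i)" y] by auto
    then show "pf hs g" by (rule all_L[OF a(1) a(2) a(3) a(4)[unfolded pfs_def, rule_format]])
  qed
qed

lemma ex_Ls: "i < length hs \<Longrightarrow> isE (hs ! i) \<Longrightarrow> qv (hs ! i) \<notin> S \<Longrightarrow> w \<notin> S \<Longrightarrow> w \<notin> fv g
  \<Longrightarrow> w \<notin> fv (qb (hs ! i)) - {qv (hs ! i)} \<Longrightarrow> w \<notin> bnd (qb (hs ! i))
  \<Longrightarrow> pfs (insert w S) (hs @ [subst (qb (hs ! i)) (qv (hs ! i)) w]) g \<Longrightarrow> pfs S hs g"
proof -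
  assume a: "i < length hs" "isE (hs ! i)" "qv (hs ! i) \<notin> S" "w \<notin> S" "w \<notin> fv g"
    "w \<notin> fv (qb (hs ! i)) - {qv (hs ! i)}" "w \<notin> bnd (qb (hs ! i))"
    "pfs (insert w S) (hs @ [subst (qb (hs ! i)) (qv (hs ! i)) w]) g"
  show ?thesis unfolding pfs_def
  proof
    assume s: "fvl hs \<subseteq> S"
    have "fv (Ex (qv (hs ! i)) (qb (hs ! i))) \<subseteq> S" using s fv_nth[OF a(1)] isE_eq[OF a(2)] by simp
    then have "fv (qb (hs ! i)) - {qv (hs ! i)} \<subseteq> S" by simp
    then have "fvl (hs @ [subst (qb (hs ! i)) (qv (hs ! i)) w]) \<subseteq> insert w S"
      using s fv_subst_sub[of "qb (hs ! i)" "qv (hs ! i)" w] by auto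
    moreover have "qv (hs ! i) \<notin> fvl hs" "w \<notin> fvl hs" using s a(3,4) by auto
    ultimately show "pf hs g" using ex_L[of i hs w g] a(1,2,5,6,7) a(8)[unfolded pfs_def] by blast
  qed
qed

lemma eq_Ls: "i < length hs \<Longrightarrow> j < length hs \<Longrightarrow> isEq (hs ! j) \<Longrightarrow> free_for (er (hs ! j)) (el (hs ! j)) (hs ! i)
  \<Longrightarrow> pfs S (hs @ [subst (hs ! i) (el (hs ! j)) (er (hs ! j))]) g \<Longrightarrow> pfs S hs g"
proof -
  assume a: "i < length hs" "j < length hs" "isEq (hs ! j)" "free_for (er (hs ! j)) (el (hs ! j)) (hs ! i)"
    "pfs S (hs @ [subst (hs ! i) (el (hs ! j)) (er (hs ! j))]) g"
  show ?thesis unfolding pfs_def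
  proof
    assume s: "fvl hs \<subseteq> S"
    have "fv (Eq (el (hs ! j)) (er (hs ! j))) \<subseteq> S" using s fv_nth[OF a(2)] isEq_eq[OF a(3)] by simp
    then have "er (hs ! j) \<in> S" by simp
    then have "fvl (hs @ [subst (hs ! i) (el (hs ! j)) (er (hs ! j))]) \<subseteq> S"
      using s fv_nth[OF a(1)] fv_subst_sub[of "hs ! i" "el (hs ! j)" "er (hs ! j)"] by auto
    then show "pf hs g" by (rule eq_L[OF a(1) a(2) a(3) a(4) a(5)[unfolded pfs_def, rule_format]])
  qed
qed

lemma eq_sym_Ls: "i < length hs \<Longrightarrow> isEq (hs ! i) \<Longrightarrow> pfs S (hs @ [Eq (er (hs ! i)) (el (hs ! i))]) g \<Longrightarrow> pfs S hs g"
proof -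
  assume a: "i < length hs" "isEq (hs ! i)" "pfs S (hs @ [Eq (er (hs ! i)) (el (hs ! i))]) g"
  show ?thesis unfolding pfs_def
  proof
    assume s: "fvl hs \<subseteq> S"
    have "fv (Eq (el (hs ! i)) (er (hs ! i))) \<subseteq> S" using s fv_nth[OF a(1)] isEq_eq[OF a(2)] by simp
    then have "fv (Eq (er (hs ! i)) (el (hs ! i))) \<subseteq> S" by auto
    then have "fvl (hs @ [Eq (er (hs ! i)) (el (hs ! i))]) \<subseteq> S" using s by simp
    then show "pf hs g" by (rule eq_sym_L[OF a(1) a(2) a(3)[unfolded pfs_def, rule_format]])
  qed
qed

lemma hyp_as: "j < length hs \<Longrightarrow> g = ren (amap (amatch (hs ! j) g)) id (hs ! j) \<Longrightarrow> clean (hs ! j)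
  \<Longrightarrow> inj_on (amap (amatch (hs ! j) g)) (bnd (hs ! j))
  \<Longrightarrow> (bnd (hs ! j) \<union> amap (amatch (hs ! j) g) ` bnd (hs ! j)) \<inter> (S \<union> fv (hs ! j)) = {}
  \<Longrightarrow> pfs S hs g"
proof -
  assume a: "j < length hs" "g = ren (amap (amatch (hs ! j) g)) id (hs ! j)" "clean (hs ! j)"
    "inj_on (amap (amatch (hs ! j) g)) (bnd (hs ! j))"
    "(bnd (hs ! j) \<union> amap (amatch (hs ! j) g) ` bnd (hs ! j)) \<inter> (S \<union> fv (hs ! j)) = {}"
  show ?thesis unfolding pfs_def
  proof
    assume s: "fvl hs \<subseteq> S"
    have "(bnd (hs ! j) \<union> amap (amatch (hs ! j) g) ` bnd (hs ! j)) \<inter> (fvl hs \<union> fv (hs ! j)) = {}"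
      using a(5) s by blast
    then show "pf hs g" by (rule hyp_a[OF a(1) a(2) a(3) a(4)])
  qed
qed

lemma imp_Las: "i < length hs \<Longrightarrow> j < length hs \<Longrightarrow> isI (hs ! i)
  \<Longrightarrow> lhs (hs ! i) = ren (amap (amatch (hs ! j) (lhs (hs ! i)))) id (hs ! j) \<Longrightarrow> clean (hs ! j)
  \<Longrightarrow> inj_on (amap (amatch (hs ! j) (lhs (hs ! i)))) (bnd (hs ! j))
  \<Longrightarrow> (bnd (hs ! j) \<union> amap (amatch (hs ! j) (lhs (hs ! i))) ` bnd (hs ! j)) \<inter> (S \<union> fv (hs ! j)) = {}
  \<Longrightarrow> pfs S (hs @ [rhs (hs ! i)]) g \<Longrightarrow> pfs S hs g"
proof -
  assume a: "i < length hs" "j < length hs" "isI (hs ! i)"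
    "lhs (hs ! i) = ren (amap (amatch (hs ! j) (lhs (hs ! i)))) id (hs ! j)" "clean (hs ! j)"
    "inj_on (amap (amatch (hs ! j) (lhs (hs ! i)))) (bnd (hs ! j))"
    "(bnd (hs ! j) \<union> amap (amatch (hs ! j) (lhs (hs ! i))) ` bnd (hs ! j)) \<inter> (S \<union> fv (hs ! j)) = {}"
    "pfs S (hs @ [rhs (hs ! i)]) g"
  show ?thesis unfolding pfs_def
  proof
    assume s: "fvl hs \<subseteq> S"
    have "fvl (hs @ [rhs (hs ! i)]) \<subseteq> S"
      using s fv_nth[OF a(1)] fv_rhs[of "hs ! i"] by auto
    moreover have "(bnd (hs ! j) \<union> amap (amatch (hs ! j) (lhs (hs ! i))) ` bnd (hs ! j)) \<inter> (fvl hs \<union> fv (hs ! j)) = {}"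
      using a(7) s by blast
    ultimately show "pf hs g" by (intro imp_La[OF a(1) a(2) a(3) a(4) a(5) a(6)] a(8)[unfolded pfs_def, rule_format])
  qed
qed

lemma alpha_Las: "j < length hs \<Longrightarrow> q = ren (amap (amatch (hs ! j) q)) id (hs ! j) \<Longrightarrow> clean (hs ! j)
  \<Longrightarrow> inj_on (amap (amatch (hs ! j) q)) (bnd (hs ! j))
  \<Longrightarrow> (bnd (hs ! j) \<union> amap (amatch (hs ! j) q) ` bnd (hs ! j)) \<inter> (S \<union> fv (hs ! j)) = {}
  \<Longrightarrow> pfs S (hs @ [q]) g \<Longrightarrow> pfs S hs g"
proof -
  assume a: "j < length hs" "q = ren (amap (amatch (hs ! j) q)) id (hs ! j)" "clean (hs ! j)"
    "inj_on (amap (amatch (hs ! j) q)) (bnd (hs ! j))"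
    "(bnd (hs ! j) \<union> amap (amatch (hs ! j) q) ` bnd (hs ! j)) \<inter> (S \<union> fv (hs ! j)) = {}"
    "pfs S (hs @ [q]) g"
  show ?thesis unfolding pfs_def
  proof
    assume s: "fvl hs \<subseteq> S"
    have "fv q \<subseteq> fv (hs ! j)" using a(2) fv_ren_id by metis
    then have "fvl (hs @ [q]) \<subseteq> S" using s fv_nth[OF a(1)] by auto
    moreover have "(bnd (hs ! j) \<union> amap (amatch (hs ! j) q) ` bnd (hs ! j)) \<inter> (fvl hs \<union> fv (hs ! j)) = {}"
      using a(5) s by blast
    ultimately show "pf hs g" by (intro alpha_La[OF a(1) a(2) a(3) a(4)] a(6)[unfolded pfs_def, rule_format])
  qed
qed

lemma ext_Rs:
  assumes "ExtR \<in> set hs" "a \<notin> {9002, 9003}" "b \<noteq> 9003" "9003 \<notin> S" "z \<notin> S" "z \<notin> {a, b}"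
    "pfs ({z, a, b} \<union> S) (hs @ [Mem z a]) (Mem z b)" "pfs ({z, a, b} \<union> S) (hs @ [Mem z b]) (Mem z a)"
  shows "pfs S hs (Eq a b)"
  unfolding pfs_def
proof
  assume s: "fvl hs \<subseteq> S"
  show "pf hs (Eq a b)"
  proof (rule ext_R[where z = z])
    show "pf (hs @ [Mem z a]) (Mem z b)" using assms(7) s assms(6) unfolding pfs_def by auto
    show "pf (hs @ [Mem z b]) (Mem z a)" using assms(8) s assms(6) unfolding pfs_def by auto
  qed (use assms s in auto)
qed

lemma sep_obtains:
  assumes "delta0 p" "distinct [a, b, x]" "b \<notin> fv p" "b \<notin> bnd p" "b \<notin> S" "b \<notin> fv g"
    "pfs (fv (All x (Iff (Mem x b) (Conj (Mem x a) p))) \<union> S) (hs @ [All x (Iff (Mem x b) (Conj (Mem x a) p))]) g"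
  shows "pfs S hs g"
  unfolding pfs_def
proof
  assume s: "fvl hs \<subseteq> S"
  show "pf hs g"
  proof (rule sep_obtain[where a = a and b = b and x = x and p = p])
    show "pf (hs @ [All x (Iff (Mem x b) (Conj (Mem x a) p))]) g"
      by (rule assms(7)[unfolded pfs_def, rule_format]) (use s in auto)
  qed (use assms s in auto)
qed

lemma coll_obtains:
  assumes "delta0 p" "distinct [a, b, x, y]" "b \<notin> fv p" "b \<notin> bnd p" "b \<notin> S" "b \<notin> fv g"
    "pfs S hs (BAll x a (Ex y p))"
    "pfs (fv (BAll x a (BEx y b p)) \<union> S) (hs @ [BAll x a (BEx y b p)]) g"
  shows "pfs S hs g"
  unfolding pfs_def
proof
  assume s: "fvl hs \<subseteq> S"
  show "pf hs g"
  proof (rule coll_obtain[where a = a and b = b and x = x and y = y and p = p])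
    show "pf hs (BAll x a (Ex y p))" by (rule assms(7)[unfolded pfs_def, rule_format, OF s])
    show "pf (hs @ [BAll x a (BEx y b p)]) g"
      by (rule assms(8)[unfolded pfs_def, rule_format]) (use s in auto)
  qed (use assms s in auto)
qed

lemma pair_obtains:
  assumes "PairR \<in> set hs" "a \<notin> {9012, 9013}" "b \<noteq> 9013" "9013 \<notin> S" "w \<notin> S" "w \<notin> fv g"
    "w \<notin> {a, b}"
    "pfs ({a, b, w} \<union> S) (hs @ [Conj (Mem a w) (Mem b w)]) g"
  shows "pfs S hs g"
  unfolding pfs_def
proof
  assume s: "fvl hs \<subseteq> S"
  show "pf hs g"
  proof (rule pair_obtain[where a = a and b = b and w = w])
    show "pf (hs @ [Conj (Mem a w) (Mem b w)]) g"
      by (rule assms(8)[unfolded pfs_def, rule_format]) (use s in auto)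
  qed (use assms s in auto)
qed

lemma union_obtains:
  assumes "UnionR \<in> set hs" "a \<notin> {9022, 9023, 9024}" "9022 \<notin> S" "w \<notin> S" "w \<notin> fv g"
    "w \<notin> {a, 9023, 9024}"
    "pfs ({a, w} \<union> S) (hs @ [BAll 9023 a (BAll 9024 9023 (Mem 9024 w))]) g"
  shows "pfs S hs g"
  unfolding pfs_def
proof
  assume s: "fvl hs \<subseteq> S"
  show "pf hs g"
  proof (rule union_obtain[where a = a and w = w])
    show "pf (hs @ [BAll 9023 a (BAll 9024 9023 (Mem 9024 w))]) g"
      by (rule assms(7)[unfolded pfs_def, rule_format]) (use s in \<open>auto simp: BAll_def\<close>)
  qed (use assms s in auto)
qed

lemma setind_Ls: "a \<noteq> x \<Longrightarrow> x \<notin> fv p \<Longrightarrow> free_for x a p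
  \<Longrightarrow> pfs ((fv p - {a}) \<union> S) (hs @ [Imp (All a (Imp (BAll x a (subst p a x)) p)) (All a p)]) g \<Longrightarrow> pfs S hs g"
proof -
  assume a: "a \<noteq> x" "x \<notin> fv p" "free_for x a p"
    "pfs ((fv p - {a}) \<union> S) (hs @ [Imp (All a (Imp (BAll x a (subst p a x)) p)) (All a p)]) g"
  show ?thesis unfolding pfs_def
  proof
    assume s: "fvl hs \<subseteq> S"
    have "fv (subst p a x) \<subseteq> (fv p - {a}) \<union> {x}" by (rule fv_subst_sub)
    then have "fv (Imp (All a (Imp (BAll x a (subst p a x)) p)) (All a p)) \<subseteq> fv p - {a}"
      using a(1,2) by (auto simp: BAll_def)
    then have "fvl (hs @ [Imp (All a (Imp (BAll x a (subst p a x)) p)) (All a p)]) \<subseteq> (fv p - {a}) \<union> S"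
      using s by auto
    then show "pf hs g" by (rule setind_L[OF a(1) a(2) a(3) a(4)[unfolded pfs_def, rule_format]])
  qed
qed

lemma fvl_set: "set hs = set ks \<Longrightarrow> fvl hs = fvl ks"
  by (simp add: fvl_def)

lemma pfs_set: "set hs = set ks \<Longrightarrow> pfs S hs g = pfs S ks g"
  unfolding pfs_def pf_def using fvl_set by metis

lemma pfs_rev1: "pfs S (a # hs) g = pfs S (hs @ [a]) g"
  by (rule pfs_set) auto

lemma pfs_rev2: "pfs S (a # b # hs) g = pfs S (hs @ [a, b]) g"
  by (rule pfs_set) auto

lemma cut_r: "pfs S hs a \<Longrightarrow> pfs (fv a \<union> S) (a # hs) g \<Longrightarrow> pfs S hs g"
  using cut_s pfs_rev1 by metis

lemma imp_Rr: "pfs (fv a \<union> S) (a # hs) b \<Longrightarrow> pfs S hs (Imp a b)"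
  using imp_Rs pfs_rev1 by metis

lemma conj_Lr: "i < length hs \<Longrightarrow> isC (hs ! i) \<Longrightarrow> pfs S (lhs (hs ! i) # rhs (hs ! i) # hs) g \<Longrightarrow> pfs S hs g"
  using conj_Ls pfs_rev2 by metis

lemma disj_Lr: "i < length hs \<Longrightarrow> isD (hs ! i) \<Longrightarrow> pfs S (lhs (hs ! i) # hs) g \<Longrightarrow> pfs S (rhs (hs ! i) # hs) g \<Longrightarrow> pfs S hs g"
  using disj_Ls pfs_rev1 by metis

lemma imp_Lr: "i < length hs \<Longrightarrow> isI (hs ! i) \<Longrightarrow> pfs S hs (lhs (hs ! i)) \<Longrightarrow> pfs S (rhs (hs ! i) # hs) g \<Longrightarrow> pfs S hs g"
  using imp_Ls pfs_rev1 by metis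

lemma all_Lr: "i < length hs \<Longrightarrow> isA (hs ! i) \<Longrightarrow> free_for y (qv (hs ! i)) (qb (hs ! i))
   \<Longrightarrow> pfs (insert y S) (subst (qb (hs ! i)) (qv (hs ! i)) y # hs) g \<Longrightarrow> pfs S hs g"
  using all_Ls pfs_rev1 by metis

lemma ex_Lr: "i < length hs \<Longrightarrow> isE (hs ! i) \<Longrightarrow> qv (hs ! i) \<notin> S \<Longrightarrow> w \<notin> S \<Longrightarrow> w \<notin> fv g
  \<Longrightarrow> w \<notin> fv (qb (hs ! i)) - {qv (hs ! i)} \<Longrightarrow> w \<notin> bnd (qb (hs ! i))
  \<Longrightarrow> pfs (insert w S) (subst (qb (hs ! i)) (qv (hs ! i)) w # hs) g \<Longrightarrow> pfs S hs g"
proof -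
  assume a: "i < length hs" "isE (hs ! i)" "qv (hs ! i) \<notin> S" "w \<notin> S" "w \<notin> fv g"
    "w \<notin> fv (qb (hs ! i)) - {qv (hs ! i)}" "w \<notin> bnd (qb (hs ! i))"
    "pfs (insert w S) (subst (qb (hs ! i)) (qv (hs ! i)) w # hs) g"
  show ?thesis by (rule ex_Ls[OF a(1-7)]) (use a(8) pfs_rev1 in metis)
qed

lemma eq_Lr: "i < length hs \<Longrightarrow> j < length hs \<Longrightarrow> isEq (hs ! j) \<Longrightarrow> free_for (er (hs ! j)) (el (hs ! j)) (hs ! i)
  \<Longrightarrow> pfs S (subst (hs ! i) (el (hs ! j)) (er (hs ! j)) # hs) g \<Longrightarrow> pfs S hs g"
  using eq_Ls pfs_rev1 by metis

lemma eq_sym_Lr: "i < length hs \<Longrightarrow> isEq (hs ! i) \<Longrightarrow> pfs S (Eq (er (hs ! i)) (el (hs ! i)) # hs) g \<Longrightarrow> pfs S hs g"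
  using eq_sym_Ls pfs_rev1 by metis

lemma imp_Lar: "i < length hs \<Longrightarrow> j < length hs \<Longrightarrow> isI (hs ! i)
  \<Longrightarrow> lhs (hs ! i) = ren (amap (amatch (hs ! j) (lhs (hs ! i)))) id (hs ! j) \<Longrightarrow> clean (hs ! j)
  \<Longrightarrow> inj_on (amap (amatch (hs ! j) (lhs (hs ! i)))) (bnd (hs ! j))
  \<Longrightarrow> (bnd (hs ! j) \<union> amap (amatch (hs ! j) (lhs (hs ! i))) ` bnd (hs ! j)) \<inter> (S \<union> fv (hs ! j)) = {}
  \<Longrightarrow> pfs S (rhs (hs ! i) # hs) g \<Longrightarrow> pfs S hs g"
proof -
  assume a: "i < length hs" "j < length hs" "isI (hs ! i)"
    "lhs (hs ! i) = ren (amap (amatch (hs ! j) (lhs (hs ! i)))) id (hs ! j)" "clean (hs ! j)"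
    "inj_on (amap (amatch (hs ! j) (lhs (hs ! i)))) (bnd (hs ! j))"
    "(bnd (hs ! j) \<union> amap (amatch (hs ! j) (lhs (hs ! i))) ` bnd (hs ! j)) \<inter> (S \<union> fv (hs ! j)) = {}"
    "pfs S (rhs (hs ! i) # hs) g"
  show ?thesis by (rule imp_Las[OF a(1-7)]) (use a(8) pfs_rev1 in metis)
qed

lemma alpha_Lar: "j < length hs \<Longrightarrow> q = ren (amap (amatch (hs ! j) q)) id (hs ! j) \<Longrightarrow> clean (hs ! j)
  \<Longrightarrow> inj_on (amap (amatch (hs ! j) q)) (bnd (hs ! j))
  \<Longrightarrow> (bnd (hs ! j) \<union> amap (amatch (hs ! j) q) ` bnd (hs ! j)) \<inter> (S \<union> fv (hs ! j)) = {}
  \<Longrightarrow> pfs S (q # hs) g \<Longrightarrow> pfs S hs g"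
proof -
  assume a: "j < length hs" "q = ren (amap (amatch (hs ! j) q)) id (hs ! j)" "clean (hs ! j)"
    "inj_on (amap (amatch (hs ! j) q)) (bnd (hs ! j))"
    "(bnd (hs ! j) \<union> amap (amatch (hs ! j) q) ` bnd (hs ! j)) \<inter> (S \<union> fv (hs ! j)) = {}"
    "pfs S (q # hs) g"
  show ?thesis by (rule alpha_Las[OF a(1-5)]) (use a(6) pfs_rev1 in metis)
qed

lemma ext_Rr:
  assumes "ExtR \<in> set hs" "a \<notin> {9002, 9003}" "b \<noteq> 9003" "9003 \<notin> S" "z \<notin> S" "z \<notin> {a, b}"
    "pfs ({z, a, b} \<union> S) (Mem z a # hs) (Mem z b)" "pfs ({z, a, b} \<union> S) (Mem z b # hs) (Mem z a)"
  shows "pfs S hs (Eq a b)"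
  by (rule ext_Rs[OF assms(1-6)]) (use assms(7,8) pfs_rev1 in metis)+

lemma sep_obtainr:
  assumes "delta0 p" "distinct [a, b, x]" "b \<notin> fv p" "b \<notin> bnd p" "b \<notin> S" "b \<notin> fv g"
    "pfs (fv (All x (Iff (Mem x b) (Conj (Mem x a) p))) \<union> S) (All x (Iff (Mem x b) (Conj (Mem x a) p)) # hs) g"
  shows "pfs S hs g"
  by (rule sep_obtains[OF assms(1-6)]) (use assms(7) pfs_rev1 in metis)

lemma coll_obtainr:
  assumes "delta0 p" "distinct [a, b, x, y]" "b \<notin> fv p" "b \<notin> bnd p" "b \<notin> S" "b \<notin> fv g"
    "pfs S hs (BAll x a (Ex y p))"
    "pfs (fv (BAll x a (BEx y b p)) \<union> S) (BAll x a (BEx y b p) # hs) g"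
  shows "pfs S hs g"
  by (rule coll_obtains[OF assms(1-7)]) (use assms(8) pfs_rev1 in metis)

lemma pair_obtainr:
  assumes "PairR \<in> set hs" "a \<notin> {9012, 9013}" "b \<noteq> 9013" "9013 \<notin> S" "w \<notin> S" "w \<notin> fv g"
    "w \<notin> {a, b}"
    "pfs ({a, b, w} \<union> S) (Conj (Mem a w) (Mem b w) # hs) g"
  shows "pfs S hs g"
  by (rule pair_obtains[OF assms(1-7)]) (use assms(8) pfs_rev1 in metis)

lemma union_obtainr:
  assumes "UnionR \<in> set hs" "a \<notin> {9022, 9023, 9024}" "9022 \<notin> S" "w \<notin> S" "w \<notin> fv g"
    "w \<notin> {a, 9023, 9024}"
    "pfs ({a, w} \<union> S) (BAll 9023 a (BAll 9024 9023 (Mem 9024 w)) # hs) g"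
  shows "pfs S hs g"
  by (rule union_obtains[OF assms(1-6)]) (use assms(7) pfs_rev1 in metis)

lemma setind_Lr: "a \<noteq> x \<Longrightarrow> x \<notin> fv p \<Longrightarrow> free_for x a p
  \<Longrightarrow> pfs ((fv p - {a}) \<union> S) (Imp (All a (Imp (BAll x a (subst p a x)) p)) (All a p) # hs) g \<Longrightarrow> pfs S hs g"
  using setind_Ls pfs_rev1 by metis

lemmas U = Iff_def BAll_def BEx_def subset_fm_def is_sing_def is_upair_def is_pair_def is_fun_def
  is_trans_def is_ord_def relpl_def is_plord_def PlUb_def Exponentiation_def Powerset_def
  is_ind_def Let_def fr_def

definition Lsu :: fm where
  "Lsu = All 20001 (All 20002 (All 20003 (Imp (is_sing 20001 20003) (Imp (is_sing 20002 20003) (Eq 20001 20002)))))"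

lemma fv_Lsu[simp]: "fv Lsu = {}" by (simp add: Lsu_def U)
lemmas [simp] = Lsu_def[THEN arg_cong[where f=isA]]
lemmas [simp] = Lsu_def[THEN arg_cong[where f=qv]]
lemmas [simp] = Lsu_def[THEN arg_cong[where f=qb]]
lemmas [simp] = Lsu_def[THEN arg_cong[where f=isC]]
lemmas [simp] = Lsu_def[THEN arg_cong[where f=isI]]
lemmas [simp] = Lsu_def[THEN arg_cong[where f=lhs]]
lemmas [simp] = Lsu_def[THEN arg_cong[where f=rhs]]
lemmas [simp] = Lsu_def[THEN arg_cong[where f=isE]]

lemma L_su: "pf [ExtR, PairR, UnionR] Lsu"
  unfolding Lsu_def
  apply (rule pfs_start; (simp add: U)?)
  apply (rule all_Rs; (simp add: U)?)
  apply (rule all_Rs; (simp add: U)?)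
  apply (rule all_Rs; (simp add: U)?)
  apply (rule imp_Rs; (simp add: U)?)
  apply (rule imp_Rs; (simp add: U)?)
  apply (rule conj_Ls[where i=3]; (simp add: U)?)
  apply (rule conj_Ls[where i=4]; (simp add: U)?)
  apply (rule ext_Rs[where z=20010]; (simp add: U)?)
  apply (rule all_Ls[where i=5 and y=20010]; (simp add: U)?)
  apply (rule imp_Ls[where i=10]; (simp add: U)?)
  apply (rule hyp_s; (simp add: U)?)
  apply (rule eq_sym_Ls[where i=11]; (simp add: U)?)
  apply (rule eq_Ls[where i=8 and j=12]; (simp add: U)?)
  apply (rule hyp_s; (simp add: U)?)
  apply (rule all_Ls[where i=7 and y=20010]; (simp add: U)?)
  apply (rule imp_Ls[where i=10]; (simp add: U)?)
  apply (rule hyp_s; (simp add: U)?)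
  apply (rule eq_sym_Ls[where i=11]; (simp add: U)?)
  apply (rule eq_Ls[where i=6 and j=12]; (simp add: U)?)
  apply (rule hyp_s; (simp add: U)?)
  done
definition Luu :: fm where
  "Luu = All 20101 (All 20102 (All 20103 (All 20104 (Imp (is_upair 20101 20103 20104) (Imp (is_upair 20102 20103 20104) (Eq 20101 20102))))))"

lemma fv_Luu[simp]: "fv Luu = {}" by (simp add: Luu_def U)
lemmas [simp] = Luu_def[THEN arg_cong[where f=isA]]
lemmas [simp] = Luu_def[THEN arg_cong[where f=qv]]
lemmas [simp] = Luu_def[THEN arg_cong[where f=qb]]
lemmas [simp] = Luu_def[THEN arg_cong[where f=isC]]
lemmas [simp] = Luu_def[THEN arg_cong[where f=isI]]
lemmas [simp] = Luu_def[THEN arg_cong[where f=lhs]]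
lemmas [simp] = Luu_def[THEN arg_cong[where f=rhs]]
lemmas [simp] = Luu_def[THEN arg_cong[where f=isE]]

lemma L_uu: "pf [ExtR, PairR, UnionR] Luu"
  unfolding Luu_def
  apply (rule pfs_start; (simp add: U)?)
  apply (rule all_Rs; (simp add: U)?)
  apply (rule all_Rs; (simp add: U)?)
  apply (rule all_Rs; (simp add: U)?)
  apply (rule all_Rs; (simp add: U)?)
  apply (rule imp_Rs; (simp add: U)?)
  apply (rule imp_Rs; (simp add: U)?)
  apply (rule conj_Ls[where i=3]; (simp add: U)?)
  apply (rule conj_Ls[where i=6]; (simp add: U)?)
  apply (rule conj_Ls[where i=4]; (simp add: U)?)
  apply (rule conj_Ls[where i=10]; (simp add: U)?)
  apply (rule ext_Rs[where z=20110]; (simp add: U)?)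
  apply (rule all_Ls[where i=5 and y=20110]; (simp add: U)?)
  apply (rule imp_Ls[where i=14]; (simp add: U)?)
  apply (rule hyp_s; (simp add: U)?)
  apply (rule disj_Ls[where i=15]; (simp add: U)?)
  apply (rule eq_sym_Ls[where i=16]; (simp add: U)?)
  apply (rule eq_Ls[where i=11 and j=17]; (simp add: U)?)
  apply (rule hyp_s; (simp add: U)?)
  apply (rule eq_sym_Ls[where i=16]; (simp add: U)?)
  apply (rule eq_Ls[where i=12 and j=17]; (simp add: U)?)
  apply (rule hyp_s; (simp add: U)?)
  apply (rule all_Ls[where i=9 and y=20110]; (simp add: U)?)
  apply (rule imp_Ls[where i=14]; (simp add: U)?)
  apply (rule hyp_s; (simp add: U)?)
  apply (rule disj_Ls[where i=15]; (simp add: U)?)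
  apply (rule eq_sym_Ls[where i=16]; (simp add: U)?)
  apply (rule eq_Ls[where i=7 and j=17]; (simp add: U)?)
  apply (rule hyp_s; (simp add: U)?)
  apply (rule eq_sym_Ls[where i=16]; (simp add: U)?)
  apply (rule eq_Ls[where i=8 and j=17]; (simp add: U)?)
  apply (rule hyp_s; (simp add: U)?)
  done
definition Lpu :: fm where
  "Lpu = All 20201 (All 20202 (All 20203 (All 20204 (Imp (is_pair 20201 20203 20204) (Imp (is_pair 20202 20203 20204) (Eq 20201 20202))))))"

lemma fv_Lpu[simp]: "fv Lpu = {}" by (simp add: Lpu_def U)
lemmas [simp] = Lpu_def[THEN arg_cong[where f=isA]]
lemmas [simp] = Lpu_def[THEN arg_cong[where f=qv]]
lemmas [simp] = Lpu_def[THEN arg_cong[where f=qb]]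
lemmas [simp] = Lpu_def[THEN arg_cong[where f=isC]]
lemmas [simp] = Lpu_def[THEN arg_cong[where f=isI]]
lemmas [simp] = Lpu_def[THEN arg_cong[where f=lhs]]
lemmas [simp] = Lpu_def[THEN arg_cong[where f=rhs]]
lemmas [simp] = Lpu_def[THEN arg_cong[where f=isE]]

lemma L_pu: "pf [ExtR, PairR, UnionR, Lsu, Luu] Lpu"
  unfolding Lpu_def
  apply (rule pfs_start; (simp add: U)?)
  apply (rule all_Rs; (simp add: U)?)
  apply (rule all_Rs; (simp add: U)?)
  apply (rule all_Rs; (simp add: U)?)
  apply (rule all_Rs; (simp add: U)?)
  apply (rule imp_Rs; (simp add: U)?)
  apply (rule imp_Rs; (simp add: U)?)
  apply (rule conj_Ls[where i=5]; (simp add: U)?)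
  apply (rule conj_Ls[where i=8]; (simp add: U)?)
  apply (rule conj_Ls[where i=6]; (simp add: U)?)
  apply (rule conj_Ls[where i=12]; (simp add: U)?)
  apply (rule ext_Rs[where z=20210]; (simp add: U)?)
  apply (rule all_Ls[where i=7 and y=20210]; (simp add: U)?)
  apply (rule imp_Ls[where i=16]; (simp add: U)?)
  apply (rule hyp_s; (simp add: U)?)
  apply (rule disj_Ls[where i=17]; (simp add: U)?)
  apply (rule ex_Ls[where i=13 and w=20211]; (simp add: U)?)
  apply (rule conj_Ls[where i=19]; (simp add: U)?)
  apply (rule all_Ls[where i=3 and y=20210]; (simp add: U)?)
  apply (rule all_Ls[where i=22 and y=20211]; (simp add: U)?)
  apply (rule all_Ls[where i=23 and y=20203]; (simp add: U)?)
  apply (rule imp_Las[where i=24 and j=18]; (simp add: U)?)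
  apply (rule imp_Las[where i=25 and j=21]; (simp add: U)?)
  apply (rule eq_sym_Ls[where i=26]; (simp add: U)?)
  apply (rule eq_Ls[where i=20 and j=27]; (simp add: U)?)
  apply (rule hyp_s; (simp add: U)?)
  apply (rule ex_Ls[where i=14 and w=20211]; (simp add: U)?)
  apply (rule conj_Ls[where i=19]; (simp add: U)?)
  apply (rule all_Ls[where i=4 and y=20210]; (simp add: U)?)
  apply (rule all_Ls[where i=22 and y=20211]; (simp add: U)?)
  apply (rule all_Ls[where i=23 and y=20203]; (simp add: U)?)
  apply (rule all_Ls[where i=24 and y=20204]; (simp add: U)?)
  apply (rule imp_Las[where i=25 and j=18]; (simp add: U)?)
  apply (rule imp_Las[where i=26 and j=21]; (simp add: U)?)
  apply (rule eq_sym_Ls[where i=27]; (simp add: U)?)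
  apply (rule eq_Ls[where i=20 and j=28]; (simp add: U)?)
  apply (rule hyp_s; (simp add: U)?)
  apply (rule all_Ls[where i=11 and y=20210]; (simp add: U)?)
  apply (rule imp_Ls[where i=16]; (simp add: U)?)
  apply (rule hyp_s; (simp add: U)?)
  apply (rule disj_Ls[where i=17]; (simp add: U)?)
  apply (rule ex_Ls[where i=9 and w=20211]; (simp add: U)?)
  apply (rule conj_Ls[where i=19]; (simp add: U)?)
  apply (rule all_Ls[where i=3 and y=20210]; (simp add: U)?)
  apply (rule all_Ls[where i=22 and y=20211]; (simp add: U)?)
  apply (rule all_Ls[where i=23 and y=20203]; (simp add: U)?)
  apply (rule imp_Las[where i=24 and j=18]; (simp add: U)?)
  apply (rule imp_Las[where i=25 and j=21]; (simp add: U)?)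
  apply (rule eq_sym_Ls[where i=26]; (simp add: U)?)
  apply (rule eq_Ls[where i=20 and j=27]; (simp add: U)?)
  apply (rule hyp_s; (simp add: U)?)
  apply (rule ex_Ls[where i=10 and w=20211]; (simp add: U)?)
  apply (rule conj_Ls[where i=19]; (simp add: U)?)
  apply (rule all_Ls[where i=4 and y=20210]; (simp add: U)?)
  apply (rule all_Ls[where i=22 and y=20211]; (simp add: U)?)
  apply (rule all_Ls[where i=23 and y=20203]; (simp add: U)?)
  apply (rule all_Ls[where i=24 and y=20204]; (simp add: U)?)
  apply (rule imp_Las[where i=25 and j=18]; (simp add: U)?)
  apply (rule imp_Las[where i=26 and j=21]; (simp add: U)?)
  apply (rule eq_sym_Ls[where i=27]; (simp add: U)?)
  apply (rule eq_Ls[where i=20 and j=28]; (simp add: U)?)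
  apply (rule hyp_s; (simp add: U)?)
  done

definition Lpi :: fm where
  "Lpi = All 20305 (All 20301 (All 20302 (All 20303 (All 20304 (Imp (is_pair 20305 20301 20302) (Imp (is_pair 20305 20303 20304) (Conj (Eq 20301 20303) (Eq 20302 20304))))))))"

lemma fv_Lpi[simp]: "fv Lpi = {}" by (simp add: Lpi_def U)
lemmas [simp] = Lpi_def[THEN arg_cong[where f=isA]]
lemmas [simp] = Lpi_def[THEN arg_cong[where f=qv]]
lemmas [simp] = Lpi_def[THEN arg_cong[where f=qb]]
lemmas [simp] = Lpi_def[THEN arg_cong[where f=isC]]
lemmas [simp] = Lpi_def[THEN arg_cong[where f=isI]]
lemmas [simp] = Lpi_def[THEN arg_cong[where f=lhs]]
lemmas [simp] = Lpi_def[THEN arg_cong[where f=rhs]]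
lemmas [simp] = Lpi_def[THEN arg_cong[where f=isE]]

lemma L_pi: "pf [ExtR, PairR, UnionR] Lpi"
  unfolding Lpi_def
  apply (rule pfs_start; (simp add: U)?)
  apply (rule all_Rs; (simp add: U)?)
  apply (rule all_Rs; (simp add: U)?)
  apply (rule all_Rs; (simp add: U)?)
  apply (rule all_Rs; (simp add: U)?)
  apply (rule all_Rs; (simp add: U)?)
  apply (rule imp_Rs; (simp add: U)?)
  apply (rule imp_Rs; (simp add: U)?)
  apply (rule conj_Ls[where i=3]; (simp add: U)?)
  apply (rule conj_Ls[where i=6]; (simp add: U)?)
  apply (rule conj_Ls[where i=4]; (simp add: U)?)
  apply (rule conj_Ls[where i=10]; (simp add: U)?)
  apply (rule ex_Ls[where i=7 and w=20310]; (simp add: U)?)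
  apply (rule conj_Ls[where i=13]; (simp add: U)?)
  apply (rule conj_Ls[where i=15]; (simp add: U)?)
  apply (rule ex_Ls[where i=8 and w=20320]; (simp add: U)?)
  apply (rule conj_Ls[where i=18]; (simp add: U)?)
  apply (rule conj_Ls[where i=20]; (simp add: U)?)
  apply (rule conj_Ls[where i=22]; (simp add: U)?)
  apply (rule ex_Ls[where i=11 and w=20330]; (simp add: U)?)
  apply (rule conj_Ls[where i=25]; (simp add: U)?)
  apply (rule conj_Ls[where i=27]; (simp add: U)?)
  apply (rule ex_Ls[where i=12 and w=20340]; (simp add: U)?)
  apply (rule conj_Ls[where i=30]; (simp add: U)?)
  apply (rule conj_Ls[where i=32]; (simp add: U)?)
  apply (rule conj_Ls[where i=34]; (simp add: U)?)
  apply (rule cut_s[where a="Eq 20301 20303"]; (simp add: U)?)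
  apply (rule all_Ls[where i=9 and y=20310]; (simp add: U)?)
  apply (rule imp_Ls[where i=37]; (simp add: U)?)
  apply (rule hyp_s; (simp add: U)?)
  apply (rule disj_Ls[where i=38]; (simp add: U)?)
  apply (rule conj_Ls[where i=39]; (simp add: U)?)
  apply (rule all_Ls[where i=40 and y=20301]; (simp add: U)?)
  apply (rule imp_Ls[where i=42]; (simp add: U)?)
  apply (rule hyp_s; (simp add: U)?)
  apply (rule hyp_s; (simp add: U)?)
  apply (rule conj_Ls[where i=39]; (simp add: U)?)
  apply (rule conj_Ls[where i=41]; (simp add: U)?)
  apply (rule all_Ls[where i=16 and y=20303]; (simp add: U)?)
  apply (rule imp_Ls[where i=44]; (simp add: U)?)
  apply (rule hyp_s; (simp add: U)?)
  apply (rule eq_sym_Ls[where i=45]; (simp add: U)?)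
  apply (rule hyp_s; (simp add: U)?)
  apply (rule cut_s[where a="Imp (Eq 20304 20301) (Eq 20302 20304)"]; (simp add: U)?)
  apply (rule imp_Rs; (simp add: U)?)
  apply (rule all_Ls[where i=9 and y=20320]; (simp add: U)?)
  apply (rule imp_Ls[where i=39]; (simp add: U)?)
  apply (rule hyp_s; (simp add: U)?)
  apply (rule disj_Ls[where i=40]; (simp add: U)?)
  apply (rule conj_Ls[where i=41]; (simp add: U)?)
  apply (rule all_Ls[where i=42 and y=20302]; (simp add: U)?)
  apply (rule imp_Ls[where i=44]; (simp add: U)?)
  apply (rule hyp_s; (simp add: U)?)
  apply (rule eq_sym_Ls[where i=37]; (simp add: U)?)
  apply (rule eq_Ls[where i=45 and j=46]; (simp add: U)?)
  apply (rule eq_sym_Ls[where i=38]; (simp add: U)?)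
  apply (rule eq_Ls[where i=47 and j=48]; (simp add: U)?)
  apply (rule hyp_s; (simp add: U)?)
  apply (rule conj_Ls[where i=41]; (simp add: U)?)
  apply (rule all_Ls[where i=42 and y=20302]; (simp add: U)?)
  apply (rule imp_Ls[where i=44]; (simp add: U)?)
  apply (rule hyp_s; (simp add: U)?)
  apply (rule disj_Ls[where i=45]; (simp add: U)?)
  apply (rule eq_sym_Ls[where i=37]; (simp add: U)?)
  apply (rule eq_Ls[where i=46 and j=47]; (simp add: U)?)
  apply (rule eq_sym_Ls[where i=38]; (simp add: U)?)
  apply (rule eq_Ls[where i=48 and j=49]; (simp add: U)?)
  apply (rule hyp_s; (simp add: U)?)
  apply (rule hyp_s; (simp add: U)?)
  apply (rule cut_s[where a="Eq 20302 20304"]; (simp add: U)?)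
  apply (rule all_Ls[where i=5 and y=20340]; (simp add: U)?)
  apply (rule imp_Ls[where i=39]; (simp add: U)?)
  apply (rule hyp_s; (simp add: U)?)
  apply (rule disj_Ls[where i=40]; (simp add: U)?)
  apply (rule conj_Ls[where i=41]; (simp add: U)?)
  apply (rule all_Ls[where i=42 and y=20304]; (simp add: U)?)
  apply (rule imp_Ls[where i=44]; (simp add: U)?)
  apply (rule hyp_s; (simp add: U)?)
  apply (rule imp_Ls[where i=38]; (simp add: U)?)
  apply (rule hyp_s; (simp add: U)?)
  apply (rule hyp_s; (simp add: U)?)
  apply (rule conj_Ls[where i=41]; (simp add: U)?)
  apply (rule all_Ls[where i=42 and y=20304]; (simp add: U)?)
  apply (rule imp_Ls[where i=44]; (simp add: U)?)
  apply (rule hyp_s; (simp add: U)?)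
  apply (rule disj_Ls[where i=45]; (simp add: U)?)
  apply (rule imp_Ls[where i=38]; (simp add: U)?)
  apply (rule hyp_s; (simp add: U)?)
  apply (rule hyp_s; (simp add: U)?)
  apply (rule eq_sym_Ls[where i=46]; (simp add: U)?)
  apply (rule hyp_s; (simp add: U)?)
  apply (rule conj_Rs)
  apply (rule hyp_s; (simp add: U)?)
  apply (rule hyp_s; (simp add: U)?)
  done
definition Lpex :: fm where
  "Lpex = All 20401 (All 20402 (Ex 20403 (is_pair 20403 20401 20402)))"

lemma fv_Lpex[simp]: "fv Lpex = {}" by (simp add: Lpex_def U)
lemmas [simp] = Lpex_def[THEN arg_cong[where f=isA]]
lemmas [simp] = Lpex_def[THEN arg_cong[where f=qv]]
lemmas [simp] = Lpex_def[THEN arg_cong[where f=qb]]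
lemmas [simp] = Lpex_def[THEN arg_cong[where f=isC]]
lemmas [simp] = Lpex_def[THEN arg_cong[where f=isI]]
lemmas [simp] = Lpex_def[THEN arg_cong[where f=lhs]]
lemmas [simp] = Lpex_def[THEN arg_cong[where f=rhs]]
lemmas [simp] = Lpex_def[THEN arg_cong[where f=isE]]

lemma L_pex: "pf [ExtR, PairR, UnionR] Lpex"
  unfolding Lpex_def
  apply (rule pfs_start; (simp add: U)?)
  apply (rule all_Rs; (simp add: U)?)
  apply (rule all_Rs; (simp add: U)?)
  apply (rule pair_obtains[where a=20401 and b=20401 and w=20410]; (simp add: U)?)
  apply (rule conj_Ls[where i=3]; (simp add: U)?)
  apply (rule sep_obtains[where a=20410 and b=20420 and x=20409 and p="Eq 20409 20401"]; (simp add: U)?)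
  apply (rule pair_obtains[where a=20401 and b=20402 and w=20430]; (simp add: U)?)
  apply (rule conj_Ls[where i=7]; (simp add: U)?)
  apply (rule sep_obtains[where a=20430 and b=20440 and x=20409 and p="Disj (Eq 20409 20401) (Eq 20409 20402)"]; (simp add: U)?)
  apply (rule pair_obtains[where a=20420 and b=20440 and w=20450]; (simp add: U)?)
  apply (rule conj_Ls[where i=11]; (simp add: U)?)
  apply (rule sep_obtains[where a=20450 and b=20460 and x=20409 and p="Disj (Eq 20409 20420) (Eq 20409 20440)"]; (simp add: U)?)
  apply (rule cut_s[where a="is_sing 20420 20401"]; (simp add: U)?)
  apply (rule conj_Rs)
  apply (rule all_Rs; (simp add: U)?)
  apply (rule imp_Rs; (simp add: U)?)
  apply (rule all_Ls[where i=6 and y=20421]; (simp add: U)?)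
  apply (rule conj_Ls[where i=16]; (simp add: U)?)
  apply (rule imp_Ls[where i=17]; (simp add: U)?)
  apply (rule hyp_s; (simp add: U)?)
  apply (rule conj_Ls[where i=19]; (simp add: U)?)
  apply (rule hyp_s; (simp add: U)?)
  apply (rule all_Ls[where i=6 and y=20401]; (simp add: U)?)
  apply (rule conj_Ls[where i=15]; (simp add: U)?)
  apply (rule imp_Ls[where i=17]; (simp add: U)?)
  apply (rule conj_Rs)
  apply (rule hyp_s; (simp add: U)?)
  apply (rule refl_Rs)
  apply (rule hyp_s; (simp add: U)?)
  apply (rule cut_s[where a="is_upair 20440 20401 20402"]; (simp add: U)?)
  apply (rule conj_Rs)
  apply (rule all_Rs; (simp add: U)?)
  apply (rule imp_Rs; (simp add: U)?)
  apply (rule all_Ls[where i=10 and y=20441]; (simp add: U)?)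
  apply (rule conj_Ls[where i=17]; (simp add: U)?)
  apply (rule imp_Ls[where i=18]; (simp add: U)?)
  apply (rule hyp_s; (simp add: U)?)
  apply (rule conj_Ls[where i=20]; (simp add: U)?)
  apply (rule hyp_s; (simp add: U)?)
  apply (rule conj_Rs)
  apply (rule all_Ls[where i=10 and y=20401]; (simp add: U)?)
  apply (rule conj_Ls[where i=16]; (simp add: U)?)
  apply (rule imp_Ls[where i=18]; (simp add: U)?)
  apply (rule conj_Rs)
  apply (rule hyp_s; (simp add: U)?)
  apply (rule disj_R1s)
  apply (rule refl_Rs)
  apply (rule hyp_s; (simp add: U)?)
  apply (rule all_Ls[where i=10 and y=20402]; (simp add: U)?)
  apply (rule conj_Ls[where i=16]; (simp add: U)?)
  apply (rule imp_Ls[where i=18]; (simp add: U)?)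
  apply (rule conj_Rs)
  apply (rule hyp_s; (simp add: U)?)
  apply (rule disj_R2s)
  apply (rule refl_Rs)
  apply (rule hyp_s; (simp add: U)?)
  apply (rule ex_Rs[where y=20460]; (simp add: U)?)
  apply (rule conj_Rs)
  apply (rule all_Rs; (simp add: U)?)
  apply (rule imp_Rs; (simp add: U)?)
  apply (rule all_Ls[where i=14 and y=20404]; (simp add: U)?)
  apply (rule conj_Ls[where i=18]; (simp add: U)?)
  apply (rule imp_Ls[where i=19]; (simp add: U)?)
  apply (rule hyp_s; (simp add: U)?)
  apply (rule conj_Ls[where i=21]; (simp add: U)?)
  apply (rule disj_Ls[where i=23]; (simp add: U)?)
  apply (rule disj_R1s)
  apply (rule eq_sym_Ls[where i=24]; (simp add: U)?)
  apply (rule eq_Ls[where i=15 and j=25]; (simp add: U)?)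
  apply (rule hyp_as[where j=26]; (simp add: U)?)
  apply (rule disj_R2s)
  apply (rule eq_sym_Ls[where i=24]; (simp add: U)?)
  apply (rule eq_Ls[where i=16 and j=25]; (simp add: U)?)
  apply (rule hyp_as[where j=26]; (simp add: U)?)
  apply (rule conj_Rs)
  apply (rule ex_Rs[where y=20420]; (simp add: U)?)
  apply (rule conj_Rs)
  apply (rule all_Ls[where i=14 and y=20420]; (simp add: U)?)
  apply (rule conj_Ls[where i=17]; (simp add: U)?)
  apply (rule imp_Ls[where i=19]; (simp add: U)?)
  apply (rule conj_Rs)
  apply (rule hyp_s; (simp add: U)?)
  apply (rule disj_R1s)
  apply (rule refl_Rs)
  apply (rule hyp_s; (simp add: U)?)
  apply (rule hyp_as[where j=15]; (simp add: U)?)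
  apply (rule ex_Rs[where y=20440]; (simp add: U)?)
  apply (rule conj_Rs)
  apply (rule all_Ls[where i=14 and y=20440]; (simp add: U)?)
  apply (rule conj_Ls[where i=17]; (simp add: U)?)
  apply (rule imp_Ls[where i=19]; (simp add: U)?)
  apply (rule conj_Rs)
  apply (rule hyp_s; (simp add: U)?)
  apply (rule disj_R2s)
  apply (rule refl_Rs)
  apply (rule hyp_s; (simp add: U)?)
  apply (rule hyp_as[where j=16]; (simp add: U)?)
  done
definition Lprod :: fm where
  "Lprod = All 20501 (All 20502 (Ex 20503 (BAll 20504 20501 (BAll 20505 20502 (BEx 20506 20503 (is_pair 20506 20504 20505))))))"

lemma fv_Lprod[simp]: "fv Lprod = {}" by (simp add: Lprod_def U)
lemmas [simp] = Lprod_def[THEN arg_cong[where f=isA]]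
lemmas [simp] = Lprod_def[THEN arg_cong[where f=qv]]
lemmas [simp] = Lprod_def[THEN arg_cong[where f=qb]]
lemmas [simp] = Lprod_def[THEN arg_cong[where f=isC]]
lemmas [simp] = Lprod_def[THEN arg_cong[where f=isI]]
lemmas [simp] = Lprod_def[THEN arg_cong[where f=lhs]]
lemmas [simp] = Lprod_def[THEN arg_cong[where f=rhs]]
lemmas [simp] = Lprod_def[THEN arg_cong[where f=isE]]

lemma L_prod: "pf [ExtR, PairR, UnionR, Lpex] Lprod"
  unfolding Lprod_def
  apply (rule pfs_start; (simp add: U)?)
  apply (rule all_Rs; (simp add: U)?)
  apply (rule all_Rs; (simp add: U)?)
  apply (rule coll_obtains[where a=20501 and b=20510 and x=20504 and y=20520 and p="BAll 20505 20502 (BEx 20506 20520 (is_pair 20506 20504 20505))"]; (simp add: U)?)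
  apply (rule all_Rs; (simp add: U)?)
  apply (rule imp_Rs; (simp add: U)?)
  apply (rule coll_obtains[where a=20502 and b=20530 and x=20505 and y=20506 and p="is_pair 20506 20504 20505"]; (simp add: U)?)
  apply (rule all_Rs; (simp add: U)?)
  apply (rule imp_Rs; (simp add: U)?)
  apply (rule all_Ls[where i=3 and y=20504]; (simp add: U)?)
  apply (rule all_Ls[where i=6 and y=20505]; (simp add: U)?)
  apply (rule ex_Ls[where i=7 and w=20540]; (simp add: U)?)
  apply (rule ex_Rs[where y=20540]; (simp add: U)?)
  apply (rule hyp_as[where j=8]; (simp add: U)?)
  apply (rule ex_Rs[where y=20530]; (simp add: U)?)
  apply (rule hyp_s; (simp add: U)?)
  apply (rule union_obtains[where a=20510 and w=20550]; (simp add: U)?)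
  apply (rule ex_Rs[where y=20550]; (simp add: U)?)
  apply (rule all_Rs; (simp add: U)?)
  apply (rule imp_Rs; (simp add: U)?)
  apply (rule all_Rs; (simp add: U)?)
  apply (rule imp_Rs; (simp add: U)?)
  apply (rule all_Ls[where i=4 and y=20504]; (simp add: U)?)
  apply (rule imp_Ls[where i=8]; (simp add: U)?)
  apply (rule hyp_s; (simp add: U)?)
  apply (rule ex_Ls[where i=9 and w=20560]; (simp add: U)?)
  apply (rule conj_Ls[where i=10]; (simp add: U)?)
  apply (rule all_Ls[where i=12 and y=20505]; (simp add: U)?)
  apply (rule imp_Ls[where i=13]; (simp add: U)?)
  apply (rule hyp_s; (simp add: U)?)
  apply (rule ex_Ls[where i=14 and w=20570]; (simp add: U)?)
  apply (rule conj_Ls[where i=15]; (simp add: U)?)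
  apply (rule all_Ls[where i=5 and y=20560]; (simp add: U)?)
  apply (rule imp_Ls[where i=18]; (simp add: U)?)
  apply (rule hyp_s; (simp add: U)?)
  apply (rule all_Ls[where i=19 and y=20570]; (simp add: U)?)
  apply (rule imp_Ls[where i=20]; (simp add: U)?)
  apply (rule hyp_s; (simp add: U)?)
  apply (rule ex_Rs[where y=20570]; (simp add: U)?)
  apply (rule conj_Rs)
  apply (rule hyp_s; (simp add: U)?)
  apply (rule hyp_s; (simp add: U)?)
  done
definition Lplump :: fm where
  "Lplump = All 20601 (Imp (is_plord 20601) (BAll 20602 20601 (relpl 20601 20602)))"

lemma fv_Lplump[simp]: "fv Lplump = {}" by (simp add: Lplump_def U)
lemmas [simp] = Lplump_def[THEN arg_cong[where f=isA]]
lemmas [simp] = Lplump_def[THEN arg_cong[where f=qv]]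
lemmas [simp] = Lplump_def[THEN arg_cong[where f=qb]]
lemmas [simp] = Lplump_def[THEN arg_cong[where f=isC]]
lemmas [simp] = Lplump_def[THEN arg_cong[where f=isI]]
lemmas [simp] = Lplump_def[THEN arg_cong[where f=lhs]]
lemmas [simp] = Lplump_def[THEN arg_cong[where f=rhs]]
lemmas [simp] = Lplump_def[THEN arg_cong[where f=isE]]

lemma L_plump: "pf [ExtR, PairR, UnionR] Lplump"
  unfolding Lplump_def
  apply (rule pfs_start; (simp add: U)?)
  apply (rule all_Rs; (simp add: U)?)
  apply (rule imp_Rs; (simp add: U)?)
  apply (rule conj_Ls[where i=3]; (simp add: U)?)
  apply (rule conj_Ls[where i=4]; (simp add: U)?)
  apply (rule setind_Ls[where a=20610 and x=20640 and p="BAll 20620 20601 (BAll 20630 20601 (Imp (Mem 20610 20630) (Imp (subset_fm 20620 20610) (Mem 20620 20630))))"]; (simp add: U)?)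
  apply (rule imp_Ls[where i=8]; (simp add: U)?)
  apply (rule all_Rs; (simp add: U)?)
  apply (rule imp_Rs; (simp add: U)?)
  apply (rule all_Rs; (simp add: U)?)
  apply (rule imp_Rs; (simp add: U)?)
  apply (rule all_Rs; (simp add: U)?)
  apply (rule imp_Rs; (simp add: U)?)
  apply (rule imp_Rs; (simp add: U)?)
  apply (rule imp_Rs; (simp add: U)?)
  apply (rule all_Ls[where i=6 and y=20630]; (simp add: U)?)
  apply (rule imp_Ls[where i=14]; (simp add: U)?)
  apply (rule hyp_s; (simp add: U)?)
  apply (rule all_Ls[where i=15 and y=20610]; (simp add: U)?)
  apply (rule imp_Ls[where i=16]; (simp add: U)?)
  apply (rule hyp_s; (simp add: U)?)
  apply (rule all_Ls[where i=5 and y=20610]; (simp add: U)?)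
  apply (rule imp_Ls[where i=18]; (simp add: U)?)
  apply (rule hyp_s; (simp add: U)?)
  apply (rule all_Ls[where i=19 and y=20620]; (simp add: U)?)
  apply (rule imp_Las[where i=20 and j=13]; (simp add: U)?)
  apply (rule imp_Ls[where i=21]; (simp add: U)?)
  apply (rule all_Rs; (simp add: U)?)
  apply (rule imp_Rs; (simp add: U)?)
  apply (rule all_Rs; (simp add: U)?)
  apply (rule imp_Rs; (simp add: U)?)
  apply (rule imp_Rs; (simp add: U)?)
  apply (rule all_Ls[where i=13 and y=20604]; (simp add: U)?)
  apply (rule imp_Ls[where i=25]; (simp add: U)?)
  apply (rule hyp_s; (simp add: U)?)
  apply (rule all_Ls[where i=9 and y=20604]; (simp add: U)?)
  apply (rule imp_Ls[where i=27]; (simp add: U)?)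
  apply (rule hyp_s; (simp add: U)?)
  apply (rule all_Ls[where i=28 and y=20605]; (simp add: U)?)
  apply (rule imp_Ls[where i=29]; (simp add: U)?)
  apply (rule hyp_s; (simp add: U)?)
  apply (rule all_Ls[where i=30 and y=20620]; (simp add: U)?)
  apply (rule imp_Ls[where i=31]; (simp add: U)?)
  apply (rule hyp_s; (simp add: U)?)
  apply (rule imp_Ls[where i=32]; (simp add: U)?)
  apply (rule hyp_s; (simp add: U)?)
  apply (rule imp_Las[where i=33 and j=24]; (simp add: U)?)
  apply (rule hyp_s; (simp add: U)?)
  apply (rule conj_Ls[where i=22]; (simp add: U)?)
  apply (rule all_Ls[where i=24 and y=20630]; (simp add: U)?)
  apply (rule imp_Ls[where i=25]; (simp add: U)?)
  apply (rule hyp_s; (simp add: U)?)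
  apply (rule imp_Ls[where i=26]; (simp add: U)?)
  apply (rule hyp_s; (simp add: U)?)
  apply (rule hyp_s; (simp add: U)?)
  apply (rule all_Rs; (simp add: U)?)
  apply (rule imp_Rs; (simp add: U)?)
  apply (rule all_Rs; (simp add: U)?)
  apply (rule imp_Rs; (simp add: U)?)
  apply (rule all_Rs; (simp add: U)?)
  apply (rule imp_Rs; (simp add: U)?)
  apply (rule imp_Rs; (simp add: U)?)
  apply (rule all_Ls[where i=9 and y=20603]; (simp add: U)?)
  apply (rule all_Ls[where i=14 and y=20604]; (simp add: U)?)
  apply (rule imp_Ls[where i=15]; (simp add: U)?)
  apply (rule hyp_s; (simp add: U)?)
  apply (rule all_Ls[where i=16 and y=20602]; (simp add: U)?)
  apply (rule imp_Ls[where i=17]; (simp add: U)?)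
  apply (rule hyp_s; (simp add: U)?)
  apply (rule imp_Ls[where i=18]; (simp add: U)?)
  apply (rule hyp_s; (simp add: U)?)
  apply (rule imp_Las[where i=19 and j=13]; (simp add: U)?)
  apply (rule hyp_s; (simp add: U)?)
  done

definition PowR :: fm where "PowR = ren (\<lambda>v. v + 9101) id Powerset"
lemma PowR_eq: "PowR = All 9101 (Ex 9102 (All 9103 (Iff (Mem 9103 9102) (BAll 9104 9103 (Mem 9104 9101)))))"
  by (simp add: PowR_def U)
lemma fv_PowR[simp]: "fv PowR = {}" by (simp add: PowR_eq U)
lemmas [simp] = PowR_eq[THEN arg_cong[where f=isA]] PowR_eq[THEN arg_cong[where f=qv]] PowR_eq[THEN arg_cong[where f=qb]]

definition Base :: "fm list" where "Base = [ExtR, PairR, UnionR, Lsu, Luu, Lpu, Lpi, Lpex, Lprod, Lplump]"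

lemma main_A: "pf (Base @ [PowR]) Exponentiation"
  unfolding Base_def Exponentiation_def
  apply (rule pfs_start; (simp add: U)?)
  apply (rule all_Rs; (simp add: U)?)
  apply (rule all_Rs; (simp add: U)?)
  apply (rule all_Ls[where i=8 and y=0]; (simp add: U)?)
  apply (rule all_Ls[where i=11 and y=1]; (simp add: U)?)
  apply (rule ex_Ls[where i=12 and w=100]; (simp add: U)?)
  apply (rule all_Ls[where i=10 and y=100]; (simp add: U)?)
  apply (rule ex_Ls[where i=14 and w=200]; (simp add: U)?)
  apply (rule sep_obtains[where a=200 and b=2 and x=3 and p="is_fun 3 0 1"]; (simp add: U)?)
  apply (rule ex_Rs[where y=2]; (simp add: U)?)
  apply (rule all_Rs; (simp add: U)?)
  apply (rule conj_Rs)
  apply (rule imp_Rs; (simp add: U)?)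
  apply (rule all_Ls[where i=16 and y=3]; (simp add: U)?)
  apply (rule conj_Ls[where i=18]; (simp add: U)?)
  apply (rule imp_Ls[where i=19]; (simp add: U)?)
  apply (rule hyp_s; (simp add: U)?)
  apply (rule conj_Ls[where i=21]; (simp add: U)?)
  apply (rule hyp_s; (simp add: U)?)
  apply (rule imp_Rs; (simp add: U)?)
  apply (rule all_Ls[where i=16 and y=3]; (simp add: U)?)
  apply (rule conj_Ls[where i=18]; (simp add: U)?)
  apply (rule imp_Ls[where i=20]; (simp add: U)?)
  apply (rule conj_Rs)
  apply (rule all_Ls[where i=15 and y=3]; (simp add: U)?)
  apply (rule conj_Ls[where i=21]; (simp add: U)?)
  apply (rule imp_Ls[where i=23]; (simp add: U)?)
  apply (rule all_Rs; (simp add: U)?)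
  apply (rule imp_Rs; (simp add: U)?)
  apply (rule conj_Ls[where i=17]; (simp add: U)?)
  apply (rule all_Ls[where i=25 and y=9104]; (simp add: U)?)
  apply (rule imp_Ls[where i=27]; (simp add: U)?)
  apply (rule hyp_s; (simp add: U)?)
  apply (rule ex_Ls[where i=28 and w=300]; (simp add: U)?)
  apply (rule conj_Ls[where i=29]; (simp add: U)?)
  apply (rule ex_Ls[where i=31 and w=400]; (simp add: U)?)
  apply (rule conj_Ls[where i=32]; (simp add: U)?)
  apply (rule all_Ls[where i=13 and y=300]; (simp add: U)?)
  apply (rule imp_Ls[where i=35]; (simp add: U)?)
  apply (rule hyp_s; (simp add: U)?)
  apply (rule all_Ls[where i=36 and y=400]; (simp add: U)?)
  apply (rule imp_Ls[where i=37]; (simp add: U)?)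
  apply (rule hyp_s; (simp add: U)?)
  apply (rule ex_Ls[where i=38 and w=500]; (simp add: U)?)
  apply (rule conj_Ls[where i=39]; (simp add: U)?)
  apply (rule all_Ls[where i=5 and y=9104]; (simp add: U)?)
  apply (rule all_Ls[where i=42 and y=500]; (simp add: U)?)
  apply (rule all_Ls[where i=43 and y=300]; (simp add: U)?)
  apply (rule all_Ls[where i=44 and y=400]; (simp add: U)?)
  apply (rule imp_Las[where i=45 and j=34]; (simp add: U)?)
  apply (rule imp_Las[where i=46 and j=41]; (simp add: U)?)
  apply (rule eq_sym_Ls[where i=47]; (simp add: U)?)
  apply (rule eq_Ls[where i=40 and j=48]; (simp add: U)?)
  apply (rule hyp_s; (simp add: U)?)
  apply (rule hyp_s; (simp add: U)?)
  apply (rule hyp_s; (simp add: U)?)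
  apply (rule hyp_s; (simp add: U)?)
  done
lemma main_B: "pf (Base @ [PowR]) PlUb"
  unfolding Base_def PlUb_def
  apply (rule pfs_start; (simp add: U)?)
  apply (rule all_Rs; (simp add: U)?)
  apply (rule imp_Rs; (simp add: U)?)
  apply (rule alpha_Las[where j=11 and q="ren (\<lambda>v. v + 9200) id (is_plord 0)"]; (simp add: U)?)
  apply (rule all_Ls[where i=9 and y=0]; (simp add: U)?)
  apply (rule imp_Las[where i=13 and j=12]; (simp add: U)?)
  apply (rule conj_Ls[where i=12]; (simp add: U)?)
  apply (rule conj_Ls[where i=15]; (simp add: U)?)
  apply (rule all_Ls[where i=10 and y=0]; (simp add: U)?)
  apply (rule ex_Ls[where i=19 and w=100]; (simp add: U)?)
  apply (rule sep_obtains[where a=100 and b=1 and x=9301 and p="relpl 0 9301"]; (simp add: U)?)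
  apply (rule cut_s[where a="BAll 9401 0 (Mem 9401 1)"]; (simp add: U)?)
  apply (rule all_Rs; (simp add: U)?)
  apply (rule imp_Rs; (simp add: U)?)
  apply (rule all_Ls[where i=21 and y=9401]; (simp add: U)?)
  apply (rule conj_Ls[where i=23]; (simp add: U)?)
  apply (rule imp_Ls[where i=25]; (simp add: U)?)
  apply (rule conj_Rs)
  apply (rule all_Ls[where i=20 and y=9401]; (simp add: U)?)
  apply (rule conj_Ls[where i=26]; (simp add: U)?)
  apply (rule imp_Ls[where i=28]; (simp add: U)?)
  apply (rule all_Rs; (simp add: U)?)
  apply (rule imp_Rs; (simp add: U)?)
  apply (rule all_Ls[where i=17 and y=9401]; (simp add: U)?)
  apply (rule imp_Ls[where i=30]; (simp add: U)?)
  apply (rule hyp_s; (simp add: U)?)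
  apply (rule all_Ls[where i=31 and y=9104]; (simp add: U)?)
  apply (rule imp_Ls[where i=32]; (simp add: U)?)
  apply (rule hyp_s; (simp add: U)?)
  apply (rule hyp_s; (simp add: U)?)
  apply (rule hyp_s; (simp add: U)?)
  apply (rule all_Ls[where i=14 and y=9401]; (simp add: U)?)
  apply (rule imp_Ls[where i=26]; (simp add: U)?)
  apply (rule hyp_s; (simp add: U)?)
  apply (rule hyp_as[where j=27]; (simp add: U)?)
  apply (rule hyp_s; (simp add: U)?)
  apply (rule ex_Rs[where y=1]; (simp add: U)?)
  apply (rule conj_Rs)
  apply (rule conj_Rs)
  apply (rule conj_Rs)
  apply (rule all_Rs; (simp add: U)?)
  apply (rule imp_Rs; (simp add: U)?)
  apply (rule all_Rs; (simp add: U)?)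
  apply (rule imp_Rs; (simp add: U)?)
  apply (rule all_Ls[where i=21 and y=2]; (simp add: U)?)
  apply (rule conj_Ls[where i=25]; (simp add: U)?)
  apply (rule imp_Ls[where i=26]; (simp add: U)?)
  apply (rule hyp_s; (simp add: U)?)
  apply (rule conj_Ls[where i=28]; (simp add: U)?)
  apply (rule all_Ls[where i=20 and y=2]; (simp add: U)?)
  apply (rule conj_Ls[where i=31]; (simp add: U)?)
  apply (rule imp_Ls[where i=32]; (simp add: U)?)
  apply (rule hyp_s; (simp add: U)?)
  apply (rule all_Ls[where i=34 and y=3]; (simp add: U)?)
  apply (rule imp_Ls[where i=35]; (simp add: U)?)
  apply (rule hyp_s; (simp add: U)?)
  apply (rule all_Ls[where i=22 and y=3]; (simp add: U)?)
  apply (rule imp_Ls[where i=37]; (simp add: U)?)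
  apply (rule hyp_s; (simp add: U)?)
  apply (rule hyp_s; (simp add: U)?)
  apply (rule all_Rs; (simp add: U)?)
  apply (rule imp_Rs; (simp add: U)?)
  apply (rule all_Rs; (simp add: U)?)
  apply (rule imp_Rs; (simp add: U)?)
  apply (rule all_Rs; (simp add: U)?)
  apply (rule imp_Rs; (simp add: U)?)
  apply (rule all_Ls[where i=21 and y=2]; (simp add: U)?)
  apply (rule conj_Ls[where i=26]; (simp add: U)?)
  apply (rule imp_Ls[where i=27]; (simp add: U)?)
  apply (rule hyp_s; (simp add: U)?)
  apply (rule conj_Ls[where i=29]; (simp add: U)?)
  apply (rule all_Ls[where i=21 and y=2]; (simp add: U)?)
  apply (rule conj_Ls[where i=32]; (simp add: U)?)
  apply (rule imp_Ls[where i=33]; (simp add: U)?)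
  apply (rule hyp_s; (simp add: U)?)
  apply (rule conj_Ls[where i=35]; (simp add: U)?)
  apply (rule all_Ls[where i=20 and y=2]; (simp add: U)?)
  apply (rule conj_Ls[where i=38]; (simp add: U)?)
  apply (rule imp_Ls[where i=39]; (simp add: U)?)
  apply (rule hyp_s; (simp add: U)?)
  apply (rule all_Ls[where i=41 and y=3]; (simp add: U)?)
  apply (rule imp_Ls[where i=42]; (simp add: U)?)
  apply (rule hyp_s; (simp add: U)?)
  apply (rule all_Ls[where i=17 and y=3]; (simp add: U)?)
  apply (rule imp_Ls[where i=44]; (simp add: U)?)
  apply (rule hyp_s; (simp add: U)?)
  apply (rule all_Ls[where i=45 and y=4]; (simp add: U)?)
  apply (rule imp_Ls[where i=46]; (simp add: U)?)
  apply (rule hyp_s; (simp add: U)?)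
  apply (rule all_Ls[where i=31 and y=3]; (simp add: U)?)
  apply (rule imp_Ls[where i=48]; (simp add: U)?)
  apply (rule hyp_s; (simp add: U)?)
  apply (rule all_Ls[where i=49 and y=4]; (simp add: U)?)
  apply (rule imp_Ls[where i=50]; (simp add: U)?)
  apply (rule hyp_s; (simp add: U)?)
  apply (rule imp_Ls[where i=51]; (simp add: U)?)
  apply (rule all_Rs; (simp add: U)?)
  apply (rule imp_Rs; (simp add: U)?)
  apply (rule all_Ls[where i=18 and y=3]; (simp add: U)?)
  apply (rule imp_Ls[where i=53]; (simp add: U)?)
  apply (rule hyp_s; (simp add: U)?)
  apply (rule all_Ls[where i=54 and y=4]; (simp add: U)?)
  apply (rule imp_Ls[where i=55]; (simp add: U)?)
  apply (rule hyp_s; (simp add: U)?)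
  apply (rule all_Ls[where i=56 and y=9304]; (simp add: U)?)
  apply (rule imp_Ls[where i=57]; (simp add: U)?)
  apply (rule hyp_s; (simp add: U)?)
  apply (rule hyp_s; (simp add: U)?)
  apply (rule hyp_s; (simp add: U)?)
  apply (rule all_Rs; (simp add: U)?)
  apply (rule imp_Rs; (simp add: U)?)
  apply (rule all_Rs; (simp add: U)?)
  apply (rule imp_Rs; (simp add: U)?)
  apply (rule imp_Rs; (simp add: U)?)
  apply (rule alpha_Las[where j=24 and q="BAll 9310 3 (Mem 9310 2)"]; (simp add: U)?)
  apply (rule all_Ls[where i=21 and y=2]; (simp add: U)?)
  apply (rule conj_Ls[where i=27]; (simp add: U)?)
  apply (rule imp_Ls[where i=28]; (simp add: U)?)
  apply (rule hyp_s; (simp add: U)?)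
  apply (rule conj_Ls[where i=30]; (simp add: U)?)
  apply (rule all_Ls[where i=20 and y=2]; (simp add: U)?)
  apply (rule conj_Ls[where i=33]; (simp add: U)?)
  apply (rule imp_Ls[where i=34]; (simp add: U)?)
  apply (rule hyp_s; (simp add: U)?)
  apply (rule cut_s[where a="BAll 9302 3 (BAll 9303 0 (Imp (BAll 9304 9303 (Mem 9304 9302)) (Mem 9303 3)))"]; (simp add: U)?)
  apply (rule all_Rs; (simp add: U)?)
  apply (rule imp_Rs; (simp add: U)?)
  apply (rule all_Rs; (simp add: U)?)
  apply (rule imp_Rs; (simp add: U)?)
  apply (rule imp_Rs; (simp add: U)?)
  apply (rule all_Ls[where i=22 and y=9303]; (simp add: U)?)
  apply (rule imp_Ls[where i=40]; (simp add: U)?)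
  apply (rule hyp_s; (simp add: U)?)
  apply (rule all_Ls[where i=25 and y=9302]; (simp add: U)?)
  apply (rule imp_Ls[where i=42]; (simp add: U)?)
  apply (rule hyp_s; (simp add: U)?)
  apply (rule all_Ls[where i=43 and y=9303]; (simp add: U)?)
  apply (rule imp_Ls[where i=44]; (simp add: U)?)
  apply (rule hyp_s; (simp add: U)?)
  apply (rule imp_Las[where i=45 and j=39]; (simp add: U)?)
  apply (rule hyp_s; (simp add: U)?)
  apply (rule cut_s[where a="Mem 3 100"]; (simp add: U)?)
  apply (rule all_Ls[where i=20 and y=3]; (simp add: U)?)
  apply (rule conj_Ls[where i=38]; (simp add: U)?)
  apply (rule imp_Ls[where i=40]; (simp add: U)?)
  apply (rule all_Rs; (simp add: U)?)
  apply (rule imp_Rs; (simp add: U)?)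
  apply (rule all_Ls[where i=26 and y=9104]; (simp add: U)?)
  apply (rule imp_Ls[where i=42]; (simp add: U)?)
  apply (rule hyp_s; (simp add: U)?)
  apply (rule all_Ls[where i=36 and y=9104]; (simp add: U)?)
  apply (rule imp_Ls[where i=44]; (simp add: U)?)
  apply (rule hyp_s; (simp add: U)?)
  apply (rule hyp_s; (simp add: U)?)
  apply (rule hyp_s; (simp add: U)?)
  apply (rule conj_Rs)
  apply (rule all_Ls[where i=21 and y=3]; (simp add: U)?)
  apply (rule conj_Ls[where i=39]; (simp add: U)?)
  apply (rule imp_Ls[where i=41]; (simp add: U)?)
  apply (rule conj_Rs)
  apply (rule hyp_s; (simp add: U)?)
  apply (rule hyp_s; (simp add: U)?)
  apply (rule hyp_s; (simp add: U)?)
  apply (rule all_Rs; (simp add: U)?)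
  apply (rule imp_Rs; (simp add: U)?)
  apply (rule imp_Rs; (simp add: U)?)
  apply (rule all_Ls[where i=21 and y=4]; (simp add: U)?)
  apply (rule conj_Ls[where i=41]; (simp add: U)?)
  apply (rule imp_Ls[where i=42]; (simp add: U)?)
  apply (rule hyp_s; (simp add: U)?)
  apply (rule conj_Ls[where i=44]; (simp add: U)?)
  apply (rule all_Ls[where i=20 and y=4]; (simp add: U)?)
  apply (rule conj_Ls[where i=47]; (simp add: U)?)
  apply (rule imp_Ls[where i=48]; (simp add: U)?)
  apply (rule hyp_s; (simp add: U)?)
  apply (rule all_Ls[where i=50 and y=2]; (simp add: U)?)
  apply (rule imp_Ls[where i=51]; (simp add: U)?)
  apply (rule hyp_s; (simp add: U)?)
  apply (rule all_Ls[where i=16 and y=2]; (simp add: U)?)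
  apply (rule imp_Ls[where i=53]; (simp add: U)?)
  apply (rule hyp_s; (simp add: U)?)
  apply (rule all_Ls[where i=54 and y=3]; (simp add: U)?)
  apply (rule imp_Las[where i=55 and j=26]; (simp add: U)?)
  apply (rule imp_Ls[where i=56]; (simp add: U)?)
  apply (rule hyp_as[where j=37]; (simp add: U)?)
  apply (rule conj_Ls[where i=57]; (simp add: U)?)
  apply (rule all_Ls[where i=46 and y=2]; (simp add: U)?)
  apply (rule imp_Ls[where i=60]; (simp add: U)?)
  apply (rule hyp_s; (simp add: U)?)
  apply (rule all_Ls[where i=61 and y=3]; (simp add: U)?)
  apply (rule imp_Ls[where i=62]; (simp add: U)?)
  apply (rule hyp_s; (simp add: U)?)
  apply (rule imp_Las[where i=63 and j=26]; (simp add: U)?)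
  apply (rule hyp_s; (simp add: U)?)
  apply (rule all_Ls[where i=21 and y=0]; (simp add: U)?)
  apply (rule conj_Ls[where i=23]; (simp add: U)?)
  apply (rule imp_Ls[where i=25]; (simp add: U)?)
  apply (rule conj_Rs)
  apply (rule all_Ls[where i=20 and y=0]; (simp add: U)?)
  apply (rule conj_Ls[where i=26]; (simp add: U)?)
  apply (rule imp_Ls[where i=28]; (simp add: U)?)
  apply (rule all_Rs; (simp add: U)?)
  apply (rule imp_Rs; (simp add: U)?)
  apply (rule hyp_s; (simp add: U)?)
  apply (rule hyp_s; (simp add: U)?)
  apply (rule all_Rs; (simp add: U)?)
  apply (rule imp_Rs; (simp add: U)?)
  apply (rule all_Rs; (simp add: U)?)
  apply (rule imp_Rs; (simp add: U)?)
  apply (rule imp_Rs; (simp add: U)?)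
  apply (rule hyp_s; (simp add: U)?)
  apply (rule hyp_s; (simp add: U)?)
  done

definition PlUbR :: fm where "PlUbR = ren (\<lambda>v. v + 9500) id PlUb"
lemma PlUbR_eq: "PlUbR = All 9500 (Imp (ren (\<lambda>v. v + 9500) (id(0 := 9500)) (is_plord 0))
   (Ex 9501 (Conj (ren (\<lambda>v. v + 9500) (id(0 := 9500, 1 := 9501)) (is_plord 1)) (Mem 9500 9501))))"
  by (simp add: PlUbR_def U)
lemma fv_PlUbR[simp]: "fv PlUbR = {}" by (simp add: PlUbR_def U)
lemmas [simp] = PlUbR_eq[THEN arg_cong[where f=isA]] PlUbR_eq[THEN arg_cong[where f=qv]] PlUbR_eq[THEN arg_cong[where f=qb]]

lemma main_C: "pf (Base @ [PlUbR, Exponentiation]) Powerset"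
  unfolding Base_def Powerset_def
  apply (rule pfs_start; (simp add: U)?)
  apply (rule all_Rs; (simp add: U)?)
  apply (rule pair_obtains[where a=0 and b=0 and w=100]; (simp add: U)?)
  apply (rule sep_obtains[where a=100 and b=200 and x=9401 and p="Bot"]; (simp add: U)?)
  apply (rule cut_s[where a="BAll 9402 200 Bot"]; (simp add: U)?)
  apply (rule all_Rs; (simp add: U)?)
  apply (rule imp_Rs; (simp add: U)?)
  apply (rule all_Ls[where i=13 and y=9402]; (simp add: U)?)
  apply (rule conj_Ls[where i=15]; (simp add: U)?)
  apply (rule imp_Ls[where i=16]; (simp add: U)?)
  apply (rule hyp_s; (simp add: U)?)
  apply (rule conj_Ls[where i=18]; (simp add: U)?)
  apply (rule bot_Ls; (simp add: U)?)
  apply (rule cut_s[where a="is_plord 200"]; (simp add: U)?)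
  apply (rule conj_Rs)
  apply (rule conj_Rs)
  apply (rule all_Rs; (simp add: U)?)
  apply (rule imp_Rs; (simp add: U)?)
  apply (rule all_Ls[where i=14 and y=201]; (simp add: U)?)
  apply (rule imp_Ls[where i=16]; (simp add: U)?)
  apply (rule hyp_s; (simp add: U)?)
  apply (rule bot_Ls; (simp add: U)?)
  apply (rule all_Rs; (simp add: U)?)
  apply (rule imp_Rs; (simp add: U)?)
  apply (rule all_Ls[where i=14 and y=201]; (simp add: U)?)
  apply (rule imp_Ls[where i=16]; (simp add: U)?)
  apply (rule hyp_s; (simp add: U)?)
  apply (rule bot_Ls; (simp add: U)?)
  apply (rule all_Rs; (simp add: U)?)
  apply (rule imp_Rs; (simp add: U)?)
  apply (rule all_Ls[where i=14 and y=201]; (simp add: U)?)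
  apply (rule imp_Ls[where i=16]; (simp add: U)?)
  apply (rule hyp_s; (simp add: U)?)
  apply (rule bot_Ls; (simp add: U)?)
  apply (rule all_Ls[where i=10 and y=200]; (simp add: U)?)
  apply (rule imp_Las[where i=16 and j=15]; (simp add: U)?)
  apply (rule ex_Ls[where i=17 and w=300]; (simp add: U)?)
  apply (rule conj_Ls[where i=18]; (simp add: U)?)
  apply (rule all_Ls[where i=10 and y=300]; (simp add: U)?)
  apply (rule imp_Las[where i=21 and j=19]; (simp add: U)?)
  apply (rule ex_Ls[where i=22 and w=400]; (simp add: U)?)
  apply (rule conj_Ls[where i=23]; (simp add: U)?)
  apply (rule conj_Ls[where i=24]; (simp add: U)?)
  apply (rule cut_s[where a="All 9701 (Imp (BAll 9702 9701 (Eq 9702 200)) (Mem 9701 400))"]; (simp add: U)?)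
  apply (rule all_Rs; (simp add: U)?)
  apply (rule imp_Rs; (simp add: U)?)
  apply (rule all_Ls[where i=27 and y=300]; (simp add: U)?)
  apply (rule imp_Ls[where i=29]; (simp add: U)?)
  apply (rule hyp_s; (simp add: U)?)
  apply (rule all_Ls[where i=30 and y=9701]; (simp add: U)?)
  apply (rule imp_Ls[where i=31]; (simp add: U)?)
  apply (rule all_Rs; (simp add: U)?)
  apply (rule imp_Rs; (simp add: U)?)
  apply (rule all_Ls[where i=28 and y=9504]; (simp add: U)?)
  apply (rule imp_Ls[where i=33]; (simp add: U)?)
  apply (rule hyp_s; (simp add: U)?)
  apply (rule eq_sym_Ls[where i=34]; (simp add: U)?)
  apply (rule eq_Ls[where i=20 and j=35]; (simp add: U)?)
  apply (rule hyp_s; (simp add: U)?)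
  apply (rule imp_Ls[where i=32]; (simp add: U)?)
  apply (rule all_Rs; (simp add: U)?)
  apply (rule imp_Rs; (simp add: U)?)
  apply (rule all_Rs; (simp add: U)?)
  apply (rule imp_Rs; (simp add: U)?)
  apply (rule imp_Rs; (simp add: U)?)
  apply (rule all_Ls[where i=28 and y=9504]; (simp add: U)?)
  apply (rule imp_Ls[where i=36]; (simp add: U)?)
  apply (rule hyp_s; (simp add: U)?)
  apply (rule cut_s[where a="Eq 9505 200"]; (simp add: U)?)
  apply (rule ext_Rs[where z=9710]; (simp add: U)?)
  apply (rule all_Ls[where i=35 and y=9710]; (simp add: U)?)
  apply (rule imp_Ls[where i=39]; (simp add: U)?)
  apply (rule hyp_s; (simp add: U)?)
  apply (rule eq_Ls[where i=40 and j=37]; (simp add: U)?)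
  apply (rule all_Ls[where i=14 and y=9710]; (simp add: U)?)
  apply (rule imp_Ls[where i=42]; (simp add: U)?)
  apply (rule hyp_s; (simp add: U)?)
  apply (rule bot_Ls; (simp add: U)?)
  apply (rule all_Ls[where i=14 and y=9710]; (simp add: U)?)
  apply (rule imp_Ls[where i=39]; (simp add: U)?)
  apply (rule hyp_s; (simp add: U)?)
  apply (rule bot_Ls; (simp add: U)?)
  apply (rule eq_Ls[where i=33 and j=37]; (simp add: U)?)
  apply (rule eq_sym_Ls[where i=38]; (simp add: U)?)
  apply (rule eq_Ls[where i=39 and j=40]; (simp add: U)?)
  apply (rule hyp_s; (simp add: U)?)
  apply (rule conj_Ls[where i=33]; (simp add: U)?)
  apply (rule hyp_s; (simp add: U)?)
  apply (rule all_Ls[where i=11 and y=0]; (simp add: U)?)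
  apply (rule all_Ls[where i=29 and y=400]; (simp add: U)?)
  apply (rule ex_Ls[where i=30 and w=500]; (simp add: U)?)
  apply (rule coll_obtains[where a=500 and b=600 and x=9801 and y=9802 and p="Conj (BAll 9820 9802 (Conj (Mem 9820 0) (BEx 9811 9801 (BEx 9812 9811 (BEx 9813 9812 (Conj (is_pair 9811 9820 9813) (Mem 200 9813))))))) (BAll 9820 0 (Imp (BEx 9811 9801 (BEx 9812 9811 (BEx 9813 9812 (Conj (is_pair 9811 9820 9813) (Mem 200 9813))))) (Mem 9820 9802)))"]; (simp add: U)?)
  apply (rule all_Rs; (simp add: U)?)
  apply (rule imp_Rs; (simp add: U)?)
  apply (rule sep_obtains[where a=0 and b=700 and x=9820 and p="BEx 9811 9801 (BEx 9812 9811 (BEx 9813 9812 (Conj (is_pair 9811 9820 9813) (Mem 200 9813))))"]; (simp add: U)?)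
  apply (rule ex_Rs[where y=700]; (simp add: U)?)
  apply (rule conj_Rs)
  apply (rule all_Rs; (simp add: U)?)
  apply (rule imp_Rs; (simp add: U)?)
  apply (rule all_Ls[where i=33 and y=9820]; (simp add: U)?)
  apply (rule conj_Ls[where i=35]; (simp add: U)?)
  apply (rule imp_Ls[where i=36]; (simp add: U)?)
  apply (rule hyp_s; (simp add: U)?)
  apply (rule hyp_s; (simp add: U)?)
  apply (rule all_Rs; (simp add: U)?)
  apply (rule imp_Rs; (simp add: U)?)
  apply (rule imp_Rs; (simp add: U)?)
  apply (rule all_Ls[where i=33 and y=9820]; (simp add: U)?)
  apply (rule conj_Ls[where i=36]; (simp add: U)?)
  apply (rule imp_Ls[where i=38]; (simp add: U)?)
  apply (rule conj_Rs)
  apply (rule hyp_s; (simp add: U)?)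
  apply (rule hyp_s; (simp add: U)?)
  apply (rule hyp_s; (simp add: U)?)
  apply (rule sep_obtains[where a=600 and b=800 and x=2 and p="BAll 3 2 (Mem 3 0)"]; (simp add: U)?)
  apply (rule ex_Rs[where y=800]; (simp add: U)?)
  apply (rule all_Rs; (simp add: U)?)
  apply (rule conj_Rs)
  apply (rule imp_Rs; (simp add: U)?)
  apply (rule all_Ls[where i=33 and y=2]; (simp add: U)?)
  apply (rule conj_Ls[where i=35]; (simp add: U)?)
  apply (rule imp_Ls[where i=36]; (simp add: U)?)
  apply (rule hyp_s; (simp add: U)?)
  apply (rule conj_Ls[where i=38]; (simp add: U)?)
  apply (rule hyp_s; (simp add: U)?)
  apply (rule imp_Rs; (simp add: U)?)
  apply (rule all_Ls[where i=8 and y=0]; (simp add: U)?)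
  apply (rule all_Ls[where i=35 and y=400]; (simp add: U)?)
  apply (rule ex_Ls[where i=36 and w=900]; (simp add: U)?)
  apply (rule sep_obtains[where a=900 and b=1000 and x=9830 and p="BEx 9831 0 (BEx 9832 400 (Conj (is_pair 9830 9831 9832) (Conj (Iff (Mem 200 9832) (Mem 9831 2)) (BAll 9839 9832 (Eq 9839 200)))))"]; (simp add: U)?)
  apply (rule cut_s[where a="BAll 9841 0 (BEx 9842 400 (BEx 9843 1000 (Conj (is_pair 9843 9841 9842) (Conj (Iff (Mem 200 9842) (Mem 9841 2)) (BAll 9839 9842 (Eq 9839 200))))))"]; (simp add: U)?)
  apply (rule all_Rs; (simp add: U)?)
  apply (rule imp_Rs; (simp add: U)?)
  apply (rule sep_obtains[where a=300 and b=1100 and x=9850 and p="Conj (Eq 9850 200) (Mem 9841 2)"]; (simp add: U)?)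
  apply (rule cut_s[where a="Conj (Iff (Mem 200 1100) (Mem 9841 2)) (BAll 9839 1100 (Eq 9839 200))"]; (simp add: U)?)
  apply (rule conj_Rs)
  apply (rule conj_Rs)
  apply (rule imp_Rs; (simp add: U)?)
  apply (rule all_Ls[where i=40 and y=200]; (simp add: U)?)
  apply (rule conj_Ls[where i=42]; (simp add: U)?)
  apply (rule imp_Ls[where i=43]; (simp add: U)?)
  apply (rule hyp_s; (simp add: U)?)
  apply (rule conj_Ls[where i=45]; (simp add: U)?)
  apply (rule conj_Ls[where i=47]; (simp add: U)?)
  apply (rule hyp_s; (simp add: U)?)
  apply (rule imp_Rs; (simp add: U)?)
  apply (rule all_Ls[where i=40 and y=200]; (simp add: U)?)
  apply (rule conj_Ls[where i=42]; (simp add: U)?)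
  apply (rule imp_Ls[where i=44]; (simp add: U)?)
  apply (rule conj_Rs)
  apply (rule hyp_s; (simp add: U)?)
  apply (rule conj_Rs)
  apply (rule refl_Rs)
  apply (rule hyp_s; (simp add: U)?)
  apply (rule hyp_s; (simp add: U)?)
  apply (rule all_Rs; (simp add: U)?)
  apply (rule imp_Rs; (simp add: U)?)
  apply (rule all_Ls[where i=40 and y=9839]; (simp add: U)?)
  apply (rule conj_Ls[where i=42]; (simp add: U)?)
  apply (rule imp_Ls[where i=43]; (simp add: U)?)
  apply (rule hyp_s; (simp add: U)?)
  apply (rule conj_Ls[where i=45]; (simp add: U)?)
  apply (rule conj_Ls[where i=47]; (simp add: U)?)
  apply (rule hyp_s; (simp add: U)?)
  apply (rule cut_s[where a="Mem 1100 400"]; (simp add: U)?)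
  apply (rule all_Ls[where i=28 and y=1100]; (simp add: U)?)
  apply (rule conj_Ls[where i=41]; (simp add: U)?)
  apply (rule imp_Las[where i=42 and j=44]; (simp add: U)?)
  apply (rule hyp_s; (simp add: U)?)
  apply (rule all_Ls[where i=37 and y=9841]; (simp add: U)?)
  apply (rule imp_Ls[where i=43]; (simp add: U)?)
  apply (rule hyp_s; (simp add: U)?)
  apply (rule all_Ls[where i=44 and y=1100]; (simp add: U)?)
  apply (rule imp_Ls[where i=45]; (simp add: U)?)
  apply (rule hyp_s; (simp add: U)?)
  apply (rule ex_Ls[where i=46 and w=1200]; (simp add: U)?)
  apply (rule conj_Ls[where i=47]; (simp add: U)?)
  apply (rule cut_s[where a="Mem 1200 1000"]; (simp add: U)?)
  apply (rule all_Ls[where i=38 and y=1200]; (simp add: U)?)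
  apply (rule conj_Ls[where i=50]; (simp add: U)?)
  apply (rule imp_Ls[where i=52]; (simp add: U)?)
  apply (rule conj_Rs)
  apply (rule hyp_s; (simp add: U)?)
  apply (rule ex_Rs[where y=9841]; (simp add: U)?)
  apply (rule conj_Rs)
  apply (rule hyp_s; (simp add: U)?)
  apply (rule ex_Rs[where y=1100]; (simp add: U)?)
  apply (rule conj_Rs)
  apply (rule hyp_s; (simp add: U)?)
  apply (rule conj_Rs)
  apply (rule hyp_as[where j=49]; (simp add: U)?)
  apply (rule hyp_s; (simp add: U)?)
  apply (rule hyp_s; (simp add: U)?)
  apply (rule ex_Rs[where y=1100]; (simp add: U)?)
  apply (rule conj_Rs)
  apply (rule hyp_s; (simp add: U)?)
  apply (rule ex_Rs[where y=1200]; (simp add: U)?)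
  apply (rule conj_Rs)
  apply (rule hyp_s; (simp add: U)?)
  apply (rule conj_Rs)
  apply (rule hyp_as[where j=49]; (simp add: U)?)
  apply (rule hyp_s; (simp add: U)?)
  apply (rule all_Ls[where i=31 and y=1000]; (simp add: U)?)
  apply (rule conj_Ls[where i=40]; (simp add: U)?)
  apply (rule imp_Ls[where i=42]; (simp add: U)?)
  apply (rule conj_Rs)
  apply (rule all_Rs; (simp add: U)?)
  apply (rule imp_Rs; (simp add: U)?)
  apply (rule all_Ls[where i=38 and y=7]; (simp add: U)?)
  apply (rule conj_Ls[where i=44]; (simp add: U)?)
  apply (rule imp_Ls[where i=45]; (simp add: U)?)
  apply (rule hyp_s; (simp add: U)?)
  apply (rule conj_Ls[where i=47]; (simp add: U)?)
  apply (rule ex_Ls[where i=49 and w=1300]; (simp add: U)?)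
  apply (rule conj_Ls[where i=50]; (simp add: U)?)
  apply (rule ex_Ls[where i=52 and w=1400]; (simp add: U)?)
  apply (rule conj_Ls[where i=53]; (simp add: U)?)
  apply (rule conj_Ls[where i=55]; (simp add: U)?)
  apply (rule ex_Rs[where y=1300]; (simp add: U)?)
  apply (rule conj_Rs)
  apply (rule hyp_s; (simp add: U)?)
  apply (rule ex_Rs[where y=1400]; (simp add: U)?)
  apply (rule conj_Rs)
  apply (rule hyp_s; (simp add: U)?)
  apply (rule hyp_as[where j=56]; (simp add: U)?)
  apply (rule conj_Rs)
  apply (rule all_Rs; (simp add: U)?)
  apply (rule imp_Rs; (simp add: U)?)
  apply (rule all_Ls[where i=39 and y=4]; (simp add: U)?)
  apply (rule imp_Ls[where i=44]; (simp add: U)?)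
  apply (rule hyp_s; (simp add: U)?)
  apply (rule ex_Ls[where i=45 and w=1500]; (simp add: U)?)
  apply (rule conj_Ls[where i=46]; (simp add: U)?)
  apply (rule ex_Ls[where i=48 and w=1600]; (simp add: U)?)
  apply (rule conj_Ls[where i=49]; (simp add: U)?)
  apply (rule conj_Ls[where i=51]; (simp add: U)?)
  apply (rule ex_Rs[where y=1500]; (simp add: U)?)
  apply (rule conj_Rs)
  apply (rule hyp_s; (simp add: U)?)
  apply (rule ex_Rs[where y=1600]; (simp add: U)?)
  apply (rule conj_Rs)
  apply (rule hyp_s; (simp add: U)?)
  apply (rule hyp_as[where j=52]; (simp add: U)?)
  apply (rule all_Rs; (simp add: U)?)
  apply (rule imp_Rs; (simp add: U)?)
  apply (rule all_Rs; (simp add: U)?)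
  apply (rule imp_Rs; (simp add: U)?)
  apply (rule all_Rs; (simp add: U)?)
  apply (rule imp_Rs; (simp add: U)?)
  apply (rule all_Rs; (simp add: U)?)
  apply (rule imp_Rs; (simp add: U)?)
  apply (rule cut_s[where a="All 9999 (Imp (Mem 9999 1000) (Imp (Conj (is_pair 7 4 5) (subst (is_pair 8 4 6) 8 9999)) (Eq 5 6)))"]; (simp add: U)?)
  apply (rule all_Rs; (simp add: U)?)
  apply (rule imp_Rs; (simp add: U)?)
  apply (rule imp_Rs; (simp add: U)?)
  apply (rule conj_Ls[where i=48]; (simp add: U)?)
  apply (rule all_Ls[where i=38 and y=7]; (simp add: U)?)
  apply (rule conj_Ls[where i=51]; (simp add: U)?)
  apply (rule imp_Ls[where i=52]; (simp add: U)?)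
  apply (rule hyp_s; (simp add: U)?)
  apply (rule conj_Ls[where i=54]; (simp add: U)?)
  apply (rule ex_Ls[where i=56 and w=1700]; (simp add: U)?)
  apply (rule conj_Ls[where i=57]; (simp add: U)?)
  apply (rule ex_Ls[where i=59 and w=1800]; (simp add: U)?)
  apply (rule conj_Ls[where i=60]; (simp add: U)?)
  apply (rule conj_Ls[where i=62]; (simp add: U)?)
  apply (rule all_Ls[where i=6 and y=7]; (simp add: U)?)
  apply (rule all_Ls[where i=65 and y=4]; (simp add: U)?)
  apply (rule all_Ls[where i=66 and y=5]; (simp add: U)?)
  apply (rule all_Ls[where i=67 and y=1700]; (simp add: U)?)
  apply (rule all_Ls[where i=68 and y=1800]; (simp add: U)?)
  apply (rule imp_Las[where i=69 and j=49]; (simp add: U)?)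
  apply (rule imp_Las[where i=70 and j=63]; (simp add: U)?)
  apply (rule conj_Ls[where i=71]; (simp add: U)?)
  apply (rule eq_sym_Ls[where i=72]; (simp add: U)?)
  apply (rule eq_Ls[where i=64 and j=74]; (simp add: U)?)
  apply (rule eq_sym_Ls[where i=73]; (simp add: U)?)
  apply (rule eq_Ls[where i=75 and j=76]; (simp add: U)?)
  apply (rule all_Ls[where i=38 and y=9999]; (simp add: U)?)
  apply (rule conj_Ls[where i=78]; (simp add: U)?)
  apply (rule imp_Ls[where i=79]; (simp add: U)?)
  apply (rule hyp_s; (simp add: U)?)
  apply (rule conj_Ls[where i=81]; (simp add: U)?)
  apply (rule ex_Ls[where i=83 and w=1900]; (simp add: U)?)
  apply (rule conj_Ls[where i=84]; (simp add: U)?)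
  apply (rule ex_Ls[where i=86 and w=2000]; (simp add: U)?)
  apply (rule conj_Ls[where i=87]; (simp add: U)?)
  apply (rule conj_Ls[where i=89]; (simp add: U)?)
  apply (rule all_Ls[where i=6 and y=9999]; (simp add: U)?)
  apply (rule all_Ls[where i=92 and y=4]; (simp add: U)?)
  apply (rule all_Ls[where i=93 and y=6]; (simp add: U)?)
  apply (rule all_Ls[where i=94 and y=1900]; (simp add: U)?)
  apply (rule all_Ls[where i=95 and y=2000]; (simp add: U)?)
  apply (rule imp_Las[where i=96 and j=50]; (simp add: U)?)
  apply (rule imp_Las[where i=97 and j=90]; (simp add: U)?)
  apply (rule conj_Ls[where i=98]; (simp add: U)?)
  apply (rule eq_sym_Ls[where i=99]; (simp add: U)?)
  apply (rule eq_Ls[where i=91 and j=101]; (simp add: U)?)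
  apply (rule eq_sym_Ls[where i=100]; (simp add: U)?)
  apply (rule eq_Ls[where i=102 and j=103]; (simp add: U)?)
  apply (rule ext_Rs[where z=9860]; (simp add: U)?)
  apply (rule conj_Ls[where i=77]; (simp add: U)?)
  apply (rule all_Ls[where i=107 and y=9860]; (simp add: U)?)
  apply (rule imp_Ls[where i=108]; (simp add: U)?)
  apply (rule hyp_s; (simp add: U)?)
  apply (rule eq_Ls[where i=105 and j=109]; (simp add: U)?)
  apply (rule conj_Ls[where i=106]; (simp add: U)?)
  apply (rule imp_Ls[where i=111]; (simp add: U)?)
  apply (rule hyp_s; (simp add: U)?)
  apply (rule conj_Ls[where i=104]; (simp add: U)?)
  apply (rule conj_Ls[where i=114]; (simp add: U)?)
  apply (rule imp_Ls[where i=117]; (simp add: U)?)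
  apply (rule hyp_s; (simp add: U)?)
  apply (rule eq_sym_Ls[where i=109]; (simp add: U)?)
  apply (rule eq_Ls[where i=118 and j=119]; (simp add: U)?)
  apply (rule hyp_s; (simp add: U)?)
  apply (rule conj_Ls[where i=104]; (simp add: U)?)
  apply (rule all_Ls[where i=107 and y=9860]; (simp add: U)?)
  apply (rule imp_Ls[where i=108]; (simp add: U)?)
  apply (rule hyp_s; (simp add: U)?)
  apply (rule eq_Ls[where i=105 and j=109]; (simp add: U)?)
  apply (rule conj_Ls[where i=106]; (simp add: U)?)
  apply (rule imp_Ls[where i=111]; (simp add: U)?)
  apply (rule hyp_s; (simp add: U)?)
  apply (rule conj_Ls[where i=77]; (simp add: U)?)
  apply (rule conj_Ls[where i=114]; (simp add: U)?)
  apply (rule imp_Ls[where i=117]; (simp add: U)?)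
  apply (rule hyp_s; (simp add: U)?)
  apply (rule eq_sym_Ls[where i=109]; (simp add: U)?)
  apply (rule eq_Ls[where i=118 and j=119]; (simp add: U)?)
  apply (rule hyp_s; (simp add: U)?)
  apply (rule all_Rs; (simp add: U)?)
  apply (rule all_Ls[where i=47 and y=8]; (simp add: U)?)
  apply (rule hyp_s; (simp add: U)?)
  apply (rule all_Ls[where i=32 and y=1000]; (simp add: U)?)
  apply (rule imp_Ls[where i=44]; (simp add: U)?)
  apply (rule hyp_s; (simp add: U)?)
  apply (rule ex_Ls[where i=45 and w=2100]; (simp add: U)?)
  apply (rule conj_Ls[where i=46]; (simp add: U)?)
  apply (rule conj_Ls[where i=48]; (simp add: U)?)
  apply (rule cut_s[where a="Eq 2100 2"]; (simp add: U)?)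
  apply (rule ext_Rs[where z=9870]; (simp add: U)?)
  apply (rule all_Ls[where i=49 and y=9870]; (simp add: U)?)
  apply (rule imp_Ls[where i=52]; (simp add: U)?)
  apply (rule hyp_s; (simp add: U)?)
  apply (rule conj_Ls[where i=53]; (simp add: U)?)
  apply (rule ex_Ls[where i=55 and w=2200]; (simp add: U)?)
  apply (rule conj_Ls[where i=56]; (simp add: U)?)
  apply (rule ex_Ls[where i=58 and w=2300]; (simp add: U)?)
  apply (rule conj_Ls[where i=59]; (simp add: U)?)
  apply (rule ex_Ls[where i=61 and w=2400]; (simp add: U)?)
  apply (rule conj_Ls[where i=62]; (simp add: U)?)
  apply (rule conj_Ls[where i=64]; (simp add: U)?)
  apply (rule all_Ls[where i=38 and y=2200]; (simp add: U)?)
  apply (rule conj_Ls[where i=67]; (simp add: U)?)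
  apply (rule imp_Ls[where i=68]; (simp add: U)?)
  apply (rule hyp_s; (simp add: U)?)
  apply (rule conj_Ls[where i=70]; (simp add: U)?)
  apply (rule ex_Ls[where i=72 and w=2500]; (simp add: U)?)
  apply (rule conj_Ls[where i=73]; (simp add: U)?)
  apply (rule ex_Ls[where i=75 and w=2600]; (simp add: U)?)
  apply (rule conj_Ls[where i=76]; (simp add: U)?)
  apply (rule conj_Ls[where i=78]; (simp add: U)?)
  apply (rule all_Ls[where i=6 and y=2200]; (simp add: U)?)
  apply (rule all_Ls[where i=81 and y=9870]; (simp add: U)?)
  apply (rule all_Ls[where i=82 and y=2400]; (simp add: U)?)
  apply (rule all_Ls[where i=83 and y=2500]; (simp add: U)?)
  apply (rule all_Ls[where i=84 and y=2600]; (simp add: U)?)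
  apply (rule imp_Las[where i=85 and j=65]; (simp add: U)?)
  apply (rule imp_Las[where i=86 and j=79]; (simp add: U)?)
  apply (rule conj_Ls[where i=87]; (simp add: U)?)
  apply (rule conj_Ls[where i=80]; (simp add: U)?)
  apply (rule conj_Ls[where i=90]; (simp add: U)?)
  apply (rule eq_Ls[where i=66 and j=89]; (simp add: U)?)
  apply (rule imp_Ls[where i=92]; (simp add: U)?)
  apply (rule hyp_s; (simp add: U)?)
  apply (rule eq_sym_Ls[where i=88]; (simp add: U)?)
  apply (rule eq_Ls[where i=95 and j=96]; (simp add: U)?)
  apply (rule hyp_s; (simp add: U)?)
  apply (rule all_Ls[where i=34 and y=9870]; (simp add: U)?)
  apply (rule imp_Ls[where i=52]; (simp add: U)?)
  apply (rule hyp_s; (simp add: U)?)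
  apply (rule all_Ls[where i=39 and y=9870]; (simp add: U)?)
  apply (rule imp_Ls[where i=54]; (simp add: U)?)
  apply (rule hyp_s; (simp add: U)?)
  apply (rule ex_Ls[where i=55 and w=2700]; (simp add: U)?)
  apply (rule conj_Ls[where i=56]; (simp add: U)?)
  apply (rule ex_Ls[where i=58 and w=2800]; (simp add: U)?)
  apply (rule conj_Ls[where i=59]; (simp add: U)?)
  apply (rule conj_Ls[where i=61]; (simp add: U)?)
  apply (rule conj_Ls[where i=63]; (simp add: U)?)
  apply (rule conj_Ls[where i=64]; (simp add: U)?)
  apply (rule imp_Ls[where i=67]; (simp add: U)?)
  apply (rule hyp_s; (simp add: U)?)
  apply (rule conj_Ls[where i=62]; (simp add: U)?)
  apply (rule conj_Ls[where i=70]; (simp add: U)?)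
  apply (rule ex_Ls[where i=72 and w=2900]; (simp add: U)?)
  apply (rule conj_Ls[where i=73]; (simp add: U)?)
  apply (rule conj_Ls[where i=75]; (simp add: U)?)
  apply (rule conj_Ls[where i=77]; (simp add: U)?)
  apply (rule all_Ls[where i=50 and y=9870]; (simp add: U)?)
  apply (rule imp_Ls[where i=80]; (simp add: U)?)
  apply (rule hyp_s; (simp add: U)?)
  apply (rule imp_Ls[where i=81]; (simp add: U)?)
  apply (rule ex_Rs[where y=2800]; (simp add: U)?)
  apply (rule conj_Rs)
  apply (rule hyp_s; (simp add: U)?)
  apply (rule ex_Rs[where y=2900]; (simp add: U)?)
  apply (rule conj_Rs)
  apply (rule hyp_s; (simp add: U)?)
  apply (rule ex_Rs[where y=2700]; (simp add: U)?)
  apply (rule conj_Rs)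
  apply (rule hyp_s; (simp add: U)?)
  apply (rule conj_Rs)
  apply (rule hyp_as[where j=62]; (simp add: U)?)
  apply (rule hyp_s; (simp add: U)?)
  apply (rule hyp_s; (simp add: U)?)
  apply (rule eq_Ls[where i=47 and j=51]; (simp add: U)?)
  apply (rule all_Ls[where i=33 and y=2]; (simp add: U)?)
  apply (rule conj_Ls[where i=53]; (simp add: U)?)
  apply (rule imp_Ls[where i=55]; (simp add: U)?)
  apply (rule conj_Rs)
  apply (rule hyp_s; (simp add: U)?)
  apply (rule hyp_s; (simp add: U)?)
  apply (rule hyp_s; (simp add: U)?)
  done

lemma fvl_Base: "fvl Base = {}" by (simp add: Base_def)

lemma part1: "pf (Base @ [Conj PlUb Exponentiation]) Powerset"
  unfolding Base_def
  apply (rule conj_L[where i = 10])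
    apply simp
   apply simp
  apply simp
  apply (rule alpha_La[where j = 11 and q = PlUbR])
       apply simp
      apply (simp add: PlUbR_def U)
     apply (simp add: U)
    apply (simp add: PlUbR_def U)
   apply (simp add: PlUbR_def U)
  apply (rule pf_weak[OF main_C])
   apply (auto simp: Base_def U)
  done

lemma part2: "pf (Base @ [Powerset]) (Conj PlUb Exponentiation)"
  unfolding Base_def
  apply simp
  apply (rule alpha_La[where j = 10 and q = PowR])
       apply simp
      apply (simp add: PowR_def U)
     apply (simp add: U)
    apply (simp add: PowR_def U)
   apply (simp add: PowR_def U)
  apply (rule conj_R)
   apply (rule pf_weak[OF main_B])
    apply (auto simp: Base_def U)[2]
  apply (rule pf_weak[OF main_A])
   apply (auto simp: Base_def U)
  done

lemma pf_Base_goal: "pf Base (Iff (Conj PlUb Exponentiation) Powerset)"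
  by (rule iff_R[OF part1 part2])

lemma lemma3p4_pf: "pf [] (Iff (Conj PlUb Exponentiation) Powerset)"
proof -
  let ?G = "Iff (Conj PlUb Exponentiation) Powerset"
  have c: "\<And>hs a. pf hs a \<Longrightarrow> pf (hs @ [a]) ?G \<Longrightarrow> pf hs ?G" by (rule pf_cut)
  have w: "\<And>hs ks p. pf hs p \<Longrightarrow> set hs \<subseteq> set ks \<Longrightarrow> fvl ks = {} \<Longrightarrow> pf ks p" by (rule pf_weak)
  have s10: "pf [ExtR, PairR, UnionR, Lsu, Luu, Lpu, Lpi, Lpex, Lprod, Lplump] ?G"
    using pf_Base_goal by (simp add: Base_def)
  have s9: "pf [ExtR, PairR, UnionR, Lsu, Luu, Lpu, Lpi, Lpex, Lprod] ?G"
    by (rule c[OF w[OF L_plump] ]) (use s10 in auto)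
  have s8: "pf [ExtR, PairR, UnionR, Lsu, Luu, Lpu, Lpi, Lpex] ?G"
    by (rule c[OF w[OF L_prod] ]) (use s9 in auto)
  have s7: "pf [ExtR, PairR, UnionR, Lsu, Luu, Lpu, Lpi] ?G"
    by (rule c[OF w[OF L_pex] ]) (use s8 in auto)
  have s6: "pf [ExtR, PairR, UnionR, Lsu, Luu, Lpu] ?G"
    by (rule c[OF w[OF L_pi] ]) (use s7 in auto)
  have s5: "pf [ExtR, PairR, UnionR, Lsu, Luu] ?G"
    by (rule c[OF w[OF L_pu] ]) (use s6 in auto)
  have s4: "pf [ExtR, PairR, UnionR, Lsu] ?G"
    by (rule c[OF w[OF L_uu] ]) (use s5 in auto)
  have s3: "pf [ExtR, PairR, UnionR] ?G"
    by (rule c[OF w[OF L_su] ]) (use s4 in auto)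
  have s2: "pf [ExtR, PairR] ?G"
    by (rule c[OF w[OF pf_UnionR] ]) (use s3 in auto)
  have s1: "pf [ExtR] ?G"
    by (rule c[OF w[OF pf_PairR] ]) (use s2 in auto)
  show ?thesis
    by (rule c[OF pf_ExtR]) (use s1 in auto)
qed

theorem lemma3p4:
  shows "deriv IKP (Iff (Conj PlUb Exponentiation) Powerset)"
  using lemma3p4_pf by (simp add: pf_def)

end
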